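(* Let $n\ge 3$ and fix a triangulation $\tau$ of an abstract convex $n$-gon with vertices labeled $1,\dots,n$ in cyclic order, by non-crossing diagonals. Let $I_\tau$ be the set consisting of one element $t$ for each triangle of $\tau$ and two elements $(j,k)$ and $(k,j)$ for each diagonal $\{j,k\}$ of $\tau$. Define $\Phi_\tau:\mathcal P_3^n\to\mathbb R^{I_\tau}$ by: for a triangle with vertices $i<j<k$, its coordinate is the triple ratio of the flags $(A_i,a_i),(A_j,a_j),(A_k,a_k)$; for a diagonal $\{j,l\}$ which is the diagonal of the quadrilateral of $\tau$ with vertices $j,k,l,m$ in cyclic order, the coordinate at $(j,l)$ is the cross-ratio of the lines $a_j, A_jA_k, A_jA_l, A_jA_m$ through $A_j$, and the coordinate at $(l,j)$ is the cross-ratio of the lines $a_l, A_lA_m, A_lA_j, A_lA_k$ through $A_l$. Then $\Phi_\tau$ is a bijection from $\mathcal P_3^n$ onto $\mathbb R_{>0}^{I_\tau}$.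
   Context: A flag in $\mathbb{RP}^2$ is a pair $(A,a)$ of a point $A$ and a line $a\ni A$. $\mathcal P_3^n$ is the set of $n$-tuples of flags $((A_1,a_1),\dots,(A_n,a_n))$ such that, in some affine chart $\mathbb R^2\subset\mathbb{RP}^2$, the lines $a_1,\dots,a_n$ bound a compact convex $n$-gon whose sides in cyclic order lie on $a_1,\dots,a_n$, and each $A_i$ lies in the relative interior of the side on $a_i$ (so $A_1\dots A_n$ is a convex $n$-gon inscribed in it), taken modulo the diagonal action of $PGL_3(\mathbb R)$. The triple ratio of flags $(A,a),(B,b),(C,c)$ is $\frac{f_a(\tilde B)f_b(\tilde C)f_c(\tilde A)}{f_a(\tilde C)f_b(\tilde A)f_c(\tilde B)}$, where $f_a,f_b,f_c\in(\mathbb R^3)^*$ have kernels the planes corresponding to $a,b,c$ and $\tilde A,\tilde B,\tilde C$ are nonzero lifts of $A,B,C$ to $\mathbb R^3$. The cross-ratio of four concurrent lines $x_1,x_2,x_3,x_4$ (viewed as points on the projective line of lines through their common point) is $\frac{(x_1-x_2)(x_3-x_4)}{(x_1-x_4)(x_2-x_3)}$ in any affine coordinate. *)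

theory Defs
  imports "HOL-Analysis.Analysis" "HOL-Analysis.Cross3" "HOL-Library.FuncSet"
begin

text \<open>Projective plane: a point is represented by a nonzero lift in real^3, a line by a
  nonzero covector in real^3 (pairing = inner product).\<close>

type_synonym config = "nat \<Rightarrow> ((real^3) \<times> (real^3))"

definition pt :: "config \<Rightarrow> nat \<Rightarrow> real^3" where "pt c i = fst (c i)"
definition ln :: "config \<Rightarrow> nat \<Rightarrow> real^3" where "ln c i = snd (c i)"

definition cprev :: "nat \<Rightarrow> nat \<Rightarrow> nat" where
  "cprev n i = (if i = 1 then n else i - 1)"

text \<open>The space of configurations underlying P_3^n (before quotienting by PGL_3).
  Affine chart = {x. h \<bullet> x \<noteq> 0}, normalised as h \<bullet> x = 1.  P i is the vertex of
  the n-gon between the sides on a_(i-1) and a_i.  The n-gon with vertices P 1..P n is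
  compact and convex with sides on a_1..a_n in cyclic order iff each a_i passes through
  P (i-1), P i and all other vertices lie strictly on one side of a_i.  A_i lies in the
  relative interior of the side [P (i-1), P i].\<close>
definition Pconf :: "nat \<Rightarrow> config set" where
  "Pconf n = {c. \<exists>(h::real^3) (P::nat \<Rightarrow> real^3).
      (\<forall>i\<in>{1..n}. h \<bullet> P i = 1) \<and>
      (\<forall>i\<in>{1..n}.
          ln c i \<bullet> P (cprev n i) = 0 \<and> ln c i \<bullet> P i = 0 \<and>
          ((\<forall>j\<in>{1..n} - {cprev n i, i}. ln c i \<bullet> P j > 0) \<or>
           (\<forall>j\<in>{1..n} - {cprev n i, i}. ln c i \<bullet> P j < 0)) \<and>
          (\<exists>s t r. r \<noteq> 0 \<and> s > 0 \<and> t > 0 \<and>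
              r *\<^sub>R pt c i = s *\<^sub>R P (cprev n i) + t *\<^sub>R P i))}"

text \<open>The diagonal PGL_3 action together with rescaling of lifts:
  (A, a) \<mapsto> (g A, a g^{-1}), i.e. a = a' g up to scalars.\<close>
definition pgl_rel :: "nat \<Rightarrow> (config \<times> config) set" where
  "pgl_rel n = {(c, c'). c \<in> Pconf n \<and> c' \<in> Pconf n \<and>
      (\<exists>g::real^3^3. invertible g \<and>
        (\<forall>i\<in>{1..n}. \<exists>s u. s \<noteq> 0 \<and> u \<noteq> 0 \<and>
            pt c' i = s *\<^sub>R (g *v pt c i) \<and> ln c i = u *\<^sub>R (ln c' i v* g)))}"

definition P3 :: "nat \<Rightarrow> config set set" where
  "P3 n = Pconf n // pgl_rel n"

definition triple_ratio ::
  "real^3 \<Rightarrow> real^3 \<Rightarrow> real^3 \<Rightarrow> real^3 \<Rightarrow> real^3 \<Rightarrow> real^3 \<Rightarrow> real" where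
  "triple_ratio A a B b C c =
     ((a \<bullet> B) * (b \<bullet> C) * (c \<bullet> A)) / ((a \<bullet> C) * (b \<bullet> A) * (c \<bullet> B))"

text \<open>The pencil of lines through X is the projective line P(X^\<perp>); the 2x2 determinant of
  two of its elements in a basis of X^\<perp> is, up to a fixed nonzero factor, det[u; v; X].
  This is the homogeneous form of (x1-x2)(x3-x4)/((x1-x4)(x2-x3)).\<close>
definition det3 :: "real^3 \<Rightarrow> real^3 \<Rightarrow> real^3 \<Rightarrow> real" where
  "det3 u v w = det (vector [u, v, w] :: real^3^3)"

definition cross_ratio_lines ::
  "real^3 \<Rightarrow> real^3 \<Rightarrow> real^3 \<Rightarrow> real^3 \<Rightarrow> real^3 \<Rightarrow> real" where
  "cross_ratio_lines X x1 x2 x3 x4 =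
     (det3 x1 x2 X * det3 x3 x4 X) / (det3 x1 x4 X * det3 x2 x3 X)"

definition join :: "real^3 \<Rightarrow> real^3 \<Rightarrow> real^3" where
  "join A B = cross3 A B"

text \<open>Diagonals are stored as pairs (a,b) with a < b.\<close>
definition is_diag :: "nat \<Rightarrow> nat \<times> nat \<Rightarrow> bool" where
  "is_diag n p = (1 \<le> fst p \<and> fst p + 2 \<le> snd p \<and> snd p \<le> n \<and> \<not> (fst p = 1 \<and> snd p = n))"

definition crosses :: "nat \<times> nat \<Rightarrow> nat \<times> nat \<Rightarrow> bool" where
  "crosses p q = ((fst p < fst q \<and> fst q < snd p \<and> snd p < snd q) \<or>
                  (fst q < fst p \<and> fst p < snd q \<and> snd q < snd p))"

definition poly_triangulation :: "nat \<Rightarrow> (nat \<times> nat) set \<Rightarrow> bool" where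
  "poly_triangulation n D = (D \<subseteq> {p. is_diag n p} \<and>
      (\<forall>p\<in>D. \<forall>q\<in>D. \<not> crosses p q) \<and>
      (\<forall>p. is_diag n p \<and> p \<notin> D \<longrightarrow> (\<exists>q\<in>D. crosses p q)))"

definition is_edge :: "nat \<Rightarrow> (nat \<times> nat) set \<Rightarrow> nat \<Rightarrow> nat \<Rightarrow> bool" where
  "is_edge n D a b = (b = a + 1 \<or> (a = 1 \<and> b = n) \<or> (a, b) \<in> D)"

definition is_tri :: "nat \<Rightarrow> (nat \<times> nat) set \<Rightarrow> nat \<Rightarrow> nat \<Rightarrow> nat \<Rightarrow> bool" where
  "is_tri n D i j k = (1 \<le> i \<and> i < j \<and> j < k \<and> k \<le> n \<and>
      is_edge n D i j \<and> is_edge n D j k \<and> is_edge n D i k)"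

definition tri_sets :: "nat \<Rightarrow> (nat \<times> nat) set \<Rightarrow> nat set set" where
  "tri_sets n D = {{i, j, k} | i j k. is_tri n D i j k}"

text \<open>r lies strictly between p and q in the cyclic order going forward from p.\<close>
definition cbetw :: "nat \<Rightarrow> nat \<Rightarrow> nat \<Rightarrow> bool" where
  "cbetw p r q = ((p < q \<and> p < r \<and> r < q) \<or> (q < p \<and> (p < r \<or> r < q)))"

text \<open>For a diagonal {p,q}, the vertex of the quadrilateral p,k,q,m (cyclic order)
  lying between p and q: the third vertex of the triangle of D on that side.\<close>
definition opp_vertex :: "nat \<Rightarrow> (nat \<times> nat) set \<Rightarrow> nat \<Rightarrow> nat \<Rightarrow> nat" where
  "opp_vertex n D p q = (THE r. {p, r, q} \<in> tri_sets n D \<and> cbetw p r q)"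

datatype coord_index = Tri nat nat nat | Dg nat nat

definition Iset :: "nat \<Rightarrow> (nat \<times> nat) set \<Rightarrow> coord_index set" where
  "Iset n D = {Tri i j k | i j k. is_tri n D i j k} \<union>
              {Dg j k | j k. (j, k) \<in> D} \<union> {Dg k j | j k. (j, k) \<in> D}"

text \<open>For the ordered pair (p,q), with k = vertex between p and q and
  m = vertex between q and p (so p,k,q,m cyclic): cross-ratio of
  a_p, A_pA_k, A_pA_q, A_pA_m through A_p.  For (j,l) this is the paper's formula, and for
  (l,j) it gives a_l, A_lA_m, A_lA_j, A_lA_k.\<close>
fun coord :: "nat \<Rightarrow> (nat \<times> nat) set \<Rightarrow> config \<Rightarrow> coord_index \<Rightarrow> real" where
  "coord n D c (Tri i j k) =
     triple_ratio (pt c i) (ln c i) (pt c j) (ln c j) (pt c k) (ln c k)"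
| "coord n D c (Dg p q) =
     (let k = opp_vertex n D p q; m = opp_vertex n D q p in
      cross_ratio_lines (pt c p) (ln c p) (join (pt c p) (pt c k))
         (join (pt c p) (pt c q)) (join (pt c p) (pt c m)))"

definition Phi :: "nat \<Rightarrow> (nat \<times> nat) set \<Rightarrow> config \<Rightarrow> (coord_index \<Rightarrow> real)" where
  "Phi n D c = restrict (coord n D c) (Iset n D)"

definition PhiQ :: "nat \<Rightarrow> (nat \<times> nat) set \<Rightarrow> config set \<Rightarrow> (coord_index \<Rightarrow> real)" where
  "PhiQ n D X = Phi n D (SOME c. c \<in> X)"

end

theory Submission
  imports Defs
begin

lemma det3_exp: "det3 u v w = u$1 * v$2 * w$3 - u$1 * v$3 * w$2 - u$2 * v$1 * w$3 + u$2 * v$3 * w$1 + u$3 * v$1 * w$2 - u$3 * v$2 * w$1"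
  unfolding det3_def by (simp add: det_3 vector_def algebra_simps)

lemma inner3: "(u::real^3) \<bullet> v = u$1 * v$1 + u$2 * v$2 + u$3 * v$3"
  by (simp add: inner_vec_def sum_3)

lemma join_comp: "join A B $ 1 = A$2 * B$3 - A$3 * B$2" "join A B $ 2 = A$3 * B$1 - A$1 * B$3" "join A B $ 3 = A$1 * B$2 - A$2 * B$1"
  by (simp_all add: join_def cross3_def)

lemma vec3_eq: "((x::real^3) = y) \<longleftrightarrow> x$1 = y$1 \<and> x$2 = y$2 \<and> x$3 = y$3"
  by (simp add: vec_eq_iff forall_3)

lemmas c3 = det3_exp inner3 join_comp vector_add_component vector_scaleR_component vector_minus_component

lemma det3_cyc: "det3 u v w = det3 v w u" by (simp add: det3_exp algebra_simps)
lemma det3_swap12: "det3 u v w = - det3 v u w" by (simp add: det3_exp algebra_simps)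
lemma det3_swap23: "det3 u v w = - det3 u w v" by (simp add: det3_exp algebra_simps)
lemma det3_rep: "det3 u u w = 0" "det3 u v u = 0" "det3 u v v = 0" by (simp_all add: det3_exp algebra_simps)

lemma det3_lin1: "det3 (s *\<^sub>R u + t *\<^sub>R u') v w = s * det3 u v w + t * det3 u' v w"
  by (simp add: c3 algebra_simps)
lemma det3_lin2: "det3 v (s *\<^sub>R u + t *\<^sub>R u') w = s * det3 v u w + t * det3 v u' w"
  by (simp add: c3 algebra_simps)
lemma det3_lin3: "det3 v w (s *\<^sub>R u + t *\<^sub>R u') = s * det3 v w u + t * det3 v w u'"
  by (simp add: c3 algebra_simps)
lemma det3_scale: "det3 (s *\<^sub>R u) v w = s * det3 u v w" "det3 v (s *\<^sub>R u) w = s * det3 v u w"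
   "det3 v w (s *\<^sub>R u) = s * det3 v w u"
  by (simp_all add: c3 algebra_simps)

lemma det3_join: "det3 u v w = join u v \<bullet> w" by (simp add: c3 algebra_simps)

lemma cramer: "det3 u1 u2 u3 *\<^sub>R z = (u1 \<bullet> z) *\<^sub>R join u2 u3 + (u2 \<bullet> z) *\<^sub>R join u3 u1 + (u3 \<bullet> z) *\<^sub>R join u1 u2"
  by (simp add: vec3_eq c3 algebra_simps)

lemma cramer2: "det3 u1 u2 u3 *\<^sub>R z = det3 z u2 u3 *\<^sub>R u1 + det3 u1 z u3 *\<^sub>R u2 + det3 u1 u2 z *\<^sub>R u3"
  by (simp add: vec3_eq c3 algebra_simps)

lemma zero_by_cramer: assumes "det3 u1 u2 u3 \<noteq> 0" "u1 \<bullet> z = 0" "u2 \<bullet> z = 0" "u3 \<bullet> z = 0" shows "z = 0"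
  using cramer[of u1 u2 u3 z] assms by simp

lemma det3_ann: "det3 a b (join A B) = (a \<bullet> A) * (b \<bullet> B) - (a \<bullet> B) * (b \<bullet> A)"
  by (simp add: c3 algebra_simps)

lemma cr_aux1: "det3 a (join A K) A = (a \<bullet> K) * (A \<bullet> A) - (a \<bullet> A) * (K \<bullet> A)"
  by (simp add: c3 algebra_simps)
lemma cr_aux2: "det3 (join A K) (join A Q) A = det3 A K Q * (A \<bullet> A)"
  by (simp add: c3 algebra_simps)

lemma cr_formula:
  assumes "a \<bullet> A = 0" "A \<noteq> 0"
  shows "cross_ratio_lines A a (join A K) (join A Q) (join A M) =
         ((a \<bullet> K) * det3 A Q M) / ((a \<bullet> M) * det3 A K Q)"
proof -
  have n: "A \<bullet> A \<noteq> 0" using assms(2) by simp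
  show ?thesis unfolding cross_ratio_lines_def cr_aux2 unfolding cr_aux1 assms(1)
    using n by (simp add: field_simps)
qed

lemma det3_mat: "det3 (g *v x) (g *v y) (g *v z) = det g * det3 x y z"
  by (simp add: det3_exp det_3 matrix_vector_mult_def sum_3 algebra_simps)

lemma inner_vmul: "(l v* g) \<bullet> x = l \<bullet> (g *v x)" for l x :: "real^3" and g :: "real^3^3" by (rule dot_lmul_matrix)

definition uedge :: "nat \<Rightarrow> (nat \<times> nat) set \<Rightarrow> nat \<Rightarrow> nat \<Rightarrow> bool" where
  "uedge n D x y = is_edge n D (min x y) (max x y)"

definition OV :: "nat \<Rightarrow> (nat \<times> nat) set \<Rightarrow> nat \<Rightarrow> nat \<Rightarrow> nat \<Rightarrow> bool" where
  "OV n D p r q = ({p, r, q} \<in> tri_sets n D \<and> cbetw p r q)"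

lemma uedge_sym: "uedge n D x y = uedge n D y x"
  unfolding uedge_def by (simp add: min.commute max.commute)

lemma uedge_lt: "x < y \<Longrightarrow> uedge n D x y = is_edge n D x y"
  unfolding uedge_def by simp

lemma tri_sets_D:
  assumes "{p, r, q} \<in> tri_sets n D"
  shows "p \<in> {1..n} \<and> r \<in> {1..n} \<and> q \<in> {1..n} \<and> p \<noteq> r \<and> p \<noteq> q \<and> r \<noteq> q \<and>
         uedge n D p r \<and> uedge n D r q \<and> uedge n D p q"
proof -
  obtain i j k where e: "{p, r, q} = {i, j, k}" and t: "is_tri n D i j k"
    using assms unfolding tri_sets_def by blast
  have ij: "i < j" "j < k" "1 \<le> i" "k \<le> n" using t unfolding is_tri_def by auto
  have E0: "uedge n D i j" "uedge n D j k" "uedge n D i k"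
    using t ij unfolding is_tri_def by (simp_all add: uedge_lt)
  have E: "uedge n D i j" "uedge n D j k" "uedge n D i k" "uedge n D j i" "uedge n D k j" "uedge n D k i"
    using E0 uedge_sym by metis+
  have c: "card {i,j,k} = 3" using ij by auto
  hence "card {p,r,q} = 3" using e by simp
  hence d: "p \<noteq> r \<and> p \<noteq> q \<and> r \<noteq> q" by (auto simp: card_insert_if split: if_splits)
  have m: "p \<in> {i,j,k}" "r \<in> {i,j,k}" "q \<in> {i,j,k}" using e by blast+
  have ue: "\<And>x y. x \<in> {i,j,k} \<Longrightarrow> y \<in> {i,j,k} \<Longrightarrow> x \<noteq> y \<Longrightarrow> uedge n D x y"
    using E by blast
  have rg: "\<And>x. x \<in> {i,j,k} \<Longrightarrow> x \<in> {1..n}" using ij by auto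
  show ?thesis using d m ue[of p r] ue[of r q] ue[of p q] rg[of p] rg[of q] rg[of r] by blast
qed

lemma edge_in_D: "is_edge n D x y \<Longrightarrow> x + 1 < y \<Longrightarrow> \<not> (x = 1 \<and> y = n) \<Longrightarrow> (x, y) \<in> D"
  unfolding is_edge_def by auto

lemma cross_contra: "\<forall>x\<in>D. \<forall>y\<in>D. \<not> crosses x y \<Longrightarrow> (a,b) \<in> D \<Longrightarrow> (c,d) \<in> D \<Longrightarrow> a < c \<Longrightarrow> c < b \<Longrightarrow> b < d \<Longrightarrow> False"
  unfolding crosses_def by force

lemma ov_unique_aux:
  fixes p q r r' n :: nat
  assumes nc: "\<forall>x\<in>D. \<forall>y\<in>D. \<not> crosses x y"
    and e1: "uedge n D p r'" and e2: "uedge n D r q"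
    and r: "p \<in> {1..n}" "q \<in> {1..n}" "r \<in> {1..n}" "r' \<in> {1..n}"
    and ord: "(p < r \<and> r < r' \<and> r' < q) \<or> (q < p \<and> p < r \<and> r < r') \<or> (q < p \<and> r < r' \<and> r' < q)
              \<or> (q < p \<and> r' < q \<and> p < r)"
  shows False
  using ord
proof (elim disjE conjE)
  assume o: "p < r" "r < r'" "r' < q"
  have "(p, r') \<in> D" using e1 o r by (intro edge_in_D) (auto simp: uedge_lt)
  moreover have "(r, q) \<in> D" using e2 o r by (intro edge_in_D) (auto simp: uedge_lt)
  ultimately show False using cross_contra[OF nc, of p r' r q] o by blast
next
  assume o: "q < p" "p < r" "r < r'"
  have "(p, r') \<in> D" using e1 o r by (intro edge_in_D) (auto simp: uedge_lt)
  moreover have "(q, r) \<in> D" using e2 o r by (intro edge_in_D) (auto simp: uedge_lt uedge_sym[of n D r q])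
  ultimately show False using cross_contra[OF nc, of q r p r'] o by blast
next
  assume o: "q < p" "r < r'" "r' < q"
  have "(r', p) \<in> D" using e1 o r by (intro edge_in_D) (auto simp: uedge_lt uedge_sym[of n D p r'])
  moreover have "(r, q) \<in> D" using e2 o r by (intro edge_in_D) (auto simp: uedge_lt)
  ultimately show False using cross_contra[OF nc, of r q r' p] o by blast
next
  assume o: "q < p" "r' < q" "p < r"
  have "(r', p) \<in> D" using e1 o r by (intro edge_in_D) (auto simp: uedge_lt uedge_sym[of n D p r'])
  moreover have "(q, r) \<in> D" using e2 o r by (intro edge_in_D) (auto simp: uedge_lt uedge_sym[of n D r q])
  ultimately show False using cross_contra[OF nc, of r' p q r] o by blast
qed

lemma ov_unique:
  assumes tri: "poly_triangulation n D" and o1: "OV n D p r q" and o2: "OV n D p r' q"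
  shows "r = r'"
proof (rule ccontr)
  assume ne: "r \<noteq> r'"
  have nc: "\<forall>x\<in>D. \<forall>y\<in>D. \<not> crosses x y" using tri unfolding poly_triangulation_def by blast
  have t1: "p \<in> {1..n} \<and> r \<in> {1..n} \<and> q \<in> {1..n} \<and> p \<noteq> r \<and> p \<noteq> q \<and> r \<noteq> q \<and>
         uedge n D p r \<and> uedge n D r q \<and> uedge n D p q" using o1 tri_sets_D unfolding OV_def by blast
  have t2: "p \<in> {1..n} \<and> r' \<in> {1..n} \<and> q \<in> {1..n} \<and> p \<noteq> r' \<and> p \<noteq> q \<and> r' \<noteq> q \<and>
         uedge n D p r' \<and> uedge n D r' q \<and> uedge n D p q" using o2 tri_sets_D unfolding OV_def by blast
  have cb: "cbetw p r q" "cbetw p r' q" using o1 o2 unfolding OV_def by auto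
  consider "(p < r \<and> r < r' \<and> r' < q) \<or> (q < p \<and> p < r \<and> r < r') \<or> (q < p \<and> r < r' \<and> r' < q)
              \<or> (q < p \<and> r' < q \<and> p < r)"
    | "(p < r' \<and> r' < r \<and> r < q) \<or> (q < p \<and> p < r' \<and> r' < r) \<or> (q < p \<and> r' < r \<and> r < q)
              \<or> (q < p \<and> r < q \<and> p < r')"
    using cb ne unfolding cbetw_def by (cases "r < r'") auto
  then show False
  proof cases
    case 1 then show ?thesis using ov_unique_aux[OF nc, of n p r' r q] t1 t2 by blast
  next
    case 2 then show ?thesis using ov_unique_aux[OF nc, of n p r r' q] t1 t2 by blast
  qed
qed

lemma diag_props: "poly_triangulation n D \<Longrightarrow> (a,b) \<in> D \<Longrightarrow> 1 \<le> a \<and> a + 2 \<le> b \<and> b \<le> n \<and> \<not> (a = 1 \<and> b = n)"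
  unfolding poly_triangulation_def is_diag_def by auto

lemma nocross: "poly_triangulation n D \<Longrightarrow> x \<in> D \<Longrightarrow> y \<in> D \<Longrightarrow> \<not> crosses x y"
  unfolding poly_triangulation_def by blast

lemma maximal: "poly_triangulation n D \<Longrightarrow> is_diag n p \<Longrightarrow> p \<notin> D \<Longrightarrow> \<exists>q\<in>D. crosses p q"
  unfolding poly_triangulation_def by blast

lemma cross_contra2: "poly_triangulation n D \<Longrightarrow> (a,b) \<in> D \<Longrightarrow> (c,d) \<in> D \<Longrightarrow> a < c \<Longrightarrow> c < b \<Longrightarrow> b < d \<Longrightarrow> False"
  using nocross[of n D "(a,b)" "(c,d)"] unfolding crosses_def by auto

lemma ear_exists:
  assumes n: "n \<ge> 4" and tri: "poly_triangulation n D"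
  shows "\<exists>v. 2 \<le> v \<and> v \<le> n - 1 \<and> (v - 1, v + 1) \<in> D"
proof -
  have ne: "D \<noteq> {}"
  proof
    assume e: "D = {}"
    have "is_diag n (1,3)" using n unfolding is_diag_def by auto
    then obtain q where "q \<in> D" using maximal[OF tri] e by blast
    thus False using e by simp
  qed
  then obtain a0 b0 where ab0: "(a0,b0) \<in> D" by auto
  define d where "d = (LEAST d. \<exists>a b. (a,b) \<in> D \<and> b - a = d)"
  have "\<exists>a b. (a,b) \<in> D \<and> b - a = d" unfolding d_def
    by (rule LeastI[of _ "b0 - a0"]) (use ab0 in blast)
  then obtain a b where ab: "(a,b) \<in> D" "b - a = d" by blast
  have mn: "\<And>x y. (x,y) \<in> D \<Longrightarrow> d \<le> y - x" unfolding d_def by (rule Least_le) blast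
  have pa: "1 \<le> a \<and> a + 2 \<le> b \<and> b \<le> n \<and> \<not> (a = 1 \<and> b = n)" using diag_props[OF tri ab(1)] .
  show ?thesis
  proof (cases "d = 2")
    case True
    hence "b = a + 2" using ab pa by auto
    then show ?thesis using ab pa by (intro exI[of _ "a+1"]) auto
  next
    case False
    hence d3: "b \<ge> a + 3" using ab pa by auto
    have isd: "is_diag n (a, a+2)" using pa d3 unfolding is_diag_def by auto
    have "(a, a+2) \<notin> D"
    proof
      assume "(a, a+2) \<in> D"
      from mn[OF this] have "d \<le> 2" by simp
      thus False using d3 ab by auto
    qed
    then obtain x y where xy: "(x,y) \<in> D" "crosses (a,a+2) (x,y)" using maximal[OF tri isd] by auto
    have pxy: "1 \<le> x \<and> x + 2 \<le> y \<and> y \<le> n" using diag_props[OF tri xy(1)] by auto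
    show ?thesis
    proof (cases "a < x")
      case True
      hence x: "x = a + 1" "y > a + 2" using xy(2) unfolding crosses_def by auto
      have "d \<le> y - x" using mn[OF xy(1)] .
      hence "y > b" using x ab by auto
      then show ?thesis using cross_contra2[OF tri ab(1) xy(1)] x d3 by auto
    next
      case False
      hence x: "y = a + 1" "x < a" using xy(2) unfolding crosses_def by auto
      then show ?thesis using cross_contra2[OF tri xy(1) ab(1)] d3 by auto
    qed
  qed
qed

lemma ear_avoid:
  assumes tri: "poly_triangulation n D" and ear: "(v - 1, v + 1) \<in> D" and v: "2 \<le> v"
    and ab: "(a,b) \<in> D"
  shows "a \<noteq> v \<and> b \<noteq> v"
proof -
  have pa: "1 \<le> a \<and> a + 2 \<le> b \<and> b \<le> n" using diag_props[OF tri ab] by auto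
  have "a \<noteq> v"
  proof
    assume av: "a = v"
    have "v - 1 < a" "a < v + 1" "v + 1 < b" using pa av v by auto
    thus False using cross_contra2[OF tri ear ab] by auto
  qed
  moreover have "b \<noteq> v"
  proof
    assume bv: "b = v"
    have "a < v - 1" "v - 1 < b" "b < v + 1" using pa bv v by auto
    thus False using cross_contra2[OF tri ab ear] by auto
  qed
  ultimately show ?thesis by blast
qed

definition sg :: "nat \<Rightarrow> nat \<Rightarrow> nat" where "sg v i = (if i < v then i else Suc i)"
definition dl :: "nat \<Rightarrow> nat \<Rightarrow> nat" where "dl v i = (if i < v then i else i - 1)"
definition redD :: "nat \<Rightarrow> (nat \<times> nat) set \<Rightarrow> (nat \<times> nat) set" where
  "redD v D = (\<lambda>(a,b). (dl v a, dl v b)) ` (D - {(v - 1, v + 1)})"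

lemma dl_sg [simp]: "dl v (sg v i) = i" unfolding dl_def sg_def by auto
lemma sg_dl: "i \<noteq> v \<Longrightarrow> sg v (dl v i) = i" unfolding dl_def sg_def by auto
lemma sg_ne [simp]: "sg v i \<noteq> v" unfolding sg_def by auto
lemma sg_less [simp]: "(sg v i < sg v j) = (i < j)" unfolding sg_def by auto
lemma sg_le [simp]: "(sg v i \<le> sg v j) = (i \<le> j)" unfolding sg_def by auto
lemma sg_inj [simp]: "(sg v i = sg v j) = (i = j)" unfolding sg_def by auto

locale ear =
  fixes n v :: nat and D :: "(nat \<times> nat) set"
  assumes n4: "n \<ge> 4" and tri: "poly_triangulation n D" and v2: "2 \<le> v" and vn: "v \<le> n - 1"
    and ear: "(v - 1, v + 1) \<in> D"
begin

lemma avoid: "(a,b) \<in> D \<Longrightarrow> a \<noteq> v \<and> b \<noteq> v" using ear_avoid[OF tri ear v2] by blast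

lemma redD_iff: "(a,b) \<in> redD v D \<longleftrightarrow> (sg v a, sg v b) \<in> D \<and> (sg v a, sg v b) \<noteq> (v - 1, v + 1)"
proof
  assume "(a,b) \<in> redD v D"
  then obtain x y where xy: "(x,y) \<in> D" "(x,y) \<noteq> (v - 1, v + 1)" "a = dl v x" "b = dl v y"
    unfolding redD_def by auto
  then show "(sg v a, sg v b) \<in> D \<and> (sg v a, sg v b) \<noteq> (v - 1, v + 1)" using avoid[OF xy(1)] sg_dl by auto
next
  assume "(sg v a, sg v b) \<in> D \<and> (sg v a, sg v b) \<noteq> (v - 1, v + 1)"
  then show "(a,b) \<in> redD v D" unfolding redD_def
    by (intro image_eqI[of _ _ "(sg v a, sg v b)"]) auto
qed

lemma sg_1 [simp]: "sg v 1 = 1" using v2 unfolding sg_def by auto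
lemma sg_n [simp]: "sg v (n - 1) = n" using vn v2 unfolding sg_def by auto
lemma sg_eq1: "(sg v i = 1) = (i = 1)" unfolding sg_def using v2 by auto
lemma sg_eqn: "(sg v i = n) = (i = n - 1)" unfolding sg_def using v2 vn by auto

lemma crosses_sg: "crosses (sg v a, sg v b) (sg v c, sg v d) = crosses (a,b) (c,d)"
  unfolding crosses_def by simp

lemma red_tri: "poly_triangulation (n - 1) (redD v D)"
proof -
  have A: "redD v D \<subseteq> {p. is_diag (n - 1) p}"
  proof
    fix p assume "p \<in> redD v D"
    then obtain a b where p: "p = (a,b)" and i: "(sg v a, sg v b) \<in> D" "(sg v a, sg v b) \<noteq> (v - 1, v + 1)"
      using redD_iff by (cases p) auto
    have d: "1 \<le> sg v a \<and> sg v a + 2 \<le> sg v b \<and> sg v b \<le> n \<and> \<not> (sg v a = 1 \<and> sg v b = n)"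
      using diag_props[OF tri i(1)] .
    show "p \<in> {p. is_diag (n - 1) p}" using d i(2) v2 vn unfolding p is_diag_def sg_def
      by (auto split: if_splits)
  qed
  have B: "\<forall>p\<in>redD v D. \<forall>q\<in>redD v D. \<not> crosses p q"
  proof (intro ballI)
    fix p q assume "p \<in> redD v D" "q \<in> redD v D"
    then obtain a b c d where "p = (a,b)" "q = (c,d)" "(sg v a, sg v b) \<in> D" "(sg v c, sg v d) \<in> D"
      using redD_iff by (cases p, cases q) auto
    then show "\<not> crosses p q" using nocross[OF tri] crosses_sg by metis
  qed
  have C: "\<forall>p. is_diag (n - 1) p \<and> p \<notin> redD v D \<longrightarrow> (\<exists>q\<in>redD v D. crosses p q)"
  proof (intro allI impI)
    fix p assume "is_diag (n - 1) p \<and> p \<notin> redD v D"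
    then obtain a b where p: "p = (a,b)" and dg: "is_diag (n - 1) (a,b)" and nr: "(a,b) \<notin> redD v D"
      by (cases p) auto
    have dgn: "is_diag n (sg v a, sg v b)" using dg v2 vn unfolding is_diag_def sg_def by (auto split: if_splits)
    have nd: "(sg v a, sg v b) \<notin> D"
    proof
      assume "(sg v a, sg v b) \<in> D"
      hence "(sg v a, sg v b) = (v - 1, v + 1)" using nr redD_iff by blast
      hence "a = v - 1" "b = v" using v2 unfolding sg_def by (auto split: if_splits)
      thus False using dg unfolding is_diag_def by auto
    qed
    obtain x y where xy: "(x,y) \<in> D" "crosses (sg v a, sg v b) (x,y)" using maximal[OF tri dgn nd] by auto
    have ne: "(x,y) \<noteq> (v - 1, v + 1)"
    proof
      assume "(x,y) = (v - 1, v + 1)"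
      thus False using xy(2) unfolding crosses_def by (auto simp: sg_def split: if_splits)
    qed
    have xv: "x \<noteq> v" "y \<noteq> v" using avoid[OF xy(1)] by auto
    have "(dl v x, dl v y) \<in> redD v D" using xy(1) ne xv by (simp add: redD_iff sg_dl)
    moreover have "crosses (a,b) (dl v x, dl v y)"
      using xy(2) crosses_sg[of a b "dl v x" "dl v y"] xv by (simp add: sg_dl)
    ultimately show "\<exists>q\<in>redD v D. crosses p q" unfolding p by blast
  qed
  show ?thesis unfolding poly_triangulation_def using A B C by blast
qed

end

fun imap :: "nat \<Rightarrow> coord_index \<Rightarrow> coord_index" where
  "imap v (Tri i j k) = Tri (sg v i) (sg v j) (sg v k)"
| "imap v (Dg p q) = Dg (sg v p) (sg v q)"

definition OVE :: "nat \<Rightarrow> (nat \<times> nat) set \<Rightarrow> bool" where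
  "OVE n D = ((\<forall>(p,q)\<in>D. (\<exists>r. OV n D p r q) \<and> (\<exists>r. OV n D q r p)) \<and>
              (\<forall>i. 1 \<le> i \<and> i < n \<longrightarrow> (\<exists>r. OV n D (i+1) r i)) \<and> (\<exists>r. OV n D 1 r n))"

context ear begin

lemma edge_corr: "a < b \<Longrightarrow> is_edge (n - 1) (redD v D) a b = is_edge n D (sg v a) (sg v b)"
proof -
  assume ab: "a < b"
  show ?thesis
  proof (cases "(sg v a, sg v b) = (v - 1, v + 1)")
    case True
    hence "a = v - 1" "b = v" using v2 unfolding sg_def by (auto split: if_splits)
    then show ?thesis using True ear v2 unfolding is_edge_def by auto
  next
    case False
    have r: "(a,b) \<in> redD v D \<longleftrightarrow> (sg v a, sg v b) \<in> D" using redD_iff False by blast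
    have s: "(b = a + 1) = (sg v b = sg v a + 1)" using False ab v2 unfolding sg_def by (auto split: if_splits)
    show ?thesis unfolding is_edge_def r s using sg_eq1[of a] sg_eqn[of b] by auto
  qed
qed

lemma edge_to_v: "x < v \<Longrightarrow> is_edge n D x v \<Longrightarrow> x = v - 1"
  using avoid[of x v] vn unfolding is_edge_def by auto

lemma edge_from_v: "v < y \<Longrightarrow> is_edge n D v y \<Longrightarrow> y = v + 1"
  using avoid[of v y] v2 unfolding is_edge_def by auto

lemma tri_corr1: "is_tri (n - 1) (redD v D) i j k \<Longrightarrow> is_tri n D (sg v i) (sg v j) (sg v k)"
proof -
  assume t: "is_tri (n - 1) (redD v D) i j k"
  have o: "1 \<le> i" "i < j" "j < k" "k \<le> n - 1" using t unfolding is_tri_def by auto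
  have "sg v k \<le> n" using o vn unfolding sg_def by auto
  moreover have "1 \<le> sg v i" using o unfolding sg_def by auto
  ultimately show ?thesis using t o edge_corr unfolding is_tri_def by auto
qed

lemma tri_corr2: "is_tri n D i j k \<Longrightarrow> v \<notin> {i,j,k} \<Longrightarrow> is_tri (n - 1) (redD v D) (dl v i) (dl v j) (dl v k)"
proof -
  assume t: "is_tri n D i j k" and nv: "v \<notin> {i,j,k}"
  have e: "sg v (dl v i) = i" "sg v (dl v j) = j" "sg v (dl v k) = k" using nv sg_dl by auto
  have o: "1 \<le> i" "i < j" "j < k" "k \<le> n" using t unfolding is_tri_def by auto
  have o2: "1 \<le> dl v i" "dl v i < dl v j" "dl v j < dl v k" "dl v k \<le> n - 1"
    using o nv v2 vn unfolding dl_def by auto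
  have ed: "is_edge n D i j" "is_edge n D j k" "is_edge n D i k" using t unfolding is_tri_def by auto
  have "is_edge (n - 1) (redD v D) (dl v i) (dl v j)" using edge_corr[of "dl v i" "dl v j"] o2 e ed by simp
  moreover have "is_edge (n - 1) (redD v D) (dl v j) (dl v k)" using edge_corr[of "dl v j" "dl v k"] o2 e ed by simp
  moreover have "is_edge (n - 1) (redD v D) (dl v i) (dl v k)" using edge_corr[of "dl v i" "dl v k"] o2 e ed by simp
  ultimately show ?thesis using o2 unfolding is_tri_def by simp
qed

lemma tri_v: "is_tri n D i j k \<Longrightarrow> v \<in> {i,j,k} \<Longrightarrow> i = v - 1 \<and> j = v \<and> k = v + 1"
proof -
  assume t: "is_tri n D i j k" and vi: "v \<in> {i,j,k}"
  have o: "1 \<le> i" "i < j" "j < k" "k \<le> n" "is_edge n D i j" "is_edge n D j k" "is_edge n D i k"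
    using t unfolding is_tri_def by auto
  consider "v = i" | "v = j" | "v = k" using vi by auto
  then show ?thesis
  proof cases
    case 1 then show ?thesis using edge_from_v[of j] edge_from_v[of k] o by auto
  next
    case 2 then show ?thesis using edge_to_v[of i] edge_from_v[of k] o by auto
  next
    case 3 then show ?thesis using edge_to_v[of i] edge_to_v[of j] o by auto
  qed
qed

lemma tri_ear: "is_tri n D (v - 1) v (v + 1)"
  using ear v2 vn unfolding is_tri_def is_edge_def by auto

lemma Iset_a: "x \<in> Iset (n - 1) (redD v D) \<Longrightarrow> imap v x \<in> Iset n D"
proof -
  assume x: "x \<in> Iset (n - 1) (redD v D)"
  then consider (T) i j k where "x = Tri i j k" "is_tri (n - 1) (redD v D) i j k"
    | (D1) j k where "x = Dg j k" "(j,k) \<in> redD v D" | (D2) j k where "x = Dg k j" "(j,k) \<in> redD v D"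
    unfolding Iset_def by blast
  then show ?thesis
  proof cases
    case T then show ?thesis using tri_corr1 unfolding Iset_def by auto
  next
    case D1 then show ?thesis using redD_iff unfolding Iset_def by auto
  next
    case D2 then show ?thesis using redD_iff unfolding Iset_def by auto
  qed
qed

lemma Iset_b: "Tri (v - 1) v (v + 1) \<in> Iset n D" "Dg (v - 1) (v + 1) \<in> Iset n D" "Dg (v + 1) (v - 1) \<in> Iset n D"
  using tri_ear ear unfolding Iset_def by blast+

lemma Iset_c: "y \<in> Iset n D \<Longrightarrow> y \<in> {Tri (v - 1) v (v + 1), Dg (v - 1) (v + 1), Dg (v + 1) (v - 1)} \<or>
   (\<exists>x\<in>Iset (n - 1) (redD v D). y = imap v x)"
proof -
  assume y: "y \<in> Iset n D"
  then consider (T) i j k where "y = Tri i j k" "is_tri n D i j k"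
    | (D1) j k where "y = Dg j k" "(j,k) \<in> D" | (D2) j k where "y = Dg k j" "(j,k) \<in> D"
    unfolding Iset_def by blast
  then show ?thesis
  proof cases
    case T
    show ?thesis
    proof (cases "v \<in> {i,j,k}")
      case True then show ?thesis using tri_v T by auto
    next
      case False
      hence "Tri (dl v i) (dl v j) (dl v k) \<in> Iset (n - 1) (redD v D)"
        using tri_corr2 T unfolding Iset_def by blast
      moreover have "y = imap v (Tri (dl v i) (dl v j) (dl v k))" using T False sg_dl by auto
      ultimately show ?thesis by blast
    qed
  next
    case D1
    show ?thesis
    proof (cases "(j,k) = (v - 1, v + 1)")
      case True then show ?thesis using D1 by auto
    next
      case False
      have jk: "j \<noteq> v" "k \<noteq> v" using avoid D1 by auto
      hence "(dl v j, dl v k) \<in> redD v D" using D1 False redD_iff sg_dl by auto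
      hence "Dg (dl v j) (dl v k) \<in> Iset (n - 1) (redD v D)" unfolding Iset_def by blast
      moreover have "y = imap v (Dg (dl v j) (dl v k))" using D1 jk sg_dl by auto
      ultimately show ?thesis by blast
    qed
  next
    case D2
    show ?thesis
    proof (cases "(j,k) = (v - 1, v + 1)")
      case True then show ?thesis using D2 by auto
    next
      case False
      have jk: "j \<noteq> v" "k \<noteq> v" using avoid D2 by auto
      hence "(dl v j, dl v k) \<in> redD v D" using D2 False redD_iff sg_dl by auto
      hence "Dg (dl v k) (dl v j) \<in> Iset (n - 1) (redD v D)" unfolding Iset_def by blast
      moreover have "y = imap v (Dg (dl v k) (dl v j))" using D2 jk sg_dl by auto
      ultimately show ?thesis by blast
    qed
  qed
qed

lemma OV_transfer: "OV (n - 1) (redD v D) a r b \<Longrightarrow> OV n D (sg v a) (sg v r) (sg v b)"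
proof -
  assume o: "OV (n - 1) (redD v D) a r b"
  then obtain i j k where e: "{a,r,b} = {i,j,k}" and t: "is_tri (n - 1) (redD v D) i j k"
    unfolding OV_def tri_sets_def by blast
  have "{sg v a, sg v r, sg v b} = sg v ` {a,r,b}" by simp
  also have "\<dots> = {sg v i, sg v j, sg v k}" using e by simp
  finally have "{sg v a, sg v r, sg v b} \<in> tri_sets n D" using tri_corr1[OF t] unfolding tri_sets_def by blast
  moreover have "cbetw (sg v a) (sg v r) (sg v b)" using o unfolding OV_def cbetw_def by simp
  ultimately show ?thesis unfolding OV_def by blast
qed

lemma OV_ear_in: "OV n D (v - 1) v (v + 1)"
proof -
  have "{v - 1, v, v + 1} \<in> tri_sets n D" using tri_ear unfolding tri_sets_def by blast
  thus ?thesis unfolding OV_def cbetw_def using v2 by auto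
qed

lemma OVE_step: "OVE (n - 1) (redD v D) \<Longrightarrow> OVE n D"
proof -
  assume IH: "OVE (n - 1) (redD v D)"
  have A: "\<forall>(p,q)\<in>D. (\<exists>r. OV n D p r q) \<and> (\<exists>r. OV n D q r p)"
  proof (intro ballI, clarify)
    fix p q assume pq: "(p,q) \<in> D"
    show "(\<exists>r. OV n D p r q) \<and> (\<exists>r. OV n D q r p)"
    proof (cases "(p,q) = (v - 1, v + 1)")
      case True
      have i1: "1 \<le> v - 1 \<and> v - 1 < n - 1" using v2 vn n4 by auto
      have "\<exists>r. OV (n - 1) (redD v D) ((v - 1) + 1) r (v - 1)" using IH i1 unfolding OVE_def by blast
      then obtain r where "OV (n - 1) (redD v D) v r (v - 1)" using v2 by auto
      hence "OV n D (v + 1) (sg v r) (v - 1)" using OV_transfer[of v r "v - 1"] v2 unfolding sg_def by auto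
      then show ?thesis using True OV_ear_in by auto
    next
      case False
      have pv: "p \<noteq> v" "q \<noteq> v" using avoid pq by auto
      hence "(dl v p, dl v q) \<in> redD v D" using pq False redD_iff sg_dl by auto
      then obtain r1 r2 where "OV (n - 1) (redD v D) (dl v p) r1 (dl v q)" "OV (n - 1) (redD v D) (dl v q) r2 (dl v p)"
        using IH unfolding OVE_def by blast
      then show ?thesis using OV_transfer sg_dl pv by metis
    qed
  qed
  have B: "\<forall>i. 1 \<le> i \<and> i < n \<longrightarrow> (\<exists>r. OV n D (i+1) r i)"
  proof (intro allI impI)
    fix i assume i: "1 \<le> i \<and> i < n"
    consider "i = v - 1" | "i = v" | "i < v - 1" | "i > v" by linarith
    then show "\<exists>r. OV n D (i+1) r i"
    proof cases
      case 1
      have "{v - 1, v, v + 1} = {v, v + 1, v - 1}" by auto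
      hence "OV n D v (v + 1) (v - 1)" using tri_ear v2 unfolding OV_def tri_sets_def cbetw_def by auto
      then show ?thesis using 1 v2 by auto
    next
      case 2
      have "{v - 1, v, v + 1} = {v + 1, v - 1, v}" by auto
      hence "OV n D (v + 1) (v - 1) v" using tri_ear v2 unfolding OV_def tri_sets_def cbetw_def by auto
      then show ?thesis using 2 v2 by auto
    next
      case 3
      obtain r where "OV (n - 1) (redD v D) (i + 1) r i" using IH i 3 vn unfolding OVE_def by auto
      hence "OV n D (sg v (i + 1)) (sg v r) (sg v i)" by (rule OV_transfer)
      moreover have "sg v (i + 1) = i + 1" "sg v i = i" using 3 unfolding sg_def by auto
      ultimately show ?thesis by auto
    next
      case 4
      have i1: "1 \<le> i - 1 \<and> i - 1 < n - 1" using i 4 v2 by auto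
      have "\<exists>r. OV (n - 1) (redD v D) ((i - 1) + 1) r (i - 1)" using IH i1 unfolding OVE_def by blast
      moreover have "(i - 1) + 1 = i" using 4 v2 by auto
      ultimately obtain r where "OV (n - 1) (redD v D) i r (i - 1)" by auto
      hence "OV n D (sg v i) (sg v r) (sg v (i - 1))" by (rule OV_transfer)
      moreover have "sg v i = i + 1" "sg v (i - 1) = i" using 4 unfolding sg_def by auto
      ultimately show ?thesis by auto
    qed
  qed
  have C: "\<exists>r. OV n D 1 r n"
  proof -
    obtain r where "OV (n - 1) (redD v D) 1 r (n - 1)" using IH unfolding OVE_def by auto
    hence "OV n D (sg v 1) (sg v r) (sg v (n - 1))" by (rule OV_transfer)
    hence "OV n D 1 (sg v r) n" by (simp only: sg_1 sg_n)
    thus ?thesis by blast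
  qed
  show ?thesis unfolding OVE_def using A B C by blast
qed

end

lemma tri3_empty: "poly_triangulation 3 D \<Longrightarrow> D = {}"
  unfolding poly_triangulation_def is_diag_def by fastforce

lemma OVE_base: "poly_triangulation 3 D \<Longrightarrow> OVE 3 D"
proof -
  assume t: "poly_triangulation 3 D"
  have D: "D = {}" using tri3_empty[OF t] .
  have tr: "is_tri 3 D 1 2 3" unfolding is_tri_def is_edge_def by auto
  have T: "{1,2,3::nat} \<in> tri_sets 3 D" using tr unfolding tri_sets_def by blast
  have "{2,3,1::nat} = {1,2,3}" "{3,1,2::nat} = {1,2,3}" by auto
  hence o: "OV 3 D 2 3 1" "OV 3 D 3 1 2" "OV 3 D 1 2 3" using T unfolding OV_def cbetw_def by auto
  have B: "\<forall>i. 1 \<le> i \<and> i < 3 \<longrightarrow> (\<exists>r. OV 3 D (i+1) r i)"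
  proof (intro allI impI)
    fix i :: nat assume "1 \<le> i \<and> i < 3"
    hence "i = 1 \<or> i = 2" by auto
    then show "\<exists>r. OV 3 D (i+1) r i"
    proof
      assume h: "i = 1"
      have "OV 3 D (1+1) 3 1" using o(1) by (simp only: one_add_one)
      then show ?thesis using h by blast
    next
      assume h: "i = 2"
      have "OV 3 D (2+1) 1 2" using o(2) by (simp only: numeral_plus_one semiring_norm)
      then show ?thesis using h by blast
    qed
  qed
  show ?thesis unfolding OVE_def using D B o by auto
qed

theorem OVE_all: "n \<ge> 3 \<Longrightarrow> poly_triangulation n D \<Longrightarrow> OVE n D"
proof (induction n arbitrary: D rule: nat_induct_at_least)
  case base
  then show ?case using OVE_base by blast
next
  case (Suc m)
  obtain v where v: "2 \<le> v" "v \<le> Suc m - 1" "(v - 1, v + 1) \<in> D" using ear_exists[of "Suc m" D] Suc by auto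
  interpret ear "Suc m" v D using v Suc by unfold_locales auto
  have "OVE m (redD v D)" using Suc.IH red_tri by simp
  then show ?case using OVE_step by simp
qed

lemma opp_eq: "poly_triangulation n D \<Longrightarrow> OV n D p r q \<Longrightarrow> opp_vertex n D p q = r"
  unfolding opp_vertex_def using ov_unique unfolding OV_def by blast

lemma opp_OV: "n \<ge> 3 \<Longrightarrow> poly_triangulation n D \<Longrightarrow> (p,q) \<in> D \<or> (q,p) \<in> D \<Longrightarrow> OV n D p (opp_vertex n D p q) q"
proof -
  assume a: "n \<ge> 3" "poly_triangulation n D" "(p,q) \<in> D \<or> (q,p) \<in> D"
  have "OVE n D" using OVE_all a by blast
  then obtain r where "OV n D p r q" using a(3) unfolding OVE_def by blast
  then show ?thesis using opp_eq[OF a(2)] by simp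
qed

context ear begin

lemma opp_corr: "(a,b) \<in> redD v D \<or> (b,a) \<in> redD v D \<Longrightarrow>
   opp_vertex n D (sg v a) (sg v b) = sg v (opp_vertex (n - 1) (redD v D) a b)"
proof -
  assume ab: "(a,b) \<in> redD v D \<or> (b,a) \<in> redD v D"
  have "OV (n - 1) (redD v D) a (opp_vertex (n - 1) (redD v D) a b) b"
    using opp_OV[OF _ red_tri ab] n4 by auto
  from OV_transfer[OF this] show ?thesis using opp_eq[OF tri] by blast
qed

lemma opp_ear1: "opp_vertex n D (v - 1) (v + 1) = v"
  using opp_eq[OF tri OV_ear_in] .

lemma opp_ear2: "let m = opp_vertex n D (v + 1) (v - 1) in m \<in> {1..n} \<and> (m < v - 1 \<or> m > v + 1)"
proof -
  have o: "OV n D (v + 1) (opp_vertex n D (v + 1) (v - 1)) (v - 1)"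
    using opp_OV[OF _ tri] ear n4 by auto
  show ?thesis using tri_sets_D[of "v+1" _ "v - 1" n D] o unfolding OV_def cbetw_def Let_def by auto
qed

lemma coord_corr: "x \<in> Iset (n - 1) (redD v D) \<Longrightarrow> coord n D c (imap v x) = coord (n - 1) (redD v D) (c \<circ> sg v) x"
proof -
  assume x: "x \<in> Iset (n - 1) (redD v D)"
  then consider (T) i j k where "x = Tri i j k"
    | (Dg) j k where "x = Dg j k" "(j,k) \<in> redD v D \<or> (k,j) \<in> redD v D"
    unfolding Iset_def by blast
  then show ?thesis
  proof cases
    case T then show ?thesis by (simp add: pt_def ln_def)
  next
    case Dg
    have "(k,j) \<in> redD v D \<or> (j,k) \<in> redD v D" using Dg by blast
    then show ?thesis using Dg opp_corr[of j k] opp_corr[of k j] by (simp add: pt_def ln_def Let_def)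
  qed
qed

end

lemma key_id: "det3 U V Z * (l \<bullet> W) - det3 U V W * (l \<bullet> Z) = (l \<bullet> U) * det3 V Z W - (l \<bullet> V) * det3 U Z W"
  by (simp add: c3 algebra_simps)
lemma par_id: "(l \<bullet> U) *\<^sub>R V - (l \<bullet> V) *\<^sub>R U = join (join U V) l"
  by (simp add: vec3_eq c3 algebra_simps)
lemma det_join_self: "det3 U V (join U V) = join U V \<bullet> join U V"
  by (simp add: c3 algebra_simps)
lemma plucker: "det3 X E W * det3 X U Z = det3 X E U * det3 X W Z + det3 X E Z * det3 X U W"
  by (simp add: c3 algebra_simps)

lemma sign_transfer: "(a::real) > 0 \<Longrightarrow> b > 0 \<Longrightarrow> x * a = y * b \<Longrightarrow> w * y > 0 \<Longrightarrow> w * x > 0"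
proof -
  assume h: "a > 0" "b > 0" "x * a = y * b" "w * y > 0"
  have "(w * x) * a = (w * y) * b" using h(3) by (simp add: algebra_simps)
  moreover have "(w * y) * b > 0" using h by simp
  ultimately have "(w * x) * a > 0" by linarith
  thus ?thesis using h(1) by (simp add: zero_less_mult_iff)
qed

lemma cprev_range: "N \<ge> 1 \<Longrightarrow> i \<in> {1..N} \<Longrightarrow> cprev N i \<in> {1..N}"
  unfolding cprev_def by auto
lemma cprev_ge2: "i \<ge> 2 \<Longrightarrow> cprev N i = i - 1" unfolding cprev_def by auto
lemma cprev_1: "cprev N 1 = N" unfolding cprev_def by auto

definition cyc3 :: "nat \<Rightarrow> nat \<Rightarrow> nat \<Rightarrow> bool" where
  "cyc3 x y z = ((x < y \<and> y < z) \<or> (y < z \<and> z < x) \<or> (z < x \<and> x < y))"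

locale gconf0 =
  fixes N :: nat and c :: config and P L A :: "nat \<Rightarrow> real^3"
  assumes N3: "N \<ge> 3"
    and inc1: "i \<in> {1..N} \<Longrightarrow> L i \<bullet> P (cprev N i) = 0"
    and inc2: "i \<in> {1..N} \<Longrightarrow> L i \<bullet> P i = 0"
    and pos: "i \<in> {1..N} \<Longrightarrow> j \<in> {1..N} \<Longrightarrow> j \<noteq> cprev N i \<Longrightarrow> j \<noteq> i \<Longrightarrow> L i \<bullet> P j > 0"
    and Acomb: "i \<in> {1..N} \<Longrightarrow> \<exists>s t. s > 0 \<and> t > 0 \<and> A i = s *\<^sub>R P (cprev N i) + t *\<^sub>R P i"
    and Lsc: "i \<in> {1..N} \<Longrightarrow> \<exists>e. e \<noteq> 0 \<and> ln c i = e *\<^sub>R L i"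
    and Asc: "i \<in> {1..N} \<Longrightarrow> \<exists>r. r \<noteq> 0 \<and> pt c i = r *\<^sub>R A i"
begin

lemma LP_nonneg: "i \<in> {1..N} \<Longrightarrow> j \<in> {1..N} \<Longrightarrow> L i \<bullet> P j \<ge> 0"
  using inc1 inc2 pos by (metis order.refl less_imp_le)

lemma wit: "j \<in> {1..N} \<Longrightarrow> \<exists>m\<in>{1..N}. j \<noteq> cprev N m \<and> j \<noteq> m"
proof -
  assume j: "j \<in> {1..N}"
  show ?thesis
  proof (cases "j = 1")
    case True
    then show ?thesis using N3 by (intro bexI[of _ 3]) (auto simp: cprev_def)
  next
    case False
    then show ?thesis using N3 j by (intro bexI[of _ "j - 1"]) (auto simp: cprev_def)
  qed
qed

lemma Pnz: "j \<in> {1..N} \<Longrightarrow> P j \<noteq> 0"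
  using wit pos by (metis inner_zero_right less_irrefl)

lemma key: "i \<in> {2..N} \<Longrightarrow> det3 (P (i - 1)) (P i) Z * (L i \<bullet> W) = det3 (P (i - 1)) (P i) W * (L i \<bullet> Z)"
proof -
  assume i: "i \<in> {2..N}"
  have "L i \<bullet> P (i - 1) = 0" using inc1[of i] i by (simp add: cprev_ge2)
  moreover have "L i \<bullet> P i = 0" using inc2[of i] i by simp
  ultimately show ?thesis using key_id[of "P (i - 1)" "P i" Z "L i" W] by simp
qed

lemma dnz: "i \<in> {2..N} \<Longrightarrow> j \<in> {1..N} \<Longrightarrow> j \<noteq> i - 1 \<Longrightarrow> j \<noteq> i \<Longrightarrow> det3 (P (i - 1)) (P i) (P j) \<noteq> 0"
proof
  assume i: "i \<in> {2..N}" and j: "j \<in> {1..N}" "j \<noteq> i - 1" "j \<noteq> i"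
    and z: "det3 (P (i - 1)) (P i) (P j) = 0"
  have Lj: "L i \<bullet> P j > 0" using pos[of i j] i j by (simp add: cprev_ge2)
  have "\<And>Z. det3 (P (i - 1)) (P i) Z = 0"
  proof -
    fix Z
    have "det3 (P (i - 1)) (P i) Z * (L i \<bullet> P j) = 0" using key[OF i, of Z "P j"] z by simp
    thus "det3 (P (i - 1)) (P i) Z = 0" using Lj by simp
  qed
  from this[of "join (P (i - 1)) (P i)"] have jz: "join (P (i - 1)) (P i) = 0"
    unfolding det_join_self by simp
  have i1: "i - 1 \<in> {1..N}" using i by auto
  have l1: "L (i - 1) \<bullet> P (i - 1) = 0" using inc2[OF i1] .
  have ii: "i \<in> {1..N}" "i \<noteq> cprev N (i - 1)" "i \<noteq> i - 1" using i N3 unfolding cprev_def by auto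
  have l2: "L (i - 1) \<bullet> P i > 0" using pos[OF i1 ii] .
  have "(L (i - 1) \<bullet> P (i - 1)) *\<^sub>R P i - (L (i - 1) \<bullet> P i) *\<^sub>R P (i - 1) = 0"
    using par_id[of "L (i - 1)" "P (i - 1)" "P i"] jz by (simp add: join_def)
  hence "P (i - 1) = 0" using l1 l2 by simp
  thus False using Pnz[OF i1] by simp
qed

definition om :: real where "om = sgn (det3 (P 1) (P 2) (P 3))"

lemma om_props: "om = 1 \<or> om = -1" "om * om = 1" "om * det3 (P 1) (P 2) (P 3) > 0"
proof -
  have "det3 (P 1) (P 2) (P 3) \<noteq> 0" using dnz[of 2 3] N3 by simp
  thus "om = 1 \<or> om = -1" "om * om = 1" "om * det3 (P 1) (P 2) (P 3) > 0"
    unfolding om_def by (auto simp: sgn_real_def)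
qed

lemma S: "i \<in> {2..N} \<Longrightarrow> j \<in> {1..N} \<Longrightarrow> j \<noteq> i - 1 \<Longrightarrow> j \<noteq> i \<Longrightarrow> om * det3 (P (i - 1)) (P i) (P j) > 0"
proof -
  have "\<forall>j. 2 \<le> i \<longrightarrow> i \<le> N \<longrightarrow> j \<in> {1..N} \<longrightarrow> j \<noteq> i - 1 \<longrightarrow> j \<noteq> i \<longrightarrow> om * det3 (P (i - 1)) (P i) (P j) > 0"
  proof (induction i)
    case 0 then show ?case by simp
  next
    case (Suc i)
    show ?case
    proof (cases "Suc i = 2")
      case True
      show ?thesis
      proof (intro allI impI)
        fix j assume j: "j \<in> {1..N}" "j \<noteq> Suc i - 1" "j \<noteq> Suc i"
        have a: "L 2 \<bullet> P 3 > 0" using pos[of 2 3] N3 by (simp add: cprev_def)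
        have b: "L 2 \<bullet> P j > 0" using pos[of 2 j] N3 j True by (simp add: cprev_def)
        have "det3 (P 1) (P 2) (P j) * (L 2 \<bullet> P 3) = det3 (P 1) (P 2) (P 3) * (L 2 \<bullet> P j)"
          using key[of 2 "P j" "P 3"] N3 by simp
        hence h: "om * det3 (P 1) (P 2) (P j) > 0" using sign_transfer[OF a b _ om_props(3)] by simp
        have e1: "Suc i - 1 = 1" "Suc i = 2" using True by auto
        show "om * det3 (P (Suc i - 1)) (P (Suc i)) (P j) > 0" unfolding e1(1) unfolding e1(2) by (rule h)
      qed
    next
      case False
      show ?thesis
      proof (intro allI impI)
        fix j assume i: "2 \<le> Suc i" "Suc i \<le> N" and j: "j \<in> {1..N}" "j \<noteq> Suc i - 1" "j \<noteq> Suc i"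
        have i2: "2 \<le> i" using False i by simp
        have h1: "om * det3 (P (i - 1)) (P i) (P (Suc i)) > 0" using Suc.IH i2 i by auto
        have h2: "det3 (P i) (P (Suc i)) (P (i - 1)) = det3 (P (i - 1)) (P i) (P (Suc i))"
          using det3_cyc by metis
        have aa: "Suc i \<in> {1..N}" "i - 1 \<in> {1..N}" "i - 1 \<noteq> cprev N (Suc i)" "i - 1 \<noteq> Suc i"
          using i i2 unfolding cprev_def by auto
        have a: "L (Suc i) \<bullet> P (i - 1) > 0" using pos[OF aa] .
        have b: "L (Suc i) \<bullet> P j > 0" using pos[of "Suc i" j] i j by (simp add: cprev_def)
        have "det3 (P i) (P (Suc i)) (P j) * (L (Suc i) \<bullet> P (i - 1)) = det3 (P i) (P (Suc i)) (P (i - 1)) * (L (Suc i) \<bullet> P j)"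
          using key[of "Suc i" "P j" "P (i - 1)"] i by simp
        thus "om * det3 (P (Suc i - 1)) (P (Suc i)) (P j) > 0"
          using sign_transfer[OF a b _ h1[folded h2]] by simp
      qed
    qed
  qed
  thus "i \<in> {2..N} \<Longrightarrow> j \<in> {1..N} \<Longrightarrow> j \<noteq> i - 1 \<Longrightarrow> j \<noteq> i \<Longrightarrow> om * det3 (P (i - 1)) (P i) (P j) > 0"
    by auto
qed

lemma Gen: "1 \<le> a \<Longrightarrow> a < b \<Longrightarrow> b < w \<Longrightarrow> w \<le> N \<Longrightarrow> om * det3 (P a) (P b) (P w) > 0"
proof -
  assume ab: "1 \<le> a" "a < b"
  have "\<forall>w. b < w \<longrightarrow> w \<le> N \<longrightarrow> om * det3 (P a) (P b) (P w) > 0"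
  proof
    fix w show "b < w \<longrightarrow> w \<le> N \<longrightarrow> om * det3 (P a) (P b) (P w) > 0"
    proof (induction w)
      case 0 then show ?case by simp
    next
      case (Suc w)
      show ?case
      proof (intro impI)
        assume w: "b < Suc w" "Suc w \<le> N"
        show "om * det3 (P a) (P b) (P (Suc w)) > 0"
        proof (cases "w = b")
          case True
          have "om * det3 (P (Suc b - 1)) (P (Suc b)) (P a) > 0" using S[of "Suc b" a] ab w True by auto
          moreover have "det3 (P a) (P b) (P (Suc b)) = det3 (P b) (P (Suc b)) (P a)" using det3_cyc by metis
          ultimately show ?thesis using True by simp
        next
          case False
          hence wb: "b < w" using w by simp
          show ?thesis
          proof (cases "b = a + 1")
            case True
            then show ?thesis using S[of "a+1" "Suc w"] ab w by auto
          next
            case False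
            have IH: "om * det3 (P a) (P b) (P w) > 0" using Suc.IH wb w by auto
            have e1: "om * det3 (P a) (P (a+1)) (P w) > 0" using S[of "a+1" w] ab w wb by auto
            have e2: "om * det3 (P a) (P (a+1)) (P b) > 0" using S[of "a+1" b] ab w wb False by auto
            have e3: "om * det3 (P a) (P (a+1)) (P (Suc w)) > 0" using S[of "a+1" "Suc w"] ab w wb by auto
            have e4': "om * det3 (P (Suc w - 1)) (P (Suc w)) (P a) > 0" using S[of "Suc w" a] ab w wb by auto
            have e4: "om * det3 (P a) (P w) (P (Suc w)) > 0" using e4' det3_cyc by (metis diff_Suc_1)
            have pl: "det3 (P a) (P (a+1)) (P w) * det3 (P a) (P b) (P (Suc w)) =
               det3 (P a) (P (a+1)) (P b) * det3 (P a) (P w) (P (Suc w)) + det3 (P a) (P (a+1)) (P (Suc w)) * det3 (P a) (P b) (P w)"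
              by (rule plucker)
            have "(om * det3 (P a) (P (a+1)) (P w)) * (om * det3 (P a) (P b) (P (Suc w))) =
               (om * det3 (P a) (P (a+1)) (P b)) * (om * det3 (P a) (P w) (P (Suc w))) + (om * det3 (P a) (P (a+1)) (P (Suc w))) * (om * det3 (P a) (P b) (P w))"
              using pl om_props(2) by (simp add: algebra_simps)
            moreover have "(om * det3 (P a) (P (a+1)) (P b)) * (om * det3 (P a) (P w) (P (Suc w))) + (om * det3 (P a) (P (a+1)) (P (Suc w))) * (om * det3 (P a) (P b) (P w)) > 0"
              using e2 e4 e3 IH by (simp add: add_pos_pos)
            ultimately have "(om * det3 (P a) (P (a+1)) (P w)) * (om * det3 (P a) (P b) (P (Suc w))) > 0" by simp
            thus ?thesis using e1 by (rule zero_less_mult_pos)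
          qed
        qed
      qed
    qed
  qed
  thus "b < w \<Longrightarrow> w \<le> N \<Longrightarrow> om * det3 (P a) (P b) (P w) > 0" by blast
qed

end

locale gconf = gconf0 +
  assumes orient: "1 \<le> x \<Longrightarrow> x < y \<Longrightarrow> y < z \<Longrightarrow> z \<le> N \<Longrightarrow> det3 (P x) (P y) (P z) > 0"

lemma (in gconf0) flip: "\<exists>P' L' A'. gconf N c P' L' A'"
proof (cases "om = 1")
  case True
  have "gconf N c P L A"
  proof (unfold_locales)
    fix x y z :: nat assume "1 \<le> x" "x < y" "y < z" "z \<le> N"
    then show "det3 (P x) (P y) (P z) > 0" using Gen True by fastforce
  qed
  then show ?thesis by blast
next
  case False
  hence om: "om = -1" using om_props(1) by blast
  have "gconf N c (\<lambda>i. - P i) (\<lambda>i. - L i) (\<lambda>i. - A i)"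
  proof (unfold_locales)
    show "N \<ge> 3" using N3 .
  next
    fix i assume "i \<in> {1..N}" then show "- L i \<bullet> - P (cprev N i) = 0" using inc1 by simp
  next
    fix i assume "i \<in> {1..N}" then show "- L i \<bullet> - P i = 0" using inc2 by simp
  next
    fix i j assume "i \<in> {1..N}" "j \<in> {1..N}" "j \<noteq> cprev N i" "j \<noteq> i"
    then show "- L i \<bullet> - P j > 0" using pos by simp
  next
    fix i assume i: "i \<in> {1..N}"
    obtain s t where "s > 0" "t > 0" "A i = s *\<^sub>R P (cprev N i) + t *\<^sub>R P i" using Acomb[OF i] by blast
    then show "\<exists>s t. s > 0 \<and> t > 0 \<and> - A i = s *\<^sub>R - P (cprev N i) + t *\<^sub>R - P i"
      by (intro exI[of _ s] exI[of _ t]) (simp add: algebra_simps)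
  next
    fix i assume i: "i \<in> {1..N}"
    obtain e where "e \<noteq> 0" "ln c i = e *\<^sub>R L i" using Lsc[OF i] by blast
    then show "\<exists>e. e \<noteq> 0 \<and> ln c i = e *\<^sub>R - L i" by (intro exI[of _ "-e"]) simp
  next
    fix i assume i: "i \<in> {1..N}"
    obtain r where "r \<noteq> 0" "pt c i = r *\<^sub>R A i" using Asc[OF i] by blast
    then show "\<exists>r. r \<noteq> 0 \<and> pt c i = r *\<^sub>R - A i" by (intro exI[of _ "-r"]) simp
  next
    fix x y z :: nat assume "1 \<le> x" "x < y" "y < z" "z \<le> N"
    hence "om * det3 (P x) (P y) (P z) > 0" using Gen by blast
    then show "det3 (- P x) (- P y) (- P z) > 0" using om by (simp add: det3_exp algebra_simps)
  qed
  then show ?thesis by blast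
qed

context gconf begin

lemma cycP: "x \<in> {1..N} \<Longrightarrow> y \<in> {1..N} \<Longrightarrow> z \<in> {1..N} \<Longrightarrow> cyc3 x y z \<Longrightarrow> det3 (P x) (P y) (P z) > 0"
  unfolding cyc3_def using orient det3_cyc by (metis atLeastAtMost_iff)

lemma weakP: "a \<in> {1..N} \<Longrightarrow> b \<in> {1..N} \<Longrightarrow> c' \<in> {1..N} \<Longrightarrow> (a \<le> b \<and> b \<le> c') \<or> (a = N \<and> b \<le> c') \<Longrightarrow>
   det3 (P a) (P b) (P c') \<ge> 0"
proof -
  assume r: "a \<in> {1..N}" "b \<in> {1..N}" "c' \<in> {1..N}" and o: "(a \<le> b \<and> b \<le> c') \<or> (a = N \<and> b \<le> c')"
  show ?thesis
  proof (cases "a = b \<or> b = c' \<or> a = c'")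
    case True then show ?thesis using det3_rep by auto
  next
    case False
    hence "cyc3 a b c'" using o r unfolding cyc3_def by auto
    then show ?thesis using cycP r by (simp add: less_imp_le)
  qed
qed

lemma LA_pos: "i \<in> {1..N} \<Longrightarrow> j \<in> {1..N} \<Longrightarrow> i \<noteq> j \<Longrightarrow> L i \<bullet> A j > 0"
proof -
  assume i: "i \<in> {1..N}" and j: "j \<in> {1..N}" and ij: "i \<noteq> j"
  obtain s t where st: "s > 0" "t > 0" "A j = s *\<^sub>R P (cprev N j) + t *\<^sub>R P j" using Acomb[OF j] by blast
  have cj: "cprev N j \<in> {1..N}" using cprev_range j N3 by auto
  have n1: "L i \<bullet> P (cprev N j) \<ge> 0" "L i \<bullet> P j \<ge> 0" using LP_nonneg i j cj by auto
  have "L i \<bullet> P (cprev N j) > 0 \<or> L i \<bullet> P j > 0"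
  proof (cases "j = cprev N i")
    case True
    have "cprev N j \<noteq> cprev N i" "cprev N j \<noteq> i" using True i N3 ij unfolding cprev_def by auto
    then show ?thesis using pos[OF i cj] by auto
  next
    case False
    then show ?thesis using pos[OF i j] ij by auto
  qed
  then show ?thesis using st n1 by (auto simp: inner_add_right intro: add_pos_nonneg add_nonneg_pos)
qed

lemma LA_zero: "i \<in> {1..N} \<Longrightarrow> L i \<bullet> A i = 0"
proof -
  assume i: "i \<in> {1..N}"
  obtain s t where st: "A i = s *\<^sub>R P (cprev N i) + t *\<^sub>R P i" using Acomb[OF i] by blast
  show ?thesis using inc1[OF i] inc2[OF i] by (simp add: st inner_add_right)
qed

lemma Adet: "1 \<le> x \<Longrightarrow> x < y \<Longrightarrow> y < z \<Longrightarrow> z \<le> N \<Longrightarrow> det3 (A x) (A y) (A z) > 0"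
proof -
  assume o: "1 \<le> x" "x < y" "y < z" "z \<le> N"
  have r: "x \<in> {1..N}" "y \<in> {1..N}" "z \<in> {1..N}" using o by auto
  obtain s1 t1 where 1: "s1 > 0" "t1 > 0" "A x = s1 *\<^sub>R P (cprev N x) + t1 *\<^sub>R P x" using Acomb r by blast
  obtain s2 t2 where 2: "s2 > 0" "t2 > 0" "A y = s2 *\<^sub>R P (cprev N y) + t2 *\<^sub>R P y" using Acomb r by blast
  obtain s3 t3 where 3: "s3 > 0" "t3 > 0" "A z = s3 *\<^sub>R P (cprev N z) + t3 *\<^sub>R P z" using Acomb r by blast
  define x' where "x' = cprev N x"
  have y': "cprev N y = y - 1" "cprev N z = z - 1" using o by (auto simp: cprev_def)
  have rx': "x' \<in> {1..N}" using cprev_range r N3 unfolding x'_def by auto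
  have ox: "x' = N \<or> x' = x - 1" unfolding x'_def cprev_def by auto
  have W: "\<And>a b c'. a \<in> {x', x} \<Longrightarrow> b \<in> {y - 1, y} \<Longrightarrow> c' \<in> {z - 1, z} \<Longrightarrow> det3 (P a) (P b) (P c') \<ge> 0"
  proof -
    fix a b c' assume m: "a \<in> {x', x}" "b \<in> {y - 1, y}" "c' \<in> {z - 1, z}"
    have ra: "a \<in> {1..N}" "b \<in> {1..N}" "c' \<in> {1..N}" using m r rx' o by auto
    have "(a \<le> b \<and> b \<le> c') \<or> (a = N \<and> b \<le> c')" using m ox o by auto
    then show "det3 (P a) (P b) (P c') \<ge> 0" using weakP ra by blast
  qed
  have eq: "det3 (A x) (A y) (A z) =
     s1 * s2 * s3 * det3 (P x') (P (y - 1)) (P (z - 1)) + s1 * s2 * t3 * det3 (P x') (P (y - 1)) (P z) +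
     s1 * t2 * s3 * det3 (P x') (P y) (P (z - 1)) + s1 * t2 * t3 * det3 (P x') (P y) (P z) +
     t1 * s2 * s3 * det3 (P x) (P (y - 1)) (P (z - 1)) + t1 * s2 * t3 * det3 (P x) (P (y - 1)) (P z) +
     t1 * t2 * s3 * det3 (P x) (P y) (P (z - 1)) + t1 * t2 * t3 * det3 (P x) (P y) (P z)"
    unfolding 1(3) 2(3) 3(3) y' x'_def[symmetric] by (simp add: det3_lin1 det3_lin2 det3_lin3 algebra_simps)
  have pos8: "t1 * t2 * t3 * det3 (P x) (P y) (P z) > 0" using 1 2 3 orient[OF o] by simp
  have h4: "\<And>a b c d. (a::real) > 0 \<Longrightarrow> b > 0 \<Longrightarrow> c > 0 \<Longrightarrow> d \<ge> 0 \<Longrightarrow> a * b * c * d \<ge> 0" by simp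
  have nn0: "s1 * s2 * s3 * det3 (P x') (P (y - 1)) (P (z - 1)) \<ge> 0"
    by (rule h4) (use 1 2 3 W[of "x'" "y - 1" "z - 1"] in auto)
  have nn1: "s1 * s2 * t3 * det3 (P x') (P (y - 1)) (P z) \<ge> 0"
    by (rule h4) (use 1 2 3 W[of "x'" "y - 1" "z"] in auto)
  have nn2: "s1 * t2 * s3 * det3 (P x') (P y) (P (z - 1)) \<ge> 0"
    by (rule h4) (use 1 2 3 W[of "x'" "y" "z - 1"] in auto)
  have nn3: "s1 * t2 * t3 * det3 (P x') (P y) (P z) \<ge> 0"
    by (rule h4) (use 1 2 3 W[of "x'" "y" "z"] in auto)
  have nn4: "t1 * s2 * s3 * det3 (P x) (P (y - 1)) (P (z - 1)) \<ge> 0"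
    by (rule h4) (use 1 2 3 W[of "x" "y - 1" "z - 1"] in auto)
  have nn5: "t1 * s2 * t3 * det3 (P x) (P (y - 1)) (P z) \<ge> 0"
    by (rule h4) (use 1 2 3 W[of "x" "y - 1" "z"] in auto)
  have nn6: "t1 * t2 * s3 * det3 (P x) (P y) (P (z - 1)) \<ge> 0"
    by (rule h4) (use 1 2 3 W[of "x" "y" "z - 1"] in auto)
  show ?thesis unfolding eq using pos8 nn0 nn1 nn2 nn3 nn4 nn5 nn6 by linarith
qed

end

definition Wc :: "nat \<Rightarrow> config \<Rightarrow> bool" where
  "Wc N c = (\<exists>A L. (\<forall>i\<in>{1..N}. (\<exists>r. r \<noteq> 0 \<and> pt c i = r *\<^sub>R A i) \<and> (\<exists>e. e \<noteq> 0 \<and> ln c i = e *\<^sub>R L i) \<and>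
      L i \<bullet> A i = 0 \<and> (\<forall>j\<in>{1..N}. j \<noteq> i \<longrightarrow> L i \<bullet> A j > 0)) \<and>
      (\<forall>x y z. 1 \<le> x \<and> x < y \<and> y < z \<and> z \<le> N \<longrightarrow> det3 (A x) (A y) (A z) > 0))"

lemma (in gconf) Wc: "Wc N c"
proof -
  have 1: "\<forall>i\<in>{1..N}. (\<exists>r. r \<noteq> 0 \<and> pt c i = r *\<^sub>R A i) \<and> (\<exists>e. e \<noteq> 0 \<and> ln c i = e *\<^sub>R L i) \<and>
      L i \<bullet> A i = 0 \<and> (\<forall>j\<in>{1..N}. j \<noteq> i \<longrightarrow> L i \<bullet> A j > 0)"
  proof
    fix i assume i: "i \<in> {1..N}"
    show "(\<exists>r. r \<noteq> 0 \<and> pt c i = r *\<^sub>R A i) \<and> (\<exists>e. e \<noteq> 0 \<and> ln c i = e *\<^sub>R L i) \<and>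
      L i \<bullet> A i = 0 \<and> (\<forall>j\<in>{1..N}. j \<noteq> i \<longrightarrow> L i \<bullet> A j > 0)"
      using Asc[OF i] Lsc[OF i] LA_zero[OF i] LA_pos[OF i] by blast
  qed
  have 2: "\<forall>x y z. 1 \<le> x \<and> x < y \<and> y < z \<and> z \<le> N \<longrightarrow> det3 (A x) (A y) (A z) > 0"
    using Adet by blast
  show ?thesis unfolding Wc_def using 1 2 by blast
qed

lemma pconf_gconf0:
  assumes N: "N \<ge> 3" and c: "c \<in> Pconf N"
  shows "\<exists>P L A. gconf0 N c P L A"
proof -
  have "\<exists>h P. (\<forall>i\<in>{1..N}. h \<bullet> P i = 1) \<and>
      (\<forall>i\<in>{1..N}.
          ln c i \<bullet> P (cprev N i) = 0 \<and> ln c i \<bullet> P i = 0 \<and>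
          ((\<forall>j\<in>{1..N} - {cprev N i, i}. ln c i \<bullet> P j > 0) \<or>
           (\<forall>j\<in>{1..N} - {cprev N i, i}. ln c i \<bullet> P j < 0)) \<and>
          (\<exists>s t r. r \<noteq> 0 \<and> s > 0 \<and> t > 0 \<and>
              r *\<^sub>R pt c i = s *\<^sub>R P (cprev N i) + t *\<^sub>R P i))"
    using c unfolding Pconf_def mem_Collect_eq .
  then obtain h P where
    cond: "\<forall>i\<in>{1..N}. ln c i \<bullet> P (cprev N i) = 0 \<and> ln c i \<bullet> P i = 0 \<and>
          ((\<forall>j\<in>{1..N} - {cprev N i, i}. ln c i \<bullet> P j > 0) \<or> (\<forall>j\<in>{1..N} - {cprev N i, i}. ln c i \<bullet> P j < 0)) \<and>
          (\<exists>s t r. r \<noteq> 0 \<and> s > 0 \<and> t > 0 \<and> r *\<^sub>R pt c i = s *\<^sub>R P (cprev N i) + t *\<^sub>R P i)"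
    by (elim exE conjE)
  define eps where "eps i = (if (\<forall>j\<in>{1..N} - {cprev N i, i}. ln c i \<bullet> P j > 0) then (1::real) else -1)" for i
  define L where "L i = eps i *\<^sub>R ln c i" for i
  define A where "A i = (SOME X. \<exists>s t r. r \<noteq> 0 \<and> s > 0 \<and> t > 0 \<and> X = s *\<^sub>R P (cprev N i) + t *\<^sub>R P i \<and> r *\<^sub>R pt c i = X)" for i
  have Ap: "\<exists>s t r. r \<noteq> 0 \<and> s > 0 \<and> t > 0 \<and> A i = s *\<^sub>R P (cprev N i) + t *\<^sub>R P i \<and> r *\<^sub>R pt c i = A i"
    if i: "i \<in> {1..N}" for i
  proof -
    define Q where "Q X = (\<exists>s t r. r \<noteq> 0 \<and> s > 0 \<and> t > 0 \<and> X = s *\<^sub>R P (cprev N i) + t *\<^sub>R P i \<and> r *\<^sub>R pt c i = X)" for X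
    obtain s t r where str: "r \<noteq> 0" "s > 0" "t > 0" "r *\<^sub>R pt c i = s *\<^sub>R P (cprev N i) + t *\<^sub>R P i"
      using cond i by blast
    have "Q (s *\<^sub>R P (cprev N i) + t *\<^sub>R P i)" unfolding Q_def using str by blast
    hence "Q (SOME X. Q X)" by (rule someI)
    moreover have "A i = (SOME X. Q X)" unfolding A_def Q_def by simp
    ultimately show ?thesis unfolding Q_def by simp
  qed
  have eps: "eps i = 1 \<or> eps i = -1" for i unfolding eps_def by auto
  have "gconf0 N c P L A"
  proof (unfold_locales)
    show "N \<ge> 3" using N .
  next
    fix i assume "i \<in> {1..N}" then show "L i \<bullet> P (cprev N i) = 0" using cond unfolding L_def by simp
  next
    fix i assume "i \<in> {1..N}" then show "L i \<bullet> P i = 0" using cond unfolding L_def by simp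
  next
    fix i j assume i: "i \<in> {1..N}" and j: "j \<in> {1..N}" "j \<noteq> cprev N i" "j \<noteq> i"
    have jj: "j \<in> {1..N} - {cprev N i, i}" using j by auto
    show "L i \<bullet> P j > 0"
    proof (cases "\<forall>j\<in>{1..N} - {cprev N i, i}. ln c i \<bullet> P j > 0")
      case True then show ?thesis using jj unfolding L_def eps_def by simp
    next
      case False
      hence "\<forall>j\<in>{1..N} - {cprev N i, i}. ln c i \<bullet> P j < 0" using cond i by blast
      then show ?thesis using jj False unfolding L_def eps_def by simp
    qed
  next
    fix i assume i: "i \<in> {1..N}"
    then show "\<exists>s t. s > 0 \<and> t > 0 \<and> A i = s *\<^sub>R P (cprev N i) + t *\<^sub>R P i" using Ap by blast
  next
    fix i assume i: "i \<in> {1..N}"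
    have "ln c i = eps i *\<^sub>R L i" unfolding L_def using eps[of i] by auto
    then show "\<exists>e. e \<noteq> 0 \<and> ln c i = e *\<^sub>R L i" using eps[of i] by (intro exI[of _ "eps i"]) auto
  next
    fix i assume i: "i \<in> {1..N}"
    obtain r where r: "r \<noteq> 0" "r *\<^sub>R pt c i = A i" using Ap[OF i] by blast
    have "pt c i = (1 / r) *\<^sub>R (r *\<^sub>R pt c i)" using r(1) by simp
    hence "pt c i = (1 / r) *\<^sub>R A i" using r(2) by simp
    then show "\<exists>r. r \<noteq> 0 \<and> pt c i = r *\<^sub>R A i" using r by (intro exI[of _ "1 / r"]) auto
  qed
  then show ?thesis by blast
qed

lemma (in gconf0) to_pconf: "c \<in> Pconf N"
proof -
  define h where "h = (\<Sum>i\<in>{1..N}. L i)"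
  have hp: "h \<bullet> P j > 0" if j: "j \<in> {1..N}" for j
  proof -
    have "h \<bullet> P j = (\<Sum>i\<in>{1..N}. L i \<bullet> P j)" unfolding h_def by (simp add: inner_sum_left)
    moreover obtain m where m: "m \<in> {1..N}" "j \<noteq> cprev N m" "j \<noteq> m" using wit[OF j] by blast
    have "(\<Sum>i\<in>{1..N}. L i \<bullet> P j) > 0"
      by (rule sum_pos2[of _ m]) (use m pos[OF m(1) j m(2) m(3)] LP_nonneg j in auto)
    ultimately show ?thesis by simp
  qed
  define P' where "P' j = (1 / (h \<bullet> P j)) *\<^sub>R P j" for j
  have hP': "h \<bullet> P' j = 1" if "j \<in> {1..N}" for j using hp[OF that] unfolding P'_def by simp
  have LP': "L i \<bullet> P' j = (L i \<bullet> P j) / (h \<bullet> P j)" for i j unfolding P'_def by simp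
  show ?thesis unfolding Pconf_def
  proof (intro CollectI exI[of _ h] exI[of _ P'] conjI ballI)
    fix i assume "i \<in> {1..N}" then show "h \<bullet> P' i = 1" using hP' by blast
  next
    fix i assume i: "i \<in> {1..N}"
    obtain e where e: "e \<noteq> 0" "ln c i = e *\<^sub>R L i" using Lsc[OF i] by blast
    have ci: "cprev N i \<in> {1..N}" using cprev_range i N3 by auto
    show "ln c i \<bullet> P' (cprev N i) = 0" using inc1[OF i] e unfolding P'_def by simp
    show "ln c i \<bullet> P' i = 0" using inc2[OF i] e unfolding P'_def by simp
    have pj: "\<And>j. j \<in> {1..N} - {cprev N i, i} \<Longrightarrow> (L i \<bullet> P j) / (h \<bullet> P j) > 0"
      using pos[OF i] hp by auto
    have eqj: "\<And>j. ln c i \<bullet> P' j = e * ((L i \<bullet> P j) / (h \<bullet> P j))" using e(2) LP' by simp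
    show "(\<forall>j\<in>{1..N} - {cprev N i, i}. ln c i \<bullet> P' j > 0) \<or> (\<forall>j\<in>{1..N} - {cprev N i, i}. ln c i \<bullet> P' j < 0)"
    proof (cases "e > 0")
      case True
      have "\<forall>j\<in>{1..N} - {cprev N i, i}. ln c i \<bullet> P' j > 0"
      proof
        fix j assume jj: "j \<in> {1..N} - {cprev N i, i}"
        show "ln c i \<bullet> P' j > 0" unfolding eqj by (rule mult_pos_pos[OF True pj[OF jj]])
      qed
      then show ?thesis by blast
    next
      case False
      hence "e < 0" using e(1) by simp
      hence en: "e < 0" .
      have "\<forall>j\<in>{1..N} - {cprev N i, i}. ln c i \<bullet> P' j < 0"
      proof
        fix j assume jj: "j \<in> {1..N} - {cprev N i, i}"
        show "ln c i \<bullet> P' j < 0" unfolding eqj by (rule mult_neg_pos[OF en pj[OF jj]])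
      qed
      then show ?thesis by blast
    qed
    obtain s t where st: "s > 0" "t > 0" "A i = s *\<^sub>R P (cprev N i) + t *\<^sub>R P i" using Acomb[OF i] by blast
    obtain r where r: "r \<noteq> 0" "pt c i = r *\<^sub>R A i" using Asc[OF i] by blast
    define hc where "hc = h \<bullet> P (cprev N i)"
    define hi where "hi = h \<bullet> P i"
    have hcp: "hc > 0" "hi > 0" using hp[OF ci] hp[OF i] unfolding hc_def hi_def by auto
    have e1: "P (cprev N i) = hc *\<^sub>R P' (cprev N i)" using hcp unfolding P'_def hc_def by simp
    have e2: "P i = hi *\<^sub>R P' i" using hcp unfolding P'_def hi_def by simp
    have "(1 / r) *\<^sub>R pt c i = A i" using r by simp
    also have "\<dots> = s *\<^sub>R P (cprev N i) + t *\<^sub>R P i" by (rule st(3))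
    also have "\<dots> = (s * hc) *\<^sub>R P' (cprev N i) + (t * hi) *\<^sub>R P' i" by (subst e1, subst e2) simp
    finally have eqv: "(1 / r) *\<^sub>R pt c i = (s * hc) *\<^sub>R P' (cprev N i) + (t * hi) *\<^sub>R P' i" .
    have pp: "1 / r \<noteq> 0" "s * hc > 0" "t * hi > 0" using r(1) st hcp by auto
    show "\<exists>s t r. r \<noteq> 0 \<and> s > 0 \<and> t > 0 \<and> r *\<^sub>R pt c i = s *\<^sub>R P' (cprev N i) + t *\<^sub>R P' i"
      using pp eqv by blast
  qed
qed

lemma pconf_gconf: assumes "N \<ge> 3" "c \<in> Pconf N" shows "\<exists>P L A. gconf N c P L A"
proof -
  obtain P L A where "gconf0 N c P L A" using pconf_gconf0[OF assms] by blast
  thus ?thesis by (rule gconf0.flip)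
qed

lemma pconf_Wc: assumes "N \<ge> 3" "c \<in> Pconf N" shows "Wc N c"
proof -
  obtain P L A where "gconf N c P L A" using pconf_gconf[OF assms] by blast
  thus ?thesis by (rule gconf.Wc)
qed

definition labs :: "nat \<Rightarrow> (nat \<times> nat) set \<Rightarrow> coord_index \<Rightarrow> nat set" where
  "labs n D x = (case x of Tri i j k \<Rightarrow> {i,j,k} | Dg p q \<Rightarrow> {p, q, opp_vertex n D p q, opp_vertex n D q p})"

lemma join_scale: "join (r *\<^sub>R A) (s *\<^sub>R B) = (r * s) *\<^sub>R join A B"
  by (simp add: vec3_eq c3 algebra_simps)

lemma div_cancel_K: "(K::real) \<noteq> 0 \<Longrightarrow> x' = K * x \<Longrightarrow> y' = K * y \<Longrightarrow> x' / y' = x / y"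
  by simp

lemma tr_scale:
  assumes "r1 \<noteq> 0" "r2 \<noteq> 0" "r3 \<noteq> 0" "e1 \<noteq> 0" "e2 \<noteq> 0" "e3 \<noteq> 0"
  shows "triple_ratio (r1 *\<^sub>R A) (e1 *\<^sub>R a) (r2 *\<^sub>R B) (e2 *\<^sub>R b) (r3 *\<^sub>R C) (e3 *\<^sub>R cc) = triple_ratio A a B b C cc"
  unfolding triple_ratio_def
  by (rule div_cancel_K[of "e1 * e2 * e3 * r1 * r2 * r3"]) (use assms in \<open>simp_all add: algebra_simps\<close>)

lemma cr_scale:
  assumes "r \<noteq> 0" "e1 \<noteq> 0" "e2 \<noteq> 0" "e3 \<noteq> 0" "e4 \<noteq> 0"
  shows "cross_ratio_lines (r *\<^sub>R X) (e1 *\<^sub>R x1) (e2 *\<^sub>R x2) (e3 *\<^sub>R x3) (e4 *\<^sub>R x4) = cross_ratio_lines X x1 x2 x3 x4"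
  unfolding cross_ratio_lines_def
  by (rule div_cancel_K[of "e1 * e2 * e3 * e4 * r * r"]) (use assms in \<open>simp_all add: det3_scale algebra_simps\<close>)

lemma coord_rescale:
  assumes sc: "\<forall>i\<in>labs n D x. \<exists>r e. r \<noteq> 0 \<and> e \<noteq> 0 \<and> pt c' i = r *\<^sub>R pt c i \<and> ln c' i = e *\<^sub>R ln c i"
  shows "coord n D c' x = coord n D c x"
proof (cases x)
  case (Tri i j k)
  have l: "i \<in> labs n D x" "j \<in> labs n D x" "k \<in> labs n D x" unfolding labs_def Tri by auto
  obtain r1 e1 where 1: "r1 \<noteq> 0" "e1 \<noteq> 0" "pt c' i = r1 *\<^sub>R pt c i" "ln c' i = e1 *\<^sub>R ln c i" using sc l by blast
  obtain r2 e2 where 2: "r2 \<noteq> 0" "e2 \<noteq> 0" "pt c' j = r2 *\<^sub>R pt c j" "ln c' j = e2 *\<^sub>R ln c j" using sc l by blast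
  obtain r3 e3 where 3: "r3 \<noteq> 0" "e3 \<noteq> 0" "pt c' k = r3 *\<^sub>R pt c k" "ln c' k = e3 *\<^sub>R ln c k" using sc l by blast
  show ?thesis unfolding Tri coord.simps 1(3,4) 2(3,4) 3(3,4) by (rule tr_scale) (use 1 2 3 in auto)
next
  case (Dg p q)
  define k where "k = opp_vertex n D p q"
  define m where "m = opp_vertex n D q p"
  have l: "p \<in> labs n D x" "q \<in> labs n D x" "k \<in> labs n D x" "m \<in> labs n D x" unfolding labs_def Dg k_def m_def by auto
  obtain r1 e1 where 1: "r1 \<noteq> 0" "e1 \<noteq> 0" "pt c' p = r1 *\<^sub>R pt c p" "ln c' p = e1 *\<^sub>R ln c p" using sc l by blast
  obtain r2 e2 where 2: "r2 \<noteq> 0" "pt c' q = r2 *\<^sub>R pt c q" using sc l by blast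
  obtain r3 e3 where 3: "r3 \<noteq> 0" "pt c' k = r3 *\<^sub>R pt c k" using sc l by blast
  obtain r4 e4 where 4: "r4 \<noteq> 0" "pt c' m = r4 *\<^sub>R pt c m" using sc l by blast
  show ?thesis unfolding Dg coord.simps Let_def k_def[symmetric] m_def[symmetric] 1(3,4) 2(2) 3(2) 4(2) join_scale
    by (rule cr_scale) (use 1 2 3 4 in auto)
qed

lemma vmul_cancel: "gi ** g = mat 1 \<Longrightarrow> (l v* gi) \<bullet> (g *v y) = l \<bullet> y" for g gi :: "real^3^3" and l y :: "real^3"
  by (simp add: inner_vmul matrix_vector_mul_assoc)

lemma det_inv_nz: "g ** gi = mat 1 \<Longrightarrow> det g \<noteq> 0" for g gi :: "real^3^3"
  using det_mul[of g gi] by (auto simp: det_I)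

lemma coord_act:
  fixes g gi :: "real^3^3"
  assumes ginv: "g ** gi = mat 1" "gi ** g = mat 1"
    and tr: "\<forall>i\<in>labs n D x. pt c' i = g *v pt c i \<and> ln c' i = ln c i v* gi"
    and nd: "\<And>p q. x = Dg p q \<Longrightarrow> ln c p \<bullet> pt c p = 0 \<and> pt c p \<noteq> 0"
  shows "coord n D c' x = coord n D c x"
proof (cases x)
  case (Tri i j k)
  have l: "i \<in> labs n D x" "j \<in> labs n D x" "k \<in> labs n D x" unfolding labs_def Tri by auto
  show ?thesis unfolding Tri coord.simps triple_ratio_def using tr l vmul_cancel[OF ginv(2)] by simp
next
  case (Dg p q)
  define k where "k = opp_vertex n D p q"
  define m where "m = opp_vertex n D q p"
  have l: "p \<in> labs n D x" "q \<in> labs n D x" "k \<in> labs n D x" "m \<in> labs n D x" unfolding labs_def Dg k_def m_def by auto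
  have t: "pt c' p = g *v pt c p" "ln c' p = ln c p v* gi" "pt c' q = g *v pt c q" "pt c' k = g *v pt c k" "pt c' m = g *v pt c m"
    using tr l by auto
  have n1: "ln c p \<bullet> pt c p = 0" "pt c p \<noteq> 0" using nd Dg by auto
  have n2: "ln c' p \<bullet> pt c' p = 0" using n1 t vmul_cancel[OF ginv(2)] by simp
  have n3: "pt c' p \<noteq> 0"
  proof
    assume "pt c' p = 0"
    hence "gi *v (g *v pt c p) = 0" using t by simp
    thus False using n1 ginv(2) by (simp add: matrix_vector_mul_assoc)
  qed
  have dg: "det g \<noteq> 0" using det_inv_nz[OF ginv(1)] .
  have "coord n D c' x = ((ln c' p \<bullet> pt c' k) * det3 (pt c' p) (pt c' q) (pt c' m)) / ((ln c' p \<bullet> pt c' m) * det3 (pt c' p) (pt c' k) (pt c' q))"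
    unfolding Dg coord.simps Let_def k_def[symmetric] m_def[symmetric] by (rule cr_formula[OF n2 n3])
  also have "\<dots> = ((ln c p \<bullet> pt c k) * det3 (pt c p) (pt c q) (pt c m)) / ((ln c p \<bullet> pt c m) * det3 (pt c p) (pt c k) (pt c q))"
    unfolding t det3_mat vmul_cancel[OF ginv(2)] by (rule div_cancel_K[of "det g"]) (use dg in auto)
  also have "\<dots> = coord n D c x"
    unfolding Dg coord.simps Let_def k_def[symmetric] m_def[symmetric] by (rule cr_formula[OF n1, symmetric])
  finally show ?thesis .
qed

lemma cbetw_cyc: "cbetw p r q \<Longrightarrow> cyc3 p r q" unfolding cbetw_def cyc3_def by auto
lemma cyc_rot: "cyc3 x y z \<Longrightarrow> cyc3 y z x" unfolding cyc3_def by auto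

lemma labs_range:
  assumes N: "N \<ge> 3" and tri: "poly_triangulation N D" and x: "x \<in> Iset N D"
  shows "labs N D x \<subseteq> {1..N}"
proof -
  consider (T) i j k where "x = Tri i j k" "is_tri N D i j k"
    | (Dg) p q where "x = Dg p q" "(p,q) \<in> D \<or> (q,p) \<in> D"
    using x unfolding Iset_def by blast
  then show ?thesis
  proof cases
    case T then show ?thesis unfolding labs_def is_tri_def by auto
  next
    case Dg
    have o1: "OV N D p (opp_vertex N D p q) q" using opp_OV[OF N tri] Dg by blast
    have o2: "OV N D q (opp_vertex N D q p) p" using opp_OV[OF N tri] Dg by blast
    show ?thesis using tri_sets_D[of p _ q N D] tri_sets_D[of q _ p N D] o1 o2 unfolding labs_def Dg OV_def by auto
  qed
qed

locale wcd =
  fixes N :: nat and c :: config and A L :: "nat \<Rightarrow> real^3"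
  assumes N3: "N \<ge> 3"
    and Asc: "i \<in> {1..N} \<Longrightarrow> \<exists>r. r \<noteq> 0 \<and> pt c i = r *\<^sub>R A i"
    and Lsc: "i \<in> {1..N} \<Longrightarrow> \<exists>e. e \<noteq> 0 \<and> ln c i = e *\<^sub>R L i"
    and LA0: "i \<in> {1..N} \<Longrightarrow> L i \<bullet> A i = 0"
    and LA: "i \<in> {1..N} \<Longrightarrow> j \<in> {1..N} \<Longrightarrow> j \<noteq> i \<Longrightarrow> L i \<bullet> A j > 0"
    and Ad: "1 \<le> x \<Longrightarrow> x < y \<Longrightarrow> y < z \<Longrightarrow> z \<le> N \<Longrightarrow> det3 (A x) (A y) (A z) > 0"

lemma Wc_wcd: assumes N: "N \<ge> 3" and W: "Wc N c" shows "\<exists>A L. wcd N c A L"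
proof -
  from W obtain A L where H1: "\<forall>i\<in>{1..N}. (\<exists>r. r \<noteq> 0 \<and> pt c i = r *\<^sub>R A i) \<and> (\<exists>e. e \<noteq> 0 \<and> ln c i = e *\<^sub>R L i) \<and>
      L i \<bullet> A i = 0 \<and> (\<forall>j\<in>{1..N}. j \<noteq> i \<longrightarrow> L i \<bullet> A j > 0)"
    and H2: "\<forall>x y z. 1 \<le> x \<and> x < y \<and> y < z \<and> z \<le> N \<longrightarrow> det3 (A x) (A y) (A z) > 0"
    unfolding Wc_def by blast
  have "wcd N c A L"
  proof
    show "N \<ge> 3" by (rule N)
  next
    fix i assume i: "i \<in> {1..N}" show "\<exists>r. r \<noteq> 0 \<and> pt c i = r *\<^sub>R A i" using H1 i by blast
  next
    fix i assume i: "i \<in> {1..N}" show "\<exists>e. e \<noteq> 0 \<and> ln c i = e *\<^sub>R L i" using H1 i by blast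
  next
    fix i assume i: "i \<in> {1..N}" show "L i \<bullet> A i = 0" using H1 i by blast
  next
    fix i j assume i: "i \<in> {1..N}" "j \<in> {1..N}" "j \<noteq> i" show "L i \<bullet> A j > 0" using H1 i by blast
  next
    fix x y z :: nat assume "1 \<le> x" "x < y" "y < z" "z \<le> N" then show "det3 (A x) (A y) (A z) > 0" using H2 by blast
  qed
  thus ?thesis by blast
qed

context wcd begin

lemma cycA: "x \<in> {1..N} \<Longrightarrow> y \<in> {1..N} \<Longrightarrow> z \<in> {1..N} \<Longrightarrow> cyc3 x y z \<Longrightarrow> det3 (A x) (A y) (A z) > 0"
  unfolding cyc3_def using Ad det3_cyc by (metis atLeastAtMost_iff)

lemma Anz: "i \<in> {1..N} \<Longrightarrow> A i \<noteq> 0"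
proof
  assume i: "i \<in> {1..N}" and z: "A i = 0"
  define j where "j = (if i = 1 then 2 else (1::nat))"
  have j: "j \<in> {1..N}" "j \<noteq> i" using N3 i unfolding j_def by auto
  show False using LA[OF j(1) i] j z by simp
qed

lemma nd_pair: "i \<in> {1..N} \<Longrightarrow> j \<in> {1..N} \<Longrightarrow> i \<noteq> j \<Longrightarrow> ln c i \<bullet> pt c j \<noteq> 0"
proof -
  assume i: "i \<in> {1..N}" and j: "j \<in> {1..N}" and ij: "i \<noteq> j"
  obtain r where r: "r \<noteq> 0" "pt c j = r *\<^sub>R A j" using Asc[OF j] by blast
  obtain e where e: "e \<noteq> 0" "ln c i = e *\<^sub>R L i" using Lsc[OF i] by blast
  show ?thesis using LA[OF i j] ij r e by simp
qed

lemma nd_inc: "i \<in> {1..N} \<Longrightarrow> ln c i \<bullet> pt c i = 0 \<and> pt c i \<noteq> 0"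
proof -
  assume i: "i \<in> {1..N}"
  obtain r where r: "r \<noteq> 0" "pt c i = r *\<^sub>R A i" using Asc[OF i] by blast
  obtain e where e: "e \<noteq> 0" "ln c i = e *\<^sub>R L i" using Lsc[OF i] by blast
  show ?thesis using LA0[OF i] Anz[OF i] r e by simp
qed

lemma nd_det: "x \<in> {1..N} \<Longrightarrow> y \<in> {1..N} \<Longrightarrow> z \<in> {1..N} \<Longrightarrow> x \<noteq> y \<Longrightarrow> y \<noteq> z \<Longrightarrow> x \<noteq> z \<Longrightarrow>
  det3 (pt c x) (pt c y) (pt c z) \<noteq> 0"
proof -
  assume r: "x \<in> {1..N}" "y \<in> {1..N}" "z \<in> {1..N}" and d: "x \<noteq> y" "y \<noteq> z" "x \<noteq> z"
  obtain r1 where 1: "r1 \<noteq> 0" "pt c x = r1 *\<^sub>R A x" using Asc r by blast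
  obtain r2 where 2: "r2 \<noteq> 0" "pt c y = r2 *\<^sub>R A y" using Asc r by blast
  obtain r3 where 3: "r3 \<noteq> 0" "pt c z = r3 *\<^sub>R A z" using Asc r by blast
  have "cyc3 x y z \<or> cyc3 y x z" using d unfolding cyc3_def by auto
  hence "det3 (A x) (A y) (A z) \<noteq> 0"
  proof
    assume "cyc3 x y z" thus ?thesis using cycA r by fastforce
  next
    assume "cyc3 y x z" hence "det3 (A y) (A x) (A z) > 0" using cycA r by blast
    thus ?thesis using det3_swap12[of "A x" "A y" "A z"] by simp
  qed
  thus ?thesis using 1 2 3 by (simp add: det3_scale)
qed

end

lemma Wc_pos:
  assumes N: "N \<ge> 3" and tri: "poly_triangulation N D" and W: "Wc N c" and x: "x \<in> Iset N D"
  shows "coord N D c x > 0"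
proof -
  obtain A L where w: "wcd N c A L" using Wc_wcd[OF N W] by blast
  interpret wcd N c A L by (rule w)
  define c0 where "c0 = (\<lambda>i. (A i, L i))"
  have lr: "labs N D x \<subseteq> {1..N}" using labs_range[OF N tri x] .
  have "coord N D c x = coord N D c0 x"
  proof (rule coord_rescale, intro ballI)
    fix i assume "i \<in> labs N D x"
    hence i: "i \<in> {1..N}" using lr by blast
    obtain r where r: "r \<noteq> 0" "pt c i = r *\<^sub>R A i" using Asc[OF i] by blast
    obtain e where e: "e \<noteq> 0" "ln c i = e *\<^sub>R L i" using Lsc[OF i] by blast
    show "\<exists>r e. r \<noteq> 0 \<and> e \<noteq> 0 \<and> pt c i = r *\<^sub>R pt c0 i \<and> ln c i = e *\<^sub>R ln c0 i"
      using r e unfolding c0_def pt_def ln_def by auto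
  qed
  moreover have "coord N D c0 x > 0"
  proof -
    consider (T) i j k where "x = Tri i j k" "is_tri N D i j k"
      | (Dg) p q where "x = Dg p q" "(p,q) \<in> D \<or> (q,p) \<in> D"
      using x unfolding Iset_def by blast
    then show ?thesis
    proof cases
      case T
      have r: "i \<in> {1..N}" "j \<in> {1..N}" "k \<in> {1..N}" "i \<noteq> j" "j \<noteq> k" "i \<noteq> k" using T unfolding is_tri_def by auto
      show ?thesis unfolding T coord.simps triple_ratio_def c0_def pt_def ln_def
        using LA r by (simp add: mult_pos_pos divide_pos_pos)
    next
      case Dg
      define k where "k = opp_vertex N D p q"
      define m where "m = opp_vertex N D q p"
      have o1: "OV N D p k q" using opp_OV[OF N tri] Dg unfolding k_def by blast
      have o2: "OV N D q m p" using opp_OV[OF N tri] Dg unfolding m_def by blast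
      have t1: "p \<in> {1..N}" "k \<in> {1..N}" "q \<in> {1..N}" "p \<noteq> k" "p \<noteq> q" "k \<noteq> q"
        using tri_sets_D[of p k q N D] o1 unfolding OV_def by auto
      have t2: "m \<in> {1..N}" "q \<noteq> m" "m \<noteq> p" using tri_sets_D[of q m p N D] o2 unfolding OV_def by auto
      have c1: "cyc3 p k q" using o1 cbetw_cyc unfolding OV_def by blast
      have c2: "cyc3 p q m" using o2 cbetw_cyc cyc_rot unfolding OV_def by blast
      have d1: "det3 (A p) (A k) (A q) > 0" using cycA t1 c1 by blast
      have d2: "det3 (A p) (A q) (A m) > 0" using cycA t1 t2 c2 by blast
      have f: "coord N D c0 x = ((L p \<bullet> A k) * det3 (A p) (A q) (A m)) / ((L p \<bullet> A m) * det3 (A p) (A k) (A q))"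
        unfolding Dg coord.simps Let_def k_def[symmetric] m_def[symmetric] c0_def pt_def ln_def fst_conv snd_conv
        by (rule cr_formula) (use LA0 Anz t1 in auto)
      show ?thesis unfolding f using LA[of p k] LA[of p m] t1 t2 d1 d2 by (simp add: mult_pos_pos divide_pos_pos)
    qed
  qed
  ultimately show ?thesis by simp
qed

definition relg :: "nat \<Rightarrow> real^3^3 \<Rightarrow> config \<Rightarrow> config \<Rightarrow> bool" where
  "relg n g c1 c2 = (\<forall>i\<in>{1..n}. \<exists>s u. s \<noteq> 0 \<and> u \<noteq> 0 \<and>
            pt c2 i = s *\<^sub>R (g *v pt c1 i) \<and> ln c1 i = u *\<^sub>R (ln c2 i v* g))"

lemma pgl_rel_iff: "(c, c') \<in> pgl_rel n \<longleftrightarrow> c \<in> Pconf n \<and> c' \<in> Pconf n \<and> (\<exists>g. invertible g \<and> relg n g c c')"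
  unfolding pgl_rel_def relg_def by simp

lemma vm_cancel2: "g ** gi = mat 1 \<Longrightarrow> (x v* g) v* gi = x" for g gi :: "real^3^3" and x :: "real^3"
  by (simp add: vector_matrix_mul_assoc)

lemma line_match:
  fixes X Y Z w l :: "real^3"
  assumes d: "det3 X Y Z \<noteq> 0" and wX: "w \<bullet> X = 0" and lX: "l \<bullet> X = 0"
    and nz: "w \<bullet> Y \<noteq> 0" "w \<bullet> Z \<noteq> 0" "l \<bullet> Y \<noteq> 0" "l \<bullet> Z \<noteq> 0"
    and r: "(w \<bullet> Y) / (w \<bullet> Z) = (l \<bullet> Y) / (l \<bullet> Z)"
  shows "\<exists>u. u \<noteq> 0 \<and> l = u *\<^sub>R w"
proof -
  define u where "u = (l \<bullet> Y) / (w \<bullet> Y)"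
  have u0: "u \<noteq> 0" using nz unfolding u_def by simp
  have rz: "l \<bullet> Z = u * (w \<bullet> Z)" using r nz unfolding u_def by (simp add: field_simps)
  have "l - u *\<^sub>R w = 0"
  proof (rule zero_by_cramer[OF d])
    show "X \<bullet> (l - u *\<^sub>R w) = 0" using wX lX by (simp add: inner_diff_right inner_commute)
    show "Y \<bullet> (l - u *\<^sub>R w) = 0" using nz unfolding u_def by (simp add: inner_diff_right inner_commute)
    show "Z \<bullet> (l - u *\<^sub>R w) = 0" using rz by (simp add: inner_diff_right inner_commute)
  qed
  thus ?thesis using u0 by (intro exI[of _ u]) simp
qed

lemma vdet:
  fixes A B M C C' a b cc cc' :: "real^3"
  assumes aA: "a \<bullet> A = 0" and bB: "b \<bullet> B = 0" and aB: "a \<bullet> B \<noteq> 0" and bA: "b \<bullet> A \<noteq> 0"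
    and aM: "a \<bullet> M \<noteq> 0" and bM: "b \<bullet> M \<noteq> 0" and dM: "det3 A B M \<noteq> 0" and dC: "det3 A B C \<noteq> 0"
    and ccC: "cc \<bullet> C = 0" and ccC': "cc' \<bullet> C' = 0"
    and X: "(a \<bullet> C) * det3 A B M / ((a \<bullet> M) * det3 A C B) = (a \<bullet> C') * det3 A B M / ((a \<bullet> M) * det3 A C' B)"
    and Xp: "(a \<bullet> C) * det3 A B M / ((a \<bullet> M) * det3 A C B) > 0"
    and Y: "(b \<bullet> M) * det3 B A C / ((b \<bullet> C) * det3 B M A) = (b \<bullet> M) * det3 B A C' / ((b \<bullet> C') * det3 B M A)"
    and Yp: "(b \<bullet> M) * det3 B A C / ((b \<bullet> C) * det3 B M A) > 0"
    and T: "triple_ratio A a C cc B b = triple_ratio A a C' cc' B b"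
    and Tp: "triple_ratio A a C cc B b > 0"
  shows "(\<exists>l. l \<noteq> 0 \<and> C' = l *\<^sub>R C) \<and> (\<exists>m. m \<noteq> 0 \<and> cc' = m *\<^sub>R cc)"
proof -
  define f where "f Z = det3 A B Z" for Z
  have s1: "det3 A Z B = - f Z" for Z unfolding f_def using det3_swap23 by metis
  have s2: "det3 B A Z = - f Z" for Z unfolding f_def using det3_swap12 by metis
  have Xp': "(a \<bullet> C') * det3 A B M / ((a \<bullet> M) * det3 A C' B) > 0" using X Xp by simp
  have Yp': "(b \<bullet> M) * det3 B A C' / ((b \<bullet> C') * det3 B M A) > 0" using Y Yp by simp
  have n1: "a \<bullet> C \<noteq> 0" "f C \<noteq> 0" using Xp s1 by (auto simp: f_def)
  have n2: "a \<bullet> C' \<noteq> 0" "f C' \<noteq> 0" using Xp' s1[of C'] by auto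
  have n3: "b \<bullet> C \<noteq> 0" using Yp by auto
  have n4: "b \<bullet> C' \<noteq> 0" using Yp' by auto
  have dBMA: "det3 B M A \<noteq> 0" using dM det3_cyc by metis
  define lam where "lam = f C' / f C"
  have lam0: "lam \<noteq> 0" unfolding lam_def using n1 n2 by simp
  have Xe: "(a \<bullet> C) / f C = (a \<bullet> C') / f C'"
  proof -
    have "(a \<bullet> C) * det3 A B M / ((a \<bullet> M) * - f C) = (a \<bullet> C') * det3 A B M / ((a \<bullet> M) * - f C')"
      using X unfolding s1 .
    thus ?thesis using aM dM n1 n2 by (simp add: field_simps)
  qed
  have Ye: "f C / (b \<bullet> C) = f C' / (b \<bullet> C')"
  proof -
    have "(b \<bullet> M) * - f C / ((b \<bullet> C) * det3 B M A) = (b \<bullet> M) * - f C' / ((b \<bullet> C') * det3 B M A)"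
      using Y unfolding s2 .
    thus ?thesis using bM dBMA n3 n4 by (simp add: field_simps)
  qed
  have aC': "a \<bullet> C' = lam * (a \<bullet> C)" using Xe n1 n2 unfolding lam_def by (simp add: field_simps)
  have bC': "b \<bullet> C' = lam * (b \<bullet> C)" using Ye n1 n2 n3 n4 unfolding lam_def by (simp add: field_simps)
  have fC': "f C' = lam * f C" using n1 unfolding lam_def by simp
  have Cl: "C' = lam *\<^sub>R C"
  proof -
    have d0: "det3 a b (join A B) \<noteq> 0" unfolding det3_ann using aA bB aB bA by simp
    have "C' - lam *\<^sub>R C = 0"
    proof (rule zero_by_cramer[OF d0])
      show "a \<bullet> (C' - lam *\<^sub>R C) = 0" using aC' by (simp add: inner_diff_right)
      show "b \<bullet> (C' - lam *\<^sub>R C) = 0" using bC' by (simp add: inner_diff_right)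
      show "join A B \<bullet> (C' - lam *\<^sub>R C) = 0" using fC' unfolding f_def det3_join by (simp add: inner_diff_right)
    qed
    thus ?thesis by simp
  qed
  have Tv: "triple_ratio A a C cc B b = (a \<bullet> C) * (cc \<bullet> B) * (b \<bullet> A) / ((a \<bullet> B) * (cc \<bullet> A) * (b \<bullet> C))"
    unfolding triple_ratio_def by simp
  have Tv': "triple_ratio A a C' cc' B b = (a \<bullet> C) * (cc' \<bullet> B) * (b \<bullet> A) / ((a \<bullet> B) * (cc' \<bullet> A) * (b \<bullet> C))"
    unfolding triple_ratio_def aC' bC' using lam0 by (rule div_cancel_K[of lam]; simp)
  have m1: "cc \<bullet> A \<noteq> 0" "cc \<bullet> B \<noteq> 0" using Tp Tv by auto
  have m2: "cc' \<bullet> A \<noteq> 0" "cc' \<bullet> B \<noteq> 0" using Tp T Tv' by auto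
  have re: "(cc \<bullet> B) / (cc \<bullet> A) = (cc' \<bullet> B) / (cc' \<bullet> A)"
    using T Tv Tv' n1 n3 aB bA m1 m2 by (simp add: field_simps)
  have ccC2: "cc' \<bullet> C = 0" using ccC' Cl lam0 by simp
  have "\<exists>u. u \<noteq> 0 \<and> cc' = u *\<^sub>R cc"
  proof (rule line_match[of C B A])
    show "det3 C B A \<noteq> 0" using dC det3_cyc det3_swap12 by (metis neg_equal_0_iff_equal)
  qed (use ccC ccC2 m1 m2 re in auto)
  thus ?thesis using Cl lam0 by blast
qed

lemma inv_get: "invertible g \<Longrightarrow> \<exists>gi. g ** gi = mat 1 \<and> gi ** g = mat 1" for g :: "real^3^3"
  unfolding invertible_def by blast

lemma scaleR_vmul: "(k *\<^sub>R x) v* g = k *\<^sub>R (x v* g)" for g :: "real^3^3" and x :: "real^3"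
  by (simp add: vec_eq_iff vector_matrix_mult_def sum_distrib_left algebra_simps)

lemma scaleR_mvul: "g *v (k *\<^sub>R x) = k *\<^sub>R (g *v x)" for g :: "real^3^3" and x :: "real^3"
  by (simp add: vec_eq_iff matrix_vector_mult_def sum_distrib_left algebra_simps)

lemma phi_inv:
  assumes N: "N \<ge> 3" and tri: "poly_triangulation N D" and W: "Wc N c1" and g: "invertible g"
    and rel: "relg N g c1 c2" and x: "x \<in> Iset N D"
  shows "coord N D c2 x = coord N D c1 x"
proof -
  obtain gi where gi: "g ** gi = mat 1" "gi ** g = mat 1" using inv_get[OF g] by blast
  obtain A L where w: "wcd N c1 A L" using Wc_wcd[OF N W] by blast
  define c3 where "c3 = (\<lambda>i. (g *v pt c1 i, ln c1 i v* gi))"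
  have lr: "labs N D x \<subseteq> {1..N}" using labs_range[OF N tri x] .
  have "coord N D c3 x = coord N D c1 x"
  proof (rule coord_act[OF gi])
    show "\<forall>i\<in>labs N D x. pt c3 i = g *v pt c1 i \<and> ln c3 i = ln c1 i v* gi" unfolding c3_def pt_def ln_def by simp
  next
    fix p q assume "x = Dg p q"
    hence "p \<in> {1..N}" using lr unfolding labs_def by auto
    thus "ln c1 p \<bullet> pt c1 p = 0 \<and> pt c1 p \<noteq> 0" using wcd.nd_inc[OF w] by blast
  qed
  moreover have "coord N D c2 x = coord N D c3 x"
  proof (rule coord_rescale, intro ballI)
    fix i assume "i \<in> labs N D x"
    hence i: "i \<in> {1..N}" using lr by blast
    obtain s u where su: "s \<noteq> 0" "u \<noteq> 0" "pt c2 i = s *\<^sub>R (g *v pt c1 i)" "ln c1 i = u *\<^sub>R (ln c2 i v* g)"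
      using rel i unfolding relg_def by blast
    have "ln c3 i = u *\<^sub>R ln c2 i" unfolding c3_def ln_def snd_conv
      by (simp add: su(4)[unfolded ln_def] scaleR_vmul vm_cancel2[OF gi(1)])
    hence "ln c2 i = (1 / u) *\<^sub>R ln c3 i" using su(2) by simp
    moreover have "pt c2 i = s *\<^sub>R pt c3 i" using su(3) unfolding c3_def pt_def by simp
    ultimately show "\<exists>r e. r \<noteq> 0 \<and> e \<noteq> 0 \<and> pt c2 i = r *\<^sub>R pt c3 i \<and> ln c2 i = e *\<^sub>R ln c3 i"
      using su(1,2) by (intro exI[of _ s] exI[of _ "1 / u"]) simp
  qed
  ultimately show ?thesis by simp
qed

lemma Wc_restrict:
  assumes N: "N \<ge> 4" and W: "Wc N c" and v: "2 \<le> v" "v \<le> N - 1"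
  shows "Wc (N - 1) (c \<circ> sg v)"
proof -
  obtain A L where w: "wcd N c A L" using Wc_wcd[OF _ W] N by auto
  interpret wcd N c A L by (rule w)
  have r: "i \<in> {1..N - 1} \<Longrightarrow> sg v i \<in> {1..N}" for i unfolding sg_def by auto
  have H1: "\<forall>i\<in>{1..N - 1}. (\<exists>r. r \<noteq> 0 \<and> pt (c \<circ> sg v) i = r *\<^sub>R (A \<circ> sg v) i) \<and>
      (\<exists>e. e \<noteq> 0 \<and> ln (c \<circ> sg v) i = e *\<^sub>R (L \<circ> sg v) i) \<and>
      (L \<circ> sg v) i \<bullet> (A \<circ> sg v) i = 0 \<and> (\<forall>j\<in>{1..N - 1}. j \<noteq> i \<longrightarrow> (L \<circ> sg v) i \<bullet> (A \<circ> sg v) j > 0)"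
  proof
    fix i assume i: "i \<in> {1..N - 1}"
    have si: "sg v i \<in> {1..N}" using r[OF i] .
    have "\<forall>j\<in>{1..N - 1}. j \<noteq> i \<longrightarrow> L (sg v i) \<bullet> A (sg v j) > 0"
      using LA[OF si] r by simp
    then show "(\<exists>r. r \<noteq> 0 \<and> pt (c \<circ> sg v) i = r *\<^sub>R (A \<circ> sg v) i) \<and>
      (\<exists>e. e \<noteq> 0 \<and> ln (c \<circ> sg v) i = e *\<^sub>R (L \<circ> sg v) i) \<and>
      (L \<circ> sg v) i \<bullet> (A \<circ> sg v) i = 0 \<and> (\<forall>j\<in>{1..N - 1}. j \<noteq> i \<longrightarrow> (L \<circ> sg v) i \<bullet> (A \<circ> sg v) j > 0)"
      using Asc[OF si] Lsc[OF si] LA0[OF si] unfolding pt_def ln_def by simp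
  qed
  have H2: "\<forall>x y z. 1 \<le> x \<and> x < y \<and> y < z \<and> z \<le> N - 1 \<longrightarrow> det3 ((A \<circ> sg v) x) ((A \<circ> sg v) y) ((A \<circ> sg v) z) > 0"
  proof (intro allI impI)
    fix x y z assume o: "1 \<le> x \<and> x < y \<and> y < z \<and> z \<le> N - 1"
    have "1 \<le> sg v x" "sg v x < sg v y" "sg v y < sg v z" "sg v z \<le> N" using o unfolding sg_def by auto
    then show "det3 ((A \<circ> sg v) x) ((A \<circ> sg v) y) ((A \<circ> sg v) z) > 0" using Ad by simp
  qed
  show ?thesis unfolding Wc_def using H1 H2 by blast
qed

definition col :: "real^3 \<Rightarrow> real^3 \<Rightarrow> real^3 \<Rightarrow> real^3^3" where
  "col u v w = transpose (vector [u, v, w])"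

lemma col_mult: "col u v w *v vector [x, y, z] = x *\<^sub>R u + y *\<^sub>R v + z *\<^sub>R w"
  unfolding col_def by (simp add: vec3_eq matrix_vector_mult_def transpose_def vector_def sum_3 algebra_simps)

lemma det_col: "det (col u v w) = det3 u v w"
  unfolding col_def det3_def by simp

lemma col_e: "col u v w *v vector [1, 0, 0] = u" "col u v w *v vector [0, 1, 0] = v" "col u v w *v vector [0, 0, 1] = w"
  by (simp_all add: col_mult)

lemma inj_base:
  assumes W1: "Wc 3 c1" and W2: "Wc 3 c2"
    and T: "coord 3 D c1 (Tri 1 2 3) = coord 3 D c2 (Tri 1 2 3)"
  shows "\<exists>g. invertible g \<and> relg 3 g c1 c2"
proof -
  obtain A1 L1 where w1: "wcd 3 c1 A1 L1" using Wc_wcd[OF _ W1] by auto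
  obtain A2 L2 where w2: "wcd 3 c2 A2 L2" using Wc_wcd[OF _ W2] by auto
  define P where "P i = pt c2 i" for i
  define l where "l i = ln c2 i" for i
  define Q where "Q i = pt c1 i" for i
  define k where "k i = ln c1 i" for i
  define p where "p i j = l i \<bullet> P j" for i j
  define q where "q i j = k i \<bullet> Q j" for i j
  have r3: "(1::nat) \<in> {1..3}" "(2::nat) \<in> {1..3}" "(3::nat) \<in> {1..3}" by auto
  have pn: "p 1 2 \<noteq> 0" "p 1 3 \<noteq> 0" "p 2 1 \<noteq> 0" "p 2 3 \<noteq> 0" "p 3 1 \<noteq> 0" "p 3 2 \<noteq> 0"
    unfolding p_def l_def P_def using wcd.nd_pair[OF w2] r3 by auto
  have qn: "q 1 2 \<noteq> 0" "q 1 3 \<noteq> 0" "q 2 1 \<noteq> 0" "q 2 3 \<noteq> 0" "q 3 1 \<noteq> 0" "q 3 2 \<noteq> 0"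
    unfolding q_def k_def Q_def using wcd.nd_pair[OF w1] r3 by auto
  have p0: "p 1 1 = 0" "p 2 2 = 0" "p 3 3 = 0" unfolding p_def l_def P_def using wcd.nd_inc[OF w2] r3 by auto
  have q0: "k 1 \<bullet> Q 1 = 0" "k 2 \<bullet> Q 2 = 0" "k 3 \<bullet> Q 3 = 0" unfolding k_def Q_def using wcd.nd_inc[OF w1] r3 by auto
  have dQ: "det3 (Q 1) (Q 2) (Q 3) \<noteq> 0" unfolding Q_def using wcd.nd_det[OF w1] r3 by auto
  have dP: "det3 (P 1) (P 2) (P 3) \<noteq> 0" unfolding P_def using wcd.nd_det[OF w2] r3 by auto
  have Te: "(q 1 2 * q 2 3 * q 3 1) / (q 1 3 * q 2 1 * q 3 2) = (p 1 2 * p 2 3 * p 3 1) / (p 1 3 * p 2 1 * p 3 2)"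
    using T unfolding coord.simps triple_ratio_def p_def q_def P_def Q_def l_def k_def by simp
  define k1 where "k1 = (q 1 2 / q 1 3) / (p 1 2 / p 1 3)"
  define k2 where "k2 = (q 2 3 / q 2 1) / (p 2 3 / p 2 1)"
  define k3 where "k3 = (q 3 1 / q 3 2) / (p 3 1 / p 3 2)"
  have kn: "k1 \<noteq> 0" "k2 \<noteq> 0" "k3 \<noteq> 0" unfolding k1_def k2_def k3_def using pn qn by auto
  have kp: "k1 * k2 * k3 = 1"
    using Te pn qn unfolding k1_def k2_def k3_def by (simp add: field_simps)
  define m1 where "m1 = (1::real)"
  define m2 where "m2 = 1 / k3"
  define m3 where "m3 = k2"
  have mn: "m1 \<noteq> 0" "m2 \<noteq> 0" "m3 \<noteq> 0" unfolding m1_def m2_def m3_def using kn by auto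
  define MQ where "MQ = col (Q 1) (Q 2) (Q 3)"
  define NP where "NP = col (m1 *\<^sub>R P 1) (m2 *\<^sub>R P 2) (m3 *\<^sub>R P 3)"
  have "invertible MQ" unfolding invertible_det_nz MQ_def det_col using dQ .
  then obtain Mi where Mi: "MQ ** Mi = mat 1" "Mi ** MQ = mat 1" using inv_get by blast
  have iMi: "invertible Mi" unfolding invertible_def using Mi by blast
  have iNP: "invertible NP" unfolding invertible_det_nz NP_def det_col using dP mn by (simp add: det3_scale)
  define g where "g = NP ** Mi"
  have ig: "invertible g" unfolding g_def by (rule invertible_mult[OF iNP iMi])
  have gQ: "g *v Q 1 = m1 *\<^sub>R P 1" "g *v Q 2 = m2 *\<^sub>R P 2" "g *v Q 3 = m3 *\<^sub>R P 3"
  proof -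
    have a: "Mi *v (MQ *v x) = x" for x using Mi(2) by (simp add: matrix_vector_mul_assoc)
    show "g *v Q 1 = m1 *\<^sub>R P 1" unfolding g_def
      using a[of "vector [1,0,0]"] by (simp add: matrix_vector_mul_assoc[symmetric] MQ_def NP_def col_e)
    show "g *v Q 2 = m2 *\<^sub>R P 2" unfolding g_def
      using a[of "vector [0,1,0]"] by (simp add: matrix_vector_mul_assoc[symmetric] MQ_def NP_def col_e)
    show "g *v Q 3 = m3 *\<^sub>R P 3" unfolding g_def
      using a[of "vector [0,0,1]"] by (simp add: matrix_vector_mul_assoc[symmetric] MQ_def NP_def col_e)
  qed
  define w where "w i = l i v* g" for i
  have wQ: "w i \<bullet> Q 1 = m1 * p i 1" "w i \<bullet> Q 2 = m2 * p i 2" "w i \<bullet> Q 3 = m3 * p i 3" for i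
    unfolding w_def inner_vmul gQ p_def by simp_all
  have rat1: "(m2 * p 1 2) / (m3 * p 1 3) = q 1 2 / q 1 3"
  proof -
    have "m2 / m3 = k1" unfolding m2_def m3_def using kp kn by (simp add: field_simps)
    thus ?thesis unfolding k1_def using pn qn mn by (simp add: field_simps)
  qed
  have rat2: "(m3 * p 2 3) / (m1 * p 2 1) = q 2 3 / q 2 1"
    unfolding m3_def m1_def k2_def using pn qn by (simp add: field_simps)
  have rat3: "(m1 * p 3 1) / (m2 * p 3 2) = q 3 1 / q 3 2"
    unfolding m1_def m2_def k3_def using pn qn kn by (simp add: field_simps)
  have L1: "\<exists>u. u \<noteq> 0 \<and> k 1 = u *\<^sub>R w 1"
    by (rule line_match[of "Q 1" "Q 2" "Q 3"]) (use dQ q0 p0 pn qn mn rat1 wQ in \<open>simp_all add: q_def\<close>)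
  have dQ2: "det3 (Q 2) (Q 3) (Q 1) \<noteq> 0" using dQ det3_cyc by metis
  have dQ3: "det3 (Q 3) (Q 1) (Q 2) \<noteq> 0" using dQ det3_cyc by metis
  have L2: "\<exists>u. u \<noteq> 0 \<and> k 2 = u *\<^sub>R w 2"
    by (rule line_match[of "Q 2" "Q 3" "Q 1"]) (use dQ2 q0 p0 pn qn mn rat2 wQ in \<open>simp_all add: q_def\<close>)
  have L3: "\<exists>u. u \<noteq> 0 \<and> k 3 = u *\<^sub>R w 3"
    by (rule line_match[of "Q 3" "Q 1" "Q 2"]) (use dQ3 q0 p0 pn qn mn rat3 wQ in \<open>simp_all add: q_def\<close>)
  have "relg 3 g c1 c2"
    unfolding relg_def
  proof
    fix i :: nat assume "i \<in> {1..3}"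
    hence "i = 1 \<or> i = 2 \<or> i = 3" by auto
    then show "\<exists>s u. s \<noteq> 0 \<and> u \<noteq> 0 \<and> pt c2 i = s *\<^sub>R (g *v pt c1 i) \<and> ln c1 i = u *\<^sub>R (ln c2 i v* g)"
    proof (elim disjE)
      assume i: "i = 1"
      obtain u where u: "u \<noteq> 0" "k 1 = u *\<^sub>R w 1" using L1 by blast
      have "pt c2 1 = (1 / m1) *\<^sub>R (g *v pt c1 1)" using gQ mn unfolding P_def Q_def by simp
      then show ?thesis using u mn i unfolding k_def w_def l_def by (intro exI[of _ "1 / m1"] exI[of _ u]) simp
    next
      assume i: "i = 2"
      obtain u where u: "u \<noteq> 0" "k 2 = u *\<^sub>R w 2" using L2 by blast
      have "pt c2 2 = (1 / m2) *\<^sub>R (g *v pt c1 2)" using gQ mn unfolding P_def Q_def by simp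
      then show ?thesis using u mn i unfolding k_def w_def l_def by (intro exI[of _ "1 / m2"] exI[of _ u]) simp
    next
      assume i: "i = 3"
      obtain u where u: "u \<noteq> 0" "k 3 = u *\<^sub>R w 3" using L3 by blast
      have "pt c2 3 = (1 / m3) *\<^sub>R (g *v pt c1 3)" using gQ mn unfolding P_def Q_def by simp
      then show ?thesis using u mn i unfolding k_def w_def l_def by (intro exI[of _ "1 / m3"] exI[of _ u]) simp
    qed
  qed
  then show ?thesis using ig by blast
qed

context ear begin

lemma inj_extend:
  assumes W1: "Wc n c1" and W2: "Wc n c2" and eq: "\<forall>x\<in>Iset n D. coord n D c1 x = coord n D c2 x"
    and g: "invertible g" and rel: "relg (n - 1) g (c1 \<circ> sg v) (c2 \<circ> sg v)"
  shows "relg n g c1 c2"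
proof -
  have n3: "n \<ge> 3" using n4 by simp
  obtain gi where gi: "g ** gi = mat 1" "gi ** g = mat 1" using inv_get[OF g] by blast
  obtain A1 L1 where w1: "wcd n c1 A1 L1" using Wc_wcd[OF n3 W1] by blast
  obtain A2 L2 where w2: "wcd n c2 A2 L2" using Wc_wcd[OF n3 W2] by blast
  have rel_off: "\<exists>s u. s \<noteq> 0 \<and> u \<noteq> 0 \<and> pt c2 i = s *\<^sub>R (g *v pt c1 i) \<and> ln c1 i = u *\<^sub>R (ln c2 i v* g)"
    if i: "i \<in> {1..n}" "i \<noteq> v" for i
  proof -
    have di: "dl v i \<in> {1..n - 1}" using i v2 vn unfolding dl_def by auto
    have e: "sg v (dl v i) = i" using sg_dl i by blast
    show ?thesis using rel di e unfolding relg_def pt_def ln_def by fastforce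
  qed
  define m where "m = opp_vertex n D (v + 1) (v - 1)"
  have mm: "m \<in> {1..n}" "m < v - 1 \<or> m > v + 1" using opp_ear2 unfolding m_def Let_def by auto
  have o1: "opp_vertex n D (v - 1) (v + 1) = v" by (rule opp_ear1)
  have rv: "v - 1 \<in> {1..n}" "v \<in> {1..n}" "v + 1 \<in> {1..n}" using v2 vn by auto
  define c3 where "c3 = (\<lambda>i. (g *v pt c1 i, ln c1 i v* gi))"
  define c4 where "c4 = (\<lambda>i. if i = v then c3 i else c2 i)"
  define x1 where "x1 = Tri (v - 1) v (v + 1)"
  define x2 where "x2 = Dg (v - 1) (v + 1)"
  define x3 where "x3 = Dg (v + 1) (v - 1)"
  have xI: "x1 \<in> Iset n D" "x2 \<in> Iset n D" "x3 \<in> Iset n D" unfolding x1_def x2_def x3_def using Iset_b by auto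
  have labs_sub: "labs n D x \<subseteq> {v - 1, v, v + 1, m}" if "x \<in> {x1, x2, x3}" for x
    using that o1 unfolding labs_def x1_def x2_def x3_def m_def by auto
  have c31: "coord n D c3 x = coord n D c1 x" if x: "x \<in> {x1, x2, x3}" for x
  proof (rule coord_act[OF gi])
    show "\<forall>i\<in>labs n D x. pt c3 i = g *v pt c1 i \<and> ln c3 i = ln c1 i v* gi" unfolding c3_def pt_def ln_def by simp
  next
    fix p q assume "x = Dg p q"
    hence "p = v - 1 \<or> p = v + 1" using x unfolding x1_def x2_def x3_def by auto
    thus "ln c1 p \<bullet> pt c1 p = 0 \<and> pt c1 p \<noteq> 0" using wcd.nd_inc[OF w1] rv by blast
  qed
  have c43: "coord n D c4 x = coord n D c3 x" if x: "x \<in> {x1, x2, x3}" for x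
  proof (rule coord_rescale, intro ballI)
    fix i assume "i \<in> labs n D x"
    hence i: "i \<in> {v - 1, v, v + 1, m}" using labs_sub[OF x] by blast
    show "\<exists>r e. r \<noteq> 0 \<and> e \<noteq> 0 \<and> pt c4 i = r *\<^sub>R pt c3 i \<and> ln c4 i = e *\<^sub>R ln c3 i"
    proof (cases "i = v")
      case True then show ?thesis unfolding c4_def pt_def ln_def by (intro exI[of _ 1]) simp
    next
      case False
      have ir: "i \<in> {1..n}" using i rv mm by auto
      obtain s u where su: "s \<noteq> 0" "u \<noteq> 0" "pt c2 i = s *\<^sub>R (g *v pt c1 i)" "ln c1 i = u *\<^sub>R (ln c2 i v* g)"
        using rel_off[OF ir False] by blast
      have "ln c3 i = u *\<^sub>R ln c2 i" unfolding c3_def ln_def snd_conv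
        by (simp add: su(4)[unfolded ln_def] scaleR_vmul vm_cancel2[OF gi(1)])
      moreover have "ln c4 i = ln c2 i" using False unfolding c4_def ln_def by simp
      ultimately have "ln c4 i = (1 / u) *\<^sub>R ln c3 i" using su(2) by simp
      moreover have "pt c4 i = s *\<^sub>R pt c3 i" using su(3) False unfolding c3_def c4_def pt_def by simp
      ultimately show ?thesis using su(1,2) by (intro exI[of _ s] exI[of _ "1 / u"]) simp
    qed
  qed
  have ceq: "coord n D c4 x = coord n D c2 x" if x: "x \<in> {x1, x2, x3}" for x
    using c43[OF x] c31[OF x] eq xI x by auto
  have cpos: "coord n D c2 x > 0" if x: "x \<in> {x1, x2, x3}" for x
    using Wc_pos[OF n3 tri W2] xI x by auto
  define A where "A = pt c2 (v - 1)"
  define a where "a = ln c2 (v - 1)"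
  define B where "B = pt c2 (v + 1)"
  define b where "b = ln c2 (v + 1)"
  define M where "M = pt c2 m"
  define C where "C = pt c2 v"
  define cc where "cc = ln c2 v"
  define C' where "C' = g *v pt c1 v"
  define cc' where "cc' = ln c1 v v* gi"
  have c4v: "pt c4 (v - 1) = A" "ln c4 (v - 1) = a" "pt c4 (v + 1) = B" "ln c4 (v + 1) = b" "pt c4 m = M"
     "pt c4 v = C'" "ln c4 v = cc'"
    using mm v2 unfolding c4_def c3_def A_def a_def B_def b_def M_def C'_def cc'_def pt_def ln_def by auto
  have dist: "m \<noteq> v - 1" "m \<noteq> v" "m \<noteq> v + 1" "v - 1 \<noteq> v" "v - 1 \<noteq> v + 1" "v \<noteq> v + 1" using mm v2 by auto
  have aA: "a \<bullet> A = 0" "A \<noteq> 0" unfolding a_def A_def using wcd.nd_inc[OF w2] rv by auto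
  have bB: "b \<bullet> B = 0" "B \<noteq> 0" unfolding b_def B_def using wcd.nd_inc[OF w2] rv by auto
  have aB: "a \<bullet> B \<noteq> 0" unfolding a_def B_def using wcd.nd_pair[OF w2] rv dist by auto
  have bA: "b \<bullet> A \<noteq> 0" unfolding b_def A_def using wcd.nd_pair[OF w2] rv dist by auto
  have aM: "a \<bullet> M \<noteq> 0" unfolding a_def M_def using wcd.nd_pair[OF w2] rv mm(1) dist by metis
  have bM: "b \<bullet> M \<noteq> 0" unfolding b_def M_def using wcd.nd_pair[OF w2] rv mm(1) dist by metis
  have dM: "det3 A B M \<noteq> 0" unfolding A_def B_def M_def using wcd.nd_det[OF w2] rv mm(1) dist by metis
  have dC: "det3 A B C \<noteq> 0" unfolding A_def B_def C_def using wcd.nd_det[OF w2] rv dist by metis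
  have ccC: "cc \<bullet> C = 0" unfolding cc_def C_def using wcd.nd_inc[OF w2] rv by auto
  have ccC': "cc' \<bullet> C' = 0" unfolding cc'_def C'_def vmul_cancel[OF gi(2)] using wcd.nd_inc[OF w1] rv by auto
  have f2: "coord n D c x2 = (ln c (v - 1) \<bullet> pt c v) * det3 (pt c (v - 1)) (pt c (v + 1)) (pt c m) /
      ((ln c (v - 1) \<bullet> pt c m) * det3 (pt c (v - 1)) (pt c v) (pt c (v + 1)))"
    if "ln c (v - 1) \<bullet> pt c (v - 1) = 0" "pt c (v - 1) \<noteq> 0" for c
    unfolding x2_def coord.simps Let_def o1 m_def[symmetric] by (rule cr_formula[OF that])
  have f3: "coord n D c x3 = (ln c (v + 1) \<bullet> pt c m) * det3 (pt c (v + 1)) (pt c (v - 1)) (pt c v) /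
      ((ln c (v + 1) \<bullet> pt c v) * det3 (pt c (v + 1)) (pt c m) (pt c (v - 1)))"
    if "ln c (v + 1) \<bullet> pt c (v + 1) = 0" "pt c (v + 1) \<noteq> 0" for c
    unfolding x3_def coord.simps Let_def o1 m_def[symmetric] by (rule cr_formula[OF that])
  have f1: "coord n D c x1 = triple_ratio (pt c (v - 1)) (ln c (v - 1)) (pt c v) (ln c v) (pt c (v + 1)) (ln c (v + 1))" for c
    unfolding x1_def by simp
  have X2: "coord n D c2 x2 = (a \<bullet> C) * det3 A B M / ((a \<bullet> M) * det3 A C B)"
    using f2[of c2] aA unfolding A_def a_def B_def M_def C_def by simp
  have X2': "coord n D c4 x2 = (a \<bullet> C') * det3 A B M / ((a \<bullet> M) * det3 A C' B)"
    using f2[of c4] aA unfolding c4v by simp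
  have X3: "coord n D c2 x3 = (b \<bullet> M) * det3 B A C / ((b \<bullet> C) * det3 B M A)"
    using f3[of c2] bB unfolding A_def b_def B_def M_def C_def by simp
  have X3': "coord n D c4 x3 = (b \<bullet> M) * det3 B A C' / ((b \<bullet> C') * det3 B M A)"
    using f3[of c4] bB unfolding c4v by simp
  have X1: "coord n D c2 x1 = triple_ratio A a C cc B b" unfolding f1 A_def a_def C_def cc_def B_def b_def ..
  have X1': "coord n D c4 x1 = triple_ratio A a C' cc' B b" unfolding f1 c4v ..
  have V: "(\<exists>l. l \<noteq> 0 \<and> C' = l *\<^sub>R C) \<and> (\<exists>m. m \<noteq> 0 \<and> cc' = m *\<^sub>R cc)"
  proof (rule vdet[OF aA(1) bB(1) aB bA aM bM dM dC ccC ccC'])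
    show "(a \<bullet> C) * det3 A B M / ((a \<bullet> M) * det3 A C B) = (a \<bullet> C') * det3 A B M / ((a \<bullet> M) * det3 A C' B)"
      using ceq[of x2] X2 X2' by simp
    show "(a \<bullet> C) * det3 A B M / ((a \<bullet> M) * det3 A C B) > 0" using cpos[of x2] X2 by simp
    show "(b \<bullet> M) * det3 B A C / ((b \<bullet> C) * det3 B M A) = (b \<bullet> M) * det3 B A C' / ((b \<bullet> C') * det3 B M A)"
      using ceq[of x3] X3 X3' by simp
    show "(b \<bullet> M) * det3 B A C / ((b \<bullet> C) * det3 B M A) > 0" using cpos[of x3] X3 by simp
    show "triple_ratio A a C cc B b = triple_ratio A a C' cc' B b" using ceq[of x1] X1 X1' by simp
    show "triple_ratio A a C cc B b > 0" using cpos[of x1] X1 by simp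
  qed
  then obtain l mu where lm: "l \<noteq> 0" "C' = l *\<^sub>R C" "mu \<noteq> 0" "cc' = mu *\<^sub>R cc" by blast
  have atv: "\<exists>s u. s \<noteq> 0 \<and> u \<noteq> 0 \<and> pt c2 v = s *\<^sub>R (g *v pt c1 v) \<and> ln c1 v = u *\<^sub>R (ln c2 v v* g)"
  proof (intro exI conjI)
    show "1 / l \<noteq> 0" "mu \<noteq> 0" using lm by auto
    show "pt c2 v = (1 / l) *\<^sub>R (g *v pt c1 v)" using lm(1,2) unfolding C'_def C_def by simp
    have "ln c1 v = (ln c1 v v* gi) v* g" using vm_cancel2[OF gi(2)] by simp
    also have "\<dots> = mu *\<^sub>R (ln c2 v v* g)" using lm(4) unfolding cc'_def cc_def by (simp add: scaleR_vmul)
    finally show "ln c1 v = mu *\<^sub>R (ln c2 v v* g)" .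
  qed
  show ?thesis unfolding relg_def
  proof
    fix i assume i: "i \<in> {1..n}"
    show "\<exists>s u. s \<noteq> 0 \<and> u \<noteq> 0 \<and> pt c2 i = s *\<^sub>R (g *v pt c1 i) \<and> ln c1 i = u *\<^sub>R (ln c2 i v* g)"
      using rel_off[OF i] atv by (cases "i = v") auto
  qed
qed

end

theorem inj_main:
  "n \<ge> 3 \<Longrightarrow> poly_triangulation n D \<Longrightarrow> Wc n c1 \<Longrightarrow> Wc n c2 \<Longrightarrow>
   (\<forall>x\<in>Iset n D. coord n D c1 x = coord n D c2 x) \<Longrightarrow> \<exists>g. invertible g \<and> relg n g c1 c2"
proof (induction n arbitrary: D c1 c2 rule: nat_induct_at_least)
  case base
  have D: "D = {}" using tri3_empty base by blast
  have "Tri 1 2 3 \<in> Iset 3 D" unfolding Iset_def is_tri_def is_edge_def by auto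
  then show ?case using inj_base base by blast
next
  case (Suc m)
  obtain v where v: "2 \<le> v" "v \<le> Suc m - 1" "(v - 1, v + 1) \<in> D" using ear_exists[of "Suc m" D] Suc by auto
  interpret ear "Suc m" v D using v Suc by unfold_locales auto
  have W1: "Wc m (c1 \<circ> sg v)" using Wc_restrict[OF _ Suc.prems(2) v(1,2)] Suc by simp
  have W2: "Wc m (c2 \<circ> sg v)" using Wc_restrict[OF _ Suc.prems(3) v(1,2)] Suc by simp
  have eqr: "\<forall>x\<in>Iset m (redD v D). coord m (redD v D) (c1 \<circ> sg v) x = coord m (redD v D) (c2 \<circ> sg v) x"
  proof
    fix x assume x: "x \<in> Iset m (redD v D)"
    have "coord m (redD v D) (c1 \<circ> sg v) x = coord (Suc m) D c1 (imap v x)" using coord_corr[of x c1] x by simp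
    also have "\<dots> = coord (Suc m) D c2 (imap v x)" using Suc.prems(4) Iset_a[of x] x by simp
    also have "\<dots> = coord m (redD v D) (c2 \<circ> sg v) x" using coord_corr[of x c2] x by simp
    finally show "coord m (redD v D) (c1 \<circ> sg v) x = coord m (redD v D) (c2 \<circ> sg v) x" .
  qed
  have tr': "poly_triangulation m (redD v D)" using red_tri by simp
  obtain g where g: "invertible g" "relg m g (c1 \<circ> sg v) (c2 \<circ> sg v)"
    using Suc.IH[OF tr' W1 W2 eqr] by blast
  have "relg (Suc m) g c1 c2" using inj_extend[OF Suc.prems(2) Suc.prems(3) Suc.prems(4) g(1)] g(2) by simp
  then show ?case using g(1) by blast
qed

lemma surj_base:
  assumes T: "T > 0"
  shows "\<exists>c. c \<in> Pconf 3 \<and> coord 3 D c (Tri 1 2 3) = T"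
proof -
  define e1 where "e1 = (vector [1, 0, 0] :: real^3)"
  define e2 where "e2 = (vector [0, 1, 0] :: real^3)"
  define e3 where "e3 = (vector [0, 0, 1] :: real^3)"
  define P where "P i = (if i = 1 then e1 else if i = 2 then e2 else e3)" for i :: nat
  define L where "L i = (if i = 1 then e2 else if i = 2 then e3 else e1)" for i :: nat
  define A where "A i = (if i = 1 then e3 + T *\<^sub>R e1 else if i = 2 then e1 + e2 else e2 + e3)" for i :: nat
  define c where "c i = (A i, L i)" for i :: nat
  have ip: "e1 \<bullet> e1 = 1" "e2 \<bullet> e2 = 1" "e3 \<bullet> e3 = 1" "e1 \<bullet> e2 = 0" "e1 \<bullet> e3 = 0" "e2 \<bullet> e1 = 0"
     "e2 \<bullet> e3 = 0" "e3 \<bullet> e1 = 0" "e3 \<bullet> e2 = 0"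
    unfolding e1_def e2_def e3_def by (simp_all add: inner3 vector_def)
  have cp: "cprev 3 1 = 3" "cprev 3 2 = 1" "cprev 3 3 = 2" unfolding cprev_def by auto
  have r3: "i \<in> {1..3} \<Longrightarrow> i = 1 \<or> i = 2 \<or> i = (3::nat)" for i by auto
  have "gconf0 3 c P L A"
  proof
    show "3 \<ge> (3::nat)" by simp
  next
    fix i :: nat assume "i \<in> {1..3}"
    then show "L i \<bullet> P (cprev 3 i) = 0" using r3 cp ip unfolding L_def P_def by auto
  next
    fix i :: nat assume "i \<in> {1..3}"
    then show "L i \<bullet> P i = 0" using r3 ip unfolding L_def P_def by auto
  next
    fix i j :: nat assume "i \<in> {1..3}" "j \<in> {1..3}" "j \<noteq> cprev 3 i" "j \<noteq> i"
    then show "L i \<bullet> P j > 0" using r3[of i] r3[of j] cp ip unfolding L_def P_def by auto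
  next
    fix i :: nat assume i: "i \<in> {1..3}"
    show "\<exists>s t. s > 0 \<and> t > 0 \<and> A i = s *\<^sub>R P (cprev 3 i) + t *\<^sub>R P i"
    proof -
      consider "i = 1" | "i = 2" | "i = 3" using r3[OF i] by blast
      then show ?thesis
      proof cases
        case 1 then show ?thesis using T cp unfolding A_def P_def by (intro exI[of _ 1] exI[of _ T]) simp
      next
        case 2 then show ?thesis using cp unfolding A_def P_def by (intro exI[of _ 1] exI[of _ 1]) simp
      next
        case 3 then show ?thesis using cp unfolding A_def P_def by (intro exI[of _ 1] exI[of _ 1]) simp
      qed
    qed
  next
    fix i :: nat assume "i \<in> {1..3}"
    show "\<exists>e. e \<noteq> 0 \<and> ln c i = e *\<^sub>R L i" unfolding c_def ln_def by (intro exI[of _ 1]) simp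
  next
    fix i :: nat assume "i \<in> {1..3}"
    show "\<exists>r. r \<noteq> 0 \<and> pt c i = r *\<^sub>R A i" unfolding c_def pt_def by (intro exI[of _ 1]) simp
  qed
  hence "c \<in> Pconf 3" by (rule gconf0.to_pconf)
  moreover have "coord 3 D c (Tri 1 2 3) = T"
    unfolding coord.simps triple_ratio_def c_def pt_def ln_def A_def L_def
    using ip T by (simp add: inner_add_right)
  ultimately show ?thesis by blast
qed

lemma (in gconf) cycA: "x \<in> {1..N} \<Longrightarrow> y \<in> {1..N} \<Longrightarrow> z \<in> {1..N} \<Longrightarrow> cyc3 x y z \<Longrightarrow> det3 (A x) (A y) (A z) > 0"
  unfolding cyc3_def using Adet det3_cyc by (metis atLeastAtMost_iff)

lemma LL1: "det3 A (x *\<^sub>R A + y *\<^sub>R B + Q) B = - det3 A B Q" by (simp add: c3 algebra_simps)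
lemma LL2: "det3 B A (x *\<^sub>R A + y *\<^sub>R B + Q) = - det3 A B Q" by (simp add: c3 algebra_simps)
lemma LL4: "join U C \<bullet> C = 0" by (simp add: c3 algebra_simps)
lemma LL5: "join (r *\<^sub>R A - B) (x *\<^sub>R A + y *\<^sub>R B + Q) \<bullet> A = - det3 A B Q" by (simp add: c3 algebra_simps)
lemma LL6: "join (r *\<^sub>R A - B) (x *\<^sub>R A + y *\<^sub>R B + Q) \<bullet> B = r * (- det3 A B Q)" by (simp add: c3 algebra_simps)
lemma LL7: "join (r *\<^sub>R A - B) (x *\<^sub>R A + y *\<^sub>R B + Q) \<bullet> Q = det3 A B Q * (r * y + x)" by (simp add: c3 algebra_simps)
lemma LLK: "det3 (s1 *\<^sub>R Pc + t1 *\<^sub>R Q) (s2 *\<^sub>R Q + t2 *\<^sub>R Pq) Q = s1 * t2 * det3 Pc Pq Q" by (simp add: c3 algebra_simps)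
lemma LLZ1: "det3 Z (s2 *\<^sub>R Q + t2 *\<^sub>R Pq) Q = - t2 * det3 Q Pq Z" by (simp add: c3 algebra_simps)
lemma LLZ2: "det3 (s1 *\<^sub>R Pc + t1 *\<^sub>R Q) Z Q = - s1 * det3 Pc Q Z" by (simp add: c3 algebra_simps)
lemma LLZ3: "det3 (s1 *\<^sub>R Pc + t1 *\<^sub>R Q) (s2 *\<^sub>R Q + t2 *\<^sub>R Pq) Z =
   s1 * s2 * det3 Pc Q Z + s1 * t2 * det3 Pc Pq Z + t1 * t2 * det3 Q Pq Z" by (simp add: c3 algebra_simps)

context ear begin

lemma dl_range: "i \<in> {1..n} \<Longrightarrow> i \<noteq> v \<Longrightarrow> dl v i \<in> {1..n - 1}"
  using v2 vn unfolding dl_def by auto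

lemma cp_map: "i \<in> {1..n} \<Longrightarrow> i \<noteq> v \<Longrightarrow> i \<noteq> v + 1 \<Longrightarrow>
   cprev n i \<noteq> v - 1 \<and> cprev n i \<noteq> v \<and> dl v (cprev n i) = cprev (n - 1) (dl v i)"
  using v2 vn n4 unfolding dl_def cprev_def by auto

lemma dl_inj: "i \<noteq> v \<Longrightarrow> j \<noteq> v \<Longrightarrow> dl v i = dl v j \<Longrightarrow> i = j"
  by (metis sg_dl)

lemma dl_v1: "i \<noteq> v \<Longrightarrow> (dl v i = v - 1) = (i = v - 1)" using v2 unfolding dl_def by auto
lemma dl_v2: "i \<noteq> v \<Longrightarrow> (dl v i = v) = (i = v + 1)" using v2 unfolding dl_def by auto
lemma cprev_v: "cprev n v = v - 1" "cprev n (v + 1) = v" using v2 unfolding cprev_def by auto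

end

lemma comb_id: "u \<noteq> 0 \<Longrightarrow> (al / u) *\<^sub>R (u *\<^sub>R A + w1 *\<^sub>R Q) + (be / u) *\<^sub>R (u *\<^sub>R B + w2 *\<^sub>R Q) =
   al *\<^sub>R A + be *\<^sub>R B + ((al * w1 + be * w2) / u) *\<^sub>R (Q::real^3)"
  by (simp add: vec3_eq field_simps)

lemma comb2:
  fixes X Pc Q :: "real^3"
  assumes w: "w \<noteq> 0" and D: "D = 1 + t * u / w" and D0: "D \<noteq> 0" and X: "X = s *\<^sub>R Pc + t *\<^sub>R Q"
  shows "(s / D) *\<^sub>R Pc + (t / w / D) *\<^sub>R (u *\<^sub>R X + w *\<^sub>R Q) = X"
proof -
  have "(s / D) *\<^sub>R Pc + (t / w / D) *\<^sub>R (u *\<^sub>R X + w *\<^sub>R Q) = (1 / D) *\<^sub>R ((s *\<^sub>R Pc + t *\<^sub>R Q) + (t * u / w) *\<^sub>R X)"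
    using w by (simp add: vec3_eq field_simps)
  also have "\<dots> = (1 / D) *\<^sub>R (D *\<^sub>R X)" unfolding X[symmetric] D by (simp add: algebra_simps)
  also have "\<dots> = X" using D0 by simp
  finally show ?thesis .
qed

lemma comb3:
  fixes X Pq Q :: "real^3"
  assumes w: "w \<noteq> 0" and D: "D = 1 + s * u / w" and D0: "D \<noteq> 0" and X: "X = s *\<^sub>R Q + t *\<^sub>R Pq"
  shows "(s / w / D) *\<^sub>R (u *\<^sub>R X + w *\<^sub>R Q) + (t / D) *\<^sub>R Pq = X"
proof -
  have "(s / w / D) *\<^sub>R (u *\<^sub>R X + w *\<^sub>R Q) + (t / D) *\<^sub>R Pq = (1 / D) *\<^sub>R ((s *\<^sub>R Q + t *\<^sub>R Pq) + (s * u / w) *\<^sub>R X)"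
    using w by (simp add: vec3_eq field_simps)
  also have "\<dots> = (1 / D) *\<^sub>R (D *\<^sub>R X)" unfolding X[symmetric] D by (simp add: algebra_simps)
  also have "\<dots> = X" using D0 by simp
  finally show ?thesis .
qed

context ear begin

lemma surj_extend:
  assumes G: "gconf (n - 1) c' P L A" and X: "X > 0" and Y: "Y > 0" and T: "T > 0"
  shows "\<exists>c. c \<in> Pconf n \<and> c \<circ> sg v = c' \<and> coord n D c (Tri (v - 1) v (v + 1)) = T \<and>
     coord n D c (Dg (v - 1) (v + 1)) = X \<and> coord n D c (Dg (v + 1) (v - 1)) = Y"
proof -
  interpret g: gconf "n - 1" c' P L A by (rule G)
  define p where "p = v - 1"
  define q where "q = v"
  have pr: "p \<in> {1..n - 1}" "q \<in> {1..n - 1}" "q = p + 1" "cprev (n - 1) q = p"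
    using v2 vn unfolding p_def q_def cprev_def by auto
  define cp where "cp = cprev (n - 1) p"
  have cpr: "cp \<in> {1..n - 1}" "cp \<noteq> p" "cp \<noteq> q" using pr n4 unfolding cp_def cprev_def by auto
  define mo where "mo = opp_vertex n D (v + 1) (v - 1)"
  have mo: "mo \<in> {1..n}" "mo < v - 1 \<or> mo > v + 1" using opp_ear2 unfolding mo_def Let_def by auto
  define mr where "mr = dl v mo"
  have mrr: "mr \<in> {1..n - 1}" "mr \<noteq> p" "mr \<noteq> q" using mo v2 vn unfolding mr_def dl_def p_def q_def by auto
  define a where "a = L p"
  define b where "b = L q"
  define AA where "AA = A p"
  define BB where "BB = A q"
  define Q where "Q = P p"
  define Pc where "Pc = P cp"
  define Pq where "Pq = P q"
  define M where "M = A mr"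
  obtain s1 t1 where st1: "s1 > 0" "t1 > 0" "AA = s1 *\<^sub>R Pc + t1 *\<^sub>R Q"
    using g.Acomb[OF pr(1)] unfolding AA_def Pc_def Q_def cp_def by blast
  obtain s2 t2 where st2: "s2 > 0" "t2 > 0" "BB = s2 *\<^sub>R Q + t2 *\<^sub>R Pq"
    using g.Acomb[OF pr(2)] pr(4) unfolding BB_def Pq_def Q_def by auto
  have aAA: "a \<bullet> AA = 0" unfolding a_def AA_def using g.LA_zero pr by blast
  have bBB: "b \<bullet> BB = 0" unfolding b_def BB_def using g.LA_zero pr by blast
  have aQ: "a \<bullet> Q = 0" unfolding a_def Q_def using g.inc2 pr by blast
  have bQ: "b \<bullet> Q = 0" unfolding b_def Q_def using g.inc1[OF pr(2)] pr(4) by simp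
  have aBB: "a \<bullet> BB > 0" unfolding a_def BB_def using g.LA_pos pr by simp
  have bAA: "b \<bullet> AA > 0" unfolding b_def AA_def using g.LA_pos pr by simp
  have aM: "a \<bullet> M > 0" unfolding a_def M_def using g.LA_pos pr mrr by metis
  have bM: "b \<bullet> M > 0" unfolding b_def M_def using g.LA_pos pr mrr by metis
  have cyc1: "cyc3 cp p q" using pr cpr n4 unfolding cp_def cyc3_def cprev_def by auto
  have dPc: "det3 Pc Q Pq > 0" unfolding Pc_def Q_def Pq_def using g.cycP cpr pr cyc1 by blast
  define K where "K = det3 AA BB Q"
  have K: "K < 0"
  proof -
    have "K = s1 * t2 * det3 Pc Pq Q" unfolding K_def st1(3) st2(3) LLK ..
    moreover have "det3 Pc Pq Q = - det3 Pc Q Pq" using det3_swap23 by metis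
    ultimately show ?thesis using st1 st2 dPc by (simp add: mult_pos_pos)
  qed
  define dM where "dM = det3 AA BB M"
  have cycm: "cyc3 p q mr" using pr mrr unfolding cyc3_def by auto
  have dM: "dM > 0" unfolding dM_def AA_def BB_def M_def
    using g.cycA[OF pr(1) pr(2) mrr(1) cycm] .
  define be where "be = X * (a \<bullet> M) * (- K) / ((a \<bullet> BB) * dM)"
  define al where "al = (b \<bullet> M) * (- K) / (Y * (b \<bullet> AA) * dM)"
  define rho where "rho = T * al / be"
  have nK: "- K > 0" using K by simp
  have bep: "be > 0" unfolding be_def by (intro divide_pos_pos mult_pos_pos X aM nK aBB dM)
  have alp: "al > 0" unfolding al_def by (intro divide_pos_pos mult_pos_pos Y bM nK bAA dM)
  have rhop: "rho > 0" unfolding rho_def using T alp bep by (simp add: divide_pos_pos)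
  define C where "C = al *\<^sub>R AA + be *\<^sub>R BB + Q"
  define cc where "cc = join (rho *\<^sub>R AA - BB) C"
  have aC: "a \<bullet> C = be * (a \<bullet> BB)" unfolding C_def using aAA aQ by (simp add: inner_add_right)
  have bC: "b \<bullet> C = al * (b \<bullet> AA)" unfolding C_def using bBB bQ by (simp add: inner_add_right)
  have d1: "det3 AA C BB = - K" unfolding C_def K_def by (rule LL1)
  have d2: "det3 BB AA C = - K" unfolding C_def K_def by (rule LL2)
  have d3: "det3 BB M AA = dM" unfolding dM_def using det3_cyc by metis
  have ccC: "cc \<bullet> C = 0" unfolding cc_def by (rule LL4)
  have ccA: "cc \<bullet> AA = - K" unfolding cc_def C_def K_def by (rule LL5)
  have ccB: "cc \<bullet> BB = rho * (- K)" unfolding cc_def C_def K_def by (rule LL6)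
  have ccQ: "cc \<bullet> Q = K * (rho * be + al)" unfolding cc_def C_def K_def by (rule LL7)
  have ccAp: "cc \<bullet> AA > 0" unfolding ccA by (rule nK)
  have ccBp: "cc \<bullet> BB > 0" unfolding ccB by (rule mult_pos_pos[OF rhop nK])
  have ccQn: "cc \<bullet> Q < 0" unfolding ccQ by (rule mult_neg_pos[OF K add_pos_pos[OF mult_pos_pos[OF rhop bep] alp]])
  have Xv: "(a \<bullet> C) * dM / ((a \<bullet> M) * det3 AA C BB) = X"
    unfolding aC d1 be_def using aM aBB dM K by (simp add: field_simps)
  have Yv: "(b \<bullet> M) * det3 BB AA C / ((b \<bullet> C) * det3 BB M AA) = Y"
    unfolding bC d2 d3 al_def using bM bAA dM K Y by (simp add: field_simps)
  have Tv: "triple_ratio AA a C cc BB b = T"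
    unfolding triple_ratio_def aC bC ccA ccB rho_def using aBB bAA K alp bep by (simp add: field_simps)
  have cc_pos: "cc \<bullet> P j > 0" if j: "j \<in> {1..n - 1}" "j \<noteq> p" for j
  proof -
    define Z where "Z = P j"
    have e: "K * (cc \<bullet> Z) = det3 Z BB Q * (cc \<bullet> AA) + det3 AA Z Q * (cc \<bullet> BB) + det3 AA BB Z * (cc \<bullet> Q)"
    proof -
      have "K *\<^sub>R Z = det3 Z BB Q *\<^sub>R AA + det3 AA Z Q *\<^sub>R BB + det3 AA BB Z *\<^sub>R Q"
        unfolding K_def by (rule cramer2)
      hence "cc \<bullet> (K *\<^sub>R Z) = cc \<bullet> (det3 Z BB Q *\<^sub>R AA + det3 AA Z Q *\<^sub>R BB + det3 AA BB Z *\<^sub>R Q)" by simp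
      thus ?thesis by (simp add: inner_add_right)
    qed
    have nn1: "det3 Q Pq Z \<ge> 0" "j \<noteq> q \<Longrightarrow> det3 Q Pq Z > 0"
    proof -
      show "j \<noteq> q \<Longrightarrow> det3 Q Pq Z > 0"
      proof -
        assume jq: "j \<noteq> q"
        have "cyc3 p q j" using pr j jq unfolding cyc3_def by auto
        thus ?thesis unfolding Q_def Pq_def Z_def using g.cycP[OF pr(1) pr(2) j(1)] by blast
      qed
      show "det3 Q Pq Z \<ge> 0"
      proof (cases "j = q")
        case True then show ?thesis unfolding Pq_def Z_def using det3_rep by simp
      next
        case False
        have "cyc3 p q j" using pr j False unfolding cyc3_def by auto
        then show ?thesis unfolding Q_def Pq_def Z_def using g.cycP pr j by (simp add: less_imp_le)
      qed
    qed
    have nn2: "det3 Pc Q Z \<ge> 0" "j \<noteq> cp \<Longrightarrow> det3 Pc Q Z > 0"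
    proof -
      have cc2: "j \<noteq> cp \<Longrightarrow> cyc3 cp p j" using pr j n4 unfolding cp_def cyc3_def cprev_def by auto
      show "j \<noteq> cp \<Longrightarrow> det3 Pc Q Z > 0" unfolding Pc_def Q_def Z_def using g.cycP pr j cpr cc2 by blast
      show "det3 Pc Q Z \<ge> 0"
      proof (cases "j = cp")
        case True then show ?thesis unfolding Pc_def Z_def using det3_rep by simp
      next
        case False then show ?thesis unfolding Pc_def Q_def Z_def using g.cycP pr j cpr cc2 by (simp add: less_imp_le)
      qed
    qed
    have nn3: "det3 Pc Pq Z \<ge> 0"
    proof (cases "j = cp \<or> j = q")
      case True then show ?thesis unfolding Pc_def Pq_def Z_def using det3_rep by auto
    next
      case False
      have "cyc3 cp q j" using pr j n4 False unfolding cp_def cyc3_def cprev_def by auto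
      then show ?thesis unfolding Pc_def Pq_def Z_def using g.cycP pr j cpr by (simp add: less_imp_le)
    qed
    have h1: "- t2 * det3 Q Pq Z \<le> 0" using st2(2) nn1(1) by (simp add: mult_nonneg_nonneg)
    have t1: "det3 Z BB Q * (cc \<bullet> AA) \<le> 0"
      unfolding st2(3) LLZ1 by (rule mult_nonpos_nonneg[OF h1]) (use ccAp in simp)
    have h2: "- s1 * det3 Pc Q Z \<le> 0" using st1(1) nn2(1) by (simp add: mult_nonneg_nonneg)
    have t2: "det3 AA Z Q * (cc \<bullet> BB) \<le> 0"
      unfolding st1(3) LLZ2 by (rule mult_nonpos_nonneg[OF h2]) (use ccBp in simp)
    have t3: "det3 AA BB Z * (cc \<bullet> Q) \<le> 0"
    proof -
      have "det3 AA BB Z \<ge> 0" unfolding st1(3) st2(3) LLZ3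
        by (intro add_nonneg_nonneg mult_nonneg_nonneg) (use st1 st2 nn1(1) nn2(1) nn3 in auto)
      thus ?thesis using ccQn by (intro mult_nonneg_nonpos) auto
    qed
    have strict: "det3 Z BB Q * (cc \<bullet> AA) < 0 \<or> det3 AA Z Q * (cc \<bullet> BB) < 0"
    proof (cases "j = q")
      case True
      hence "j \<noteq> cp" using cpr by auto
      hence "det3 Pc Q Z > 0" using nn2(2) by blast
      hence "det3 AA Z Q < 0" unfolding st1(3) LLZ2 using st1 by (simp add: mult_pos_pos)
      then show ?thesis using mult_neg_pos[OF _ ccBp] by blast
    next
      case False
      hence "det3 Q Pq Z > 0" using nn1(2) by blast
      hence "det3 Z BB Q < 0" unfolding st2(3) LLZ1 using st2 by (simp add: mult_pos_pos)
      then show ?thesis using mult_neg_pos[OF _ ccAp] by blast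
    qed
    have "K * (cc \<bullet> Z) < 0" using e t1 t2 t3 strict by linarith
    hence "(- K) * (cc \<bullet> Z) > 0" by simp
    thus ?thesis unfolding Z_def using nK zero_less_mult_pos by blast
  qed
  define u where "u = - (cc \<bullet> Q)"
  define w1 where "w1 = cc \<bullet> AA"
  define w2 where "w2 = cc \<bullet> BB"
  have uw: "u > 0" "w1 > 0" "w2 > 0" unfolding u_def w1_def w2_def using ccQn ccAp ccBp by auto
  define P1 where "P1 = u *\<^sub>R AA + w1 *\<^sub>R Q"
  define P2 where "P2 = u *\<^sub>R BB + w2 *\<^sub>R Q"
  define c where "c i = (if i < v then c' i else if i = v then (C, cc) else c' (i - 1))" for i
  define Pn where "Pn i = (if i = v - 1 then P1 else if i = v then P2 else P (dl v i))" for i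
  define Ln where "Ln i = (if i = v then cc else L (dl v i))" for i
  define An where "An i = (if i = v then C else A (dl v i))" for i
  have csg: "c \<circ> sg v = c'" unfolding c_def sg_def by (rule ext) auto
  have cdl: "i \<noteq> v \<Longrightarrow> c i = c' (dl v i)" for i unfolding c_def dl_def by auto
  have ccP1: "cc \<bullet> P1 = 0" unfolding P1_def u_def w1_def inner_add_right inner_scaleR_right by (simp add: algebra_simps)
  have ccP2: "cc \<bullet> P2 = 0" unfolding P2_def u_def w2_def inner_add_right inner_scaleR_right by (simp add: algebra_simps)
  have v1ne: "v - 1 \<noteq> v" using v2 by simp
  have gc0: "gconf0 n c Pn Ln An"
  proof
    show "n \<ge> 3" using n4 by simp
  next
    fix i assume i: "i \<in> {1..n}"
    show "Ln i \<bullet> Pn (cprev n i) = 0"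
    proof (cases "i = v")
      case True then show ?thesis unfolding Ln_def Pn_def using cprev_v ccP1 by simp
    next
      case iv: False
      show ?thesis
      proof (cases "i = v + 1")
        case True
        have "Ln i = b" unfolding Ln_def b_def q_def using True v2 by (simp add: dl_def)
        moreover have "Pn (cprev n i) = P2" unfolding Pn_def using True cprev_v v1ne by simp
        ultimately show ?thesis unfolding P2_def using bBB bQ by (simp add: inner_add_right)
      next
        case False
        have m: "cprev n i \<noteq> v - 1" "cprev n i \<noteq> v" "dl v (cprev n i) = cprev (n - 1) (dl v i)"
          using cp_map[OF i iv False] by auto
        show ?thesis unfolding Ln_def Pn_def using m iv g.inc1[OF dl_range[OF i iv]] by simp
      qed
    qed
  next
    fix i assume i: "i \<in> {1..n}"
    show "Ln i \<bullet> Pn i = 0"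
    proof (cases "i = v")
      case True then show ?thesis unfolding Ln_def Pn_def using ccP2 v1ne by simp
    next
      case iv: False
      show ?thesis
      proof (cases "i = v - 1")
        case True
        have "Ln i = a" unfolding Ln_def a_def p_def using True iv by (simp add: dl_def)
        then show ?thesis unfolding Pn_def P1_def using True aAA aQ by (simp add: inner_add_right)
      next
        case False
        then show ?thesis unfolding Ln_def Pn_def using iv g.inc2[OF dl_range[OF i iv]] by simp
      qed
    qed
  next
    fix i j assume i: "i \<in> {1..n}" and j: "j \<in> {1..n}" "j \<noteq> cprev n i" "j \<noteq> i"
    show "Ln i \<bullet> Pn j > 0"
    proof (cases "i = v")
      case True
      hence jn: "j \<noteq> v - 1" "j \<noteq> v" using j cprev_v by auto
      have "Pn j = P (dl v j)" unfolding Pn_def using jn by simp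
      moreover have "dl v j \<in> {1..n - 1}" "dl v j \<noteq> p" using dl_range[OF j(1) jn(2)] dl_v1[OF jn(2)] jn unfolding p_def by auto
      ultimately show ?thesis unfolding Ln_def using True cc_pos by simp
    next
      case iv: False
      have Li: "Ln i = L (dl v i)" unfolding Ln_def using iv by simp
      have ir: "dl v i \<in> {1..n - 1}" using dl_range[OF i iv] .
      show ?thesis
      proof (cases "j = v - 1")
        case True
        have "i \<noteq> v - 1" using j True by auto
        hence ip: "dl v i \<noteq> p" using dl_v1[OF iv] unfolding p_def by simp
        have "L (dl v i) \<bullet> AA > 0" unfolding AA_def using g.LA_pos[OF ir pr(1)] ip by simp
        moreover have "L (dl v i) \<bullet> Q \<ge> 0" unfolding Q_def using g.LP_nonneg[OF ir pr(1)] .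
        moreover have "L (dl v i) \<bullet> P1 = u * (L (dl v i) \<bullet> AA) + w1 * (L (dl v i) \<bullet> Q)"
          unfolding P1_def by (simp add: inner_add_right)
        ultimately have "L (dl v i) \<bullet> P1 > 0" using uw by (simp add: add_pos_nonneg mult_pos_pos mult_nonneg_nonneg)
        then show ?thesis unfolding Li Pn_def using True by simp
      next
        case jv1: False
        show ?thesis
        proof (cases "j = v")
          case True
          have "i \<noteq> v + 1" using j True cprev_v by auto
          hence iq: "dl v i \<noteq> q" using dl_v2[OF iv] unfolding q_def by simp
          have "L (dl v i) \<bullet> BB > 0" unfolding BB_def using g.LA_pos[OF ir pr(2)] iq by simp
          moreover have "L (dl v i) \<bullet> Q \<ge> 0" unfolding Q_def using g.LP_nonneg[OF ir pr(1)] .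
          moreover have "L (dl v i) \<bullet> P2 = u * (L (dl v i) \<bullet> BB) + w2 * (L (dl v i) \<bullet> Q)"
            unfolding P2_def by (simp add: inner_add_right)
          ultimately have "L (dl v i) \<bullet> P2 > 0" using uw by (simp add: add_pos_nonneg mult_pos_pos mult_nonneg_nonneg)
          then show ?thesis unfolding Li Pn_def using True jv1 by simp
        next
          case jv: False
          have Pj: "Pn j = P (dl v j)" unfolding Pn_def using jv jv1 by simp
          have jr: "dl v j \<in> {1..n - 1}" using dl_range[OF j(1) jv] .
          have ne: "dl v j \<noteq> cprev (n - 1) (dl v i) \<and> dl v j \<noteq> dl v i"
          proof (cases "i = v + 1")
            case True
            have "dl v i = v" using True dl_v2[OF iv] by simp
            moreover have "cprev (n - 1) v = v - 1" using v2 unfolding cprev_def by auto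
            moreover have "dl v j \<noteq> v - 1" using dl_v1[OF jv] jv1 by simp
            moreover have "dl v j \<noteq> v" using dl_v2[OF jv] j True by simp
            ultimately show ?thesis by simp
          next
            case False
            have m: "cprev n i \<noteq> v - 1" "cprev n i \<noteq> v" "dl v (cprev n i) = cprev (n - 1) (dl v i)"
              using cp_map[OF i iv False] by auto
            have "dl v j \<noteq> dl v (cprev n i)" using dl_inj[OF jv m(2)] j(2) by blast
            moreover have "dl v j \<noteq> dl v i" using dl_inj[OF jv iv] j(3) by blast
            ultimately show ?thesis using m(3) by simp
          qed
          show ?thesis unfolding Li Pj using g.pos[OF ir jr] ne by simp
        qed
      qed
    qed
  next
    fix i assume i: "i \<in> {1..n}"
    show "\<exists>s t. s > 0 \<and> t > 0 \<and> An i = s *\<^sub>R Pn (cprev n i) + t *\<^sub>R Pn i"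
    proof (cases "i = v")
      case True
      have sum: "al * w1 + be * w2 = u" using ccC unfolding C_def u_def w1_def w2_def
        by (simp add: inner_add_right algebra_simps)
      have "(al / u) *\<^sub>R P1 + (be / u) *\<^sub>R P2 = al *\<^sub>R AA + be *\<^sub>R BB + ((al * w1 + be * w2) / u) *\<^sub>R Q"
        unfolding P1_def P2_def by (rule comb_id) (use uw(1) in simp)
      also have "\<dots> = C" unfolding sum C_def using uw by simp
      finally have "C = (al / u) *\<^sub>R P1 + (be / u) *\<^sub>R P2" by simp
      moreover have "Pn (cprev n i) = P1" "Pn i = P2" "An i = C" unfolding Pn_def An_def using True cprev_v v1ne by auto
      ultimately show ?thesis using alp bep uw by (intro exI[of _ "al / u"] exI[of _ "be / u"]) simp
    next
      case iv: False
      have ir: "dl v i \<in> {1..n - 1}" using dl_range[OF i iv] .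
      show ?thesis
      proof (cases "i = v - 1")
        case True
        have dlp: "dl v i = p" using True iv dl_v1 unfolding p_def by simp
        have cpi: "Pn (cprev n i) = Pc"
        proof -
          have m: "cprev n i \<noteq> v - 1" "cprev n i \<noteq> v" "dl v (cprev n i) = cprev (n - 1) (dl v i)"
            using cp_map[OF i iv] True v2 by auto
          show ?thesis unfolding Pn_def Pc_def cp_def using m dlp by simp
        qed
        have Pi: "Pn i = P1" unfolding Pn_def using True by simp
        have Ai: "An i = AA" unfolding An_def AA_def using iv dlp by simp
        define D0 where "D0 = 1 + t1 * u / w1"
        have D0p: "D0 > 0" unfolding D0_def using st1 uw by (simp add: add_pos_pos divide_pos_pos)
        have "(s1 / D0) *\<^sub>R Pc + (t1 / w1 / D0) *\<^sub>R P1 = AA"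
          unfolding P1_def by (rule comb2[OF _ D0_def _ st1(3)]) (use uw D0p in auto)
        then show ?thesis unfolding cpi Pi Ai using st1 D0p uw
          by (intro exI[of _ "s1 / D0"] exI[of _ "t1 / w1 / D0"]) (simp add: divide_pos_pos)
      next
        case iv1: False
        show ?thesis
        proof (cases "i = v + 1")
          case True
          have dlq: "dl v i = q" using True iv dl_v2 unfolding q_def by simp
          have cpi: "Pn (cprev n i) = P2" unfolding Pn_def using True cprev_v v1ne by simp
          have Pi: "Pn i = Pq" unfolding Pn_def Pq_def using iv iv1 dlq by simp
          have Ai: "An i = BB" unfolding An_def BB_def using iv dlq by simp
          define D0 where "D0 = 1 + s2 * u / w2"
          have D0p: "D0 > 0" unfolding D0_def using st2 uw by (simp add: add_pos_pos divide_pos_pos)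
          have "(s2 / w2 / D0) *\<^sub>R P2 + (t2 / D0) *\<^sub>R Pq = BB"
            unfolding P2_def by (rule comb3[OF _ D0_def _ st2(3)]) (use uw D0p in auto)
          then show ?thesis unfolding cpi Pi Ai using st2 D0p uw
            by (intro exI[of _ "s2 / w2 / D0"] exI[of _ "t2 / D0"]) (simp add: divide_pos_pos)
        next
          case False
          have m: "cprev n i \<noteq> v - 1" "cprev n i \<noteq> v" "dl v (cprev n i) = cprev (n - 1) (dl v i)"
            using cp_map[OF i iv False] by auto
          have "Pn (cprev n i) = P (cprev (n - 1) (dl v i))" "Pn i = P (dl v i)" "An i = A (dl v i)"
            unfolding Pn_def An_def using m iv iv1 by auto
          then show ?thesis using g.Acomb[OF ir] by simp
        qed
      qed
    qed
  next
    fix i assume i: "i \<in> {1..n}"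
    show "\<exists>e. e \<noteq> 0 \<and> ln c i = e *\<^sub>R Ln i"
    proof (cases "i = v")
      case True then show ?thesis unfolding c_def Ln_def ln_def by (intro exI[of _ 1]) simp
    next
      case False
      then show ?thesis unfolding Ln_def using cdl[OF False] g.Lsc[OF dl_range[OF i False]] by (simp add: ln_def)
    qed
  next
    fix i assume i: "i \<in> {1..n}"
    show "\<exists>r. r \<noteq> 0 \<and> pt c i = r *\<^sub>R An i"
    proof (cases "i = v")
      case True then show ?thesis unfolding c_def An_def pt_def by (intro exI[of _ 1]) simp
    next
      case False
      then show ?thesis unfolding An_def using cdl[OF False] g.Asc[OF dl_range[OF i False]] by (simp add: pt_def)
    qed
  qed
  have cP: "c \<in> Pconf n" using gc0 by (rule gconf0.to_pconf)
  define cN where "cN i = (An i, Ln i)" for i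
  have o1: "opp_vertex n D (v - 1) (v + 1) = v" by (rule opp_ear1)
  have labsub: "labs n D x \<subseteq> {v - 1, v, v + 1, mo}"
    if "x \<in> {Tri (v - 1) v (v + 1), Dg (v - 1) (v + 1), Dg (v + 1) (v - 1)}" for x
    using that o1 unfolding labs_def mo_def by auto
  have resc: "coord n D c x = coord n D cN x"
    if x: "x \<in> {Tri (v - 1) v (v + 1), Dg (v - 1) (v + 1), Dg (v + 1) (v - 1)}" for x
  proof (rule coord_rescale, intro ballI)
    fix i assume "i \<in> labs n D x"
    hence i: "i \<in> {1..n}" using labsub[OF x] mo v2 vn by auto
    show "\<exists>r e. r \<noteq> 0 \<and> e \<noteq> 0 \<and> pt c i = r *\<^sub>R pt cN i \<and> ln c i = e *\<^sub>R ln cN i"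
      using gconf0.Asc[OF gc0 i] gconf0.Lsc[OF gc0 i] unfolding cN_def pt_def ln_def by auto
  qed
  have vals: "An (v - 1) = AA" "Ln (v - 1) = a" "An (v + 1) = BB" "Ln (v + 1) = b" "An mo = M" "An v = C" "Ln v = cc"
    using v2 mo unfolding An_def Ln_def AA_def a_def BB_def b_def M_def mr_def p_def q_def by (auto simp: dl_def)
  have AAnz: "AA \<noteq> 0" using bAA by auto
  have BBnz: "BB \<noteq> 0" using aBB by auto
  have k1: "coord n D cN (Tri (v - 1) v (v + 1)) = T"
    unfolding coord.simps cN_def pt_def ln_def fst_conv snd_conv vals using Tv .
  have k2: "coord n D cN (Dg (v - 1) (v + 1)) = X"
  proof -
    have "coord n D cN (Dg (v - 1) (v + 1)) = (a \<bullet> C) * det3 AA BB M / ((a \<bullet> M) * det3 AA C BB)"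
      unfolding coord.simps Let_def o1 mo_def[symmetric] cN_def pt_def ln_def fst_conv snd_conv vals
      by (rule cr_formula[OF aAA AAnz])
    thus ?thesis using Xv unfolding dM_def by simp
  qed
  have k3: "coord n D cN (Dg (v + 1) (v - 1)) = Y"
  proof -
    have "coord n D cN (Dg (v + 1) (v - 1)) = (b \<bullet> M) * det3 BB AA C / ((b \<bullet> C) * det3 BB M AA)"
      unfolding coord.simps Let_def o1 mo_def[symmetric] cN_def pt_def ln_def fst_conv snd_conv vals
      by (rule cr_formula[OF bBB BBnz])
    thus ?thesis using Yv by simp
  qed
  have r1: "coord n D c (Tri (v - 1) v (v + 1)) = T" using resc[of "Tri (v - 1) v (v + 1)"] k1 by simp
  have r2: "coord n D c (Dg (v - 1) (v + 1)) = X" using resc[of "Dg (v - 1) (v + 1)"] k2 by simp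
  have r3: "coord n D c (Dg (v + 1) (v - 1)) = Y" using resc[of "Dg (v + 1) (v - 1)"] k3 by simp
  show ?thesis using cP csg r1 r2 r3 by blast
qed

end

lemma Iset3: "Iset 3 {} = {Tri 1 2 3}"
proof
  show "Iset 3 {} \<subseteq> {Tri 1 2 3}"
  proof
    fix x assume "x \<in> Iset 3 {}"
    then obtain i j k where "x = Tri i j k" "is_tri 3 {} i j k" unfolding Iset_def by blast
    moreover hence "i = 1 \<and> j = 2 \<and> k = 3" unfolding is_tri_def by auto
    ultimately show "x \<in> {Tri 1 2 3}" by simp
  qed
  show "{Tri 1 2 3} \<subseteq> Iset 3 {}" unfolding Iset_def is_tri_def is_edge_def by auto
qed

theorem surj_main:
  "n \<ge> 3 \<Longrightarrow> poly_triangulation n D \<Longrightarrow> f \<in> Iset n D \<rightarrow>\<^sub>E ({0<..} :: real set) \<Longrightarrow> \<exists>c\<in>Pconf n. Phi n D c = f"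
proof (induction n arbitrary: D f rule: nat_induct_at_least)
  case base
  have D: "D = {}" by (rule tri3_empty[OF base(1)])
  have I: "Iset 3 D = {Tri 1 2 3}" using Iset3 D by simp
  have "f (Tri 1 2 3) \<in> {0<..}" by (rule PiE_mem[OF base(2)]) (simp add: I)
  hence T: "f (Tri 1 2 3) > 0" by simp
  obtain c where c: "c \<in> Pconf 3" "coord 3 D c (Tri 1 2 3) = f (Tri 1 2 3)" using surj_base[OF T] by blast
  have "Phi 3 D c = f"
  proof
    fix x show "Phi 3 D c x = f x"
    proof (cases "x \<in> Iset 3 D")
      case True then show ?thesis using c I unfolding Phi_def by simp
    next
      case False
      have "f x = undefined" using PiE_arb[OF base(2) False] .
      then show ?thesis using False unfolding Phi_def by simp
    qed
  qed
  then show ?case using c by blast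
next
  case (Suc m)
  obtain v where v: "2 \<le> v" "v \<le> Suc m - 1" "(v - 1, v + 1) \<in> D" using ear_exists[of "Suc m" D] Suc by auto
  interpret ear "Suc m" v D using v Suc by unfold_locales auto
  define f' where "f' = restrict (\<lambda>x. f (imap v x)) (Iset m (redD v D))"
  have f': "f' \<in> Iset m (redD v D) \<rightarrow>\<^sub>E {0<..}"
  proof
    fix x assume "x \<in> Iset m (redD v D)"
    hence "imap v x \<in> Iset (Suc m) D" using Iset_a by simp
    thus "f' x \<in> {0<..}" using Suc.prems(2) \<open>x \<in> Iset m (redD v D)\<close> unfolding f'_def by auto
  next
    fix x assume "x \<notin> Iset m (redD v D)"
    thus "f' x = undefined" unfolding f'_def by simp
  qed
  have tr': "poly_triangulation m (redD v D)" using red_tri by simp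
  obtain c' where c': "c' \<in> Pconf m" "Phi m (redD v D) c' = f'" using Suc.IH[OF tr' f'] by blast
  obtain P L A where G: "gconf m c' P L A" using pconf_gconf[OF _ c'(1)] Suc.hyps by auto
  have G': "gconf (Suc m - 1) c' P L A" using G by simp
  have pos: "f (Tri (v - 1) v (v + 1)) > 0" "f (Dg (v - 1) (v + 1)) > 0" "f (Dg (v + 1) (v - 1)) > 0"
    using Suc.prems(2) Iset_b by auto
  obtain c where c: "c \<in> Pconf (Suc m)" "c \<circ> sg v = c'"
    "coord (Suc m) D c (Tri (v - 1) v (v + 1)) = f (Tri (v - 1) v (v + 1))"
    "coord (Suc m) D c (Dg (v - 1) (v + 1)) = f (Dg (v - 1) (v + 1))"
    "coord (Suc m) D c (Dg (v + 1) (v - 1)) = f (Dg (v + 1) (v - 1))"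
    using surj_extend[OF G' pos(2) pos(3) pos(1)] by blast
  have "Phi (Suc m) D c = f"
  proof
    fix y show "Phi (Suc m) D c y = f y"
    proof (cases "y \<in> Iset (Suc m) D")
      case True
      from Iset_c[OF True] show ?thesis
      proof
        assume "y \<in> {Tri (v - 1) v (v + 1), Dg (v - 1) (v + 1), Dg (v + 1) (v - 1)}"
        then show ?thesis using c True unfolding Phi_def by auto
      next
        assume "\<exists>x\<in>Iset (Suc m - 1) (redD v D). y = imap v x"
        then obtain x where x: "x \<in> Iset m (redD v D)" "y = imap v x" by auto
        have "coord (Suc m) D c y = coord m (redD v D) c' x" using coord_corr[of x c] x c(2) by simp
        also have "\<dots> = f' x" using c'(2) x unfolding Phi_def by (metis restrict_apply')
        also have "\<dots> = f y" using x unfolding f'_def by simp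
        finally show ?thesis using True unfolding Phi_def by simp
      qed
    next
      case False
      have "f y = undefined" using PiE_arb[OF Suc.prems(2) False] .
      then show ?thesis using False unfolding Phi_def by simp
    qed
  qed
  then show ?case using c by blast
qed

lemma pgl_equiv: "equiv (Pconf n) (pgl_rel n)"
proof (rule equivI)
  show "pgl_rel n \<subseteq> Pconf n \<times> Pconf n" unfolding pgl_rel_def by auto
next
  show "refl_on (Pconf n) (pgl_rel n)"
  proof
    fix c assume c: "c \<in> Pconf n"
    have "invertible (mat 1 :: real^3^3)" unfolding invertible_def by (intro exI[of _ "mat 1"]) simp
    moreover have "relg n (mat 1) c c" unfolding relg_def by (auto intro!: exI[of _ 1])
    ultimately show "(c, c) \<in> pgl_rel n" using c pgl_rel_iff by blast
  qed
next
  show "sym (pgl_rel n)"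
  proof
    fix c d assume "(c, d) \<in> pgl_rel n"
    then obtain g where cd: "c \<in> Pconf n" "d \<in> Pconf n" "invertible g" "relg n g c d" using pgl_rel_iff by blast
    obtain gi where gi: "g ** gi = mat 1" "gi ** g = mat 1" using inv_get[OF cd(3)] by blast
    have igi: "invertible gi" unfolding invertible_def using gi by blast
    have "relg n gi d c" unfolding relg_def
    proof
      fix i assume "i \<in> {1..n}"
      then obtain s u where su: "s \<noteq> 0" "u \<noteq> 0" "pt d i = s *\<^sub>R (g *v pt c i)" "ln c i = u *\<^sub>R (ln d i v* g)"
        using cd(4) unfolding relg_def by blast
      have "gi *v pt d i = s *\<^sub>R pt c i" using su(3) gi(2) by (simp add: scaleR_mvul matrix_vector_mul_assoc)
      hence p: "pt c i = (1 / s) *\<^sub>R (gi *v pt d i)" using su(1) by simp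
      have "ln c i v* gi = u *\<^sub>R ln d i" using su(4) gi(1) by (simp add: scaleR_vmul vm_cancel2)
      hence l: "ln d i = (1 / u) *\<^sub>R (ln c i v* gi)" using su(2) by simp
      show "\<exists>s u. s \<noteq> 0 \<and> u \<noteq> 0 \<and> pt c i = s *\<^sub>R (gi *v pt d i) \<and> ln d i = u *\<^sub>R (ln c i v* gi)"
        using p l su(1,2) by (intro exI[of _ "1 / s"] exI[of _ "1 / u"]) simp
    qed
    then show "(d, c) \<in> pgl_rel n" using cd igi pgl_rel_iff by blast
  qed
next
  show "trans (pgl_rel n)"
  proof
    fix c d e assume "(c, d) \<in> pgl_rel n" "(d, e) \<in> pgl_rel n"
    then obtain g1 g2 where h: "c \<in> Pconf n" "d \<in> Pconf n" "e \<in> Pconf n" "invertible g1" "relg n g1 c d"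
      "invertible g2" "relg n g2 d e" using pgl_rel_iff by metis
    have "relg n (g2 ** g1) c e" unfolding relg_def
    proof
      fix i assume i: "i \<in> {1..n}"
      obtain s1 u1 where 1: "s1 \<noteq> 0" "u1 \<noteq> 0" "pt d i = s1 *\<^sub>R (g1 *v pt c i)" "ln c i = u1 *\<^sub>R (ln d i v* g1)"
        using h(5) i unfolding relg_def by blast
      obtain s2 u2 where 2: "s2 \<noteq> 0" "u2 \<noteq> 0" "pt e i = s2 *\<^sub>R (g2 *v pt d i)" "ln d i = u2 *\<^sub>R (ln e i v* g2)"
        using h(7) i unfolding relg_def by blast
      have "pt e i = (s2 * s1) *\<^sub>R ((g2 ** g1) *v pt c i)" using 1(3) 2(3)
        by (simp add: scaleR_mvul matrix_vector_mul_assoc)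
      moreover have "ln c i = (u1 * u2) *\<^sub>R (ln e i v* (g2 ** g1))" using 1(4) 2(4)
        by (simp add: scaleR_vmul vector_matrix_mul_assoc)
      ultimately show "\<exists>s u. s \<noteq> 0 \<and> u \<noteq> 0 \<and> pt e i = s *\<^sub>R ((g2 ** g1) *v pt c i) \<and> ln c i = u *\<^sub>R (ln e i v* (g2 ** g1))"
        using 1 2 by (intro exI[of _ "s2 * s1"] exI[of _ "u1 * u2"]) simp
    qed
    moreover have "invertible (g2 ** g1)" by (rule invertible_mult[OF h(6) h(4)])
    ultimately show "(c, e) \<in> pgl_rel n" using h pgl_rel_iff by blast
  qed
qed

lemma Phi_inv_rel:
  assumes n: "n \<ge> 3" and tri: "poly_triangulation n D" and cd: "(c, d) \<in> pgl_rel n"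
  shows "Phi n D d = Phi n D c"
proof -
  obtain g where h: "c \<in> Pconf n" "d \<in> Pconf n" "invertible g" "relg n g c d" using cd pgl_rel_iff by blast
  have W: "Wc n c" using pconf_Wc[OF n h(1)] .
  show ?thesis unfolding Phi_def
    by (rule restrict_ext) (rule phi_inv[OF n tri W h(3) h(4)])
qed

lemma PhiQ_class:
  assumes n: "n \<ge> 3" and tri: "poly_triangulation n D" and c: "c \<in> Pconf n"
  shows "PhiQ n D (pgl_rel n `` {c}) = Phi n D c"
proof -
  have "c \<in> pgl_rel n `` {c}" using equiv_class_self[OF pgl_equiv c] .
  hence "(SOME d. d \<in> pgl_rel n `` {c}) \<in> pgl_rel n `` {c}" by (rule someI[of "\<lambda>d. d \<in> pgl_rel n `` {c}" c])
  hence "(c, SOME d. d \<in> pgl_rel n `` {c}) \<in> pgl_rel n" by simp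
  thus ?thesis unfolding PhiQ_def using Phi_inv_rel[OF n tri] by blast
qed

theorem mainTheorem3:
  fixes n :: nat and D :: "(nat \<times> nat) set"
  assumes "n \<ge> 3" and "poly_triangulation n D"
  shows "bij_betw (PhiQ n D) (P3 n) (Iset n D \<rightarrow>\<^sub>E {0<..})"
proof -
  note n = assms(1) and tri = assms(2)
  have Phi_in: "Phi n D c \<in> Iset n D \<rightarrow>\<^sub>E {0<..}" if c: "c \<in> Pconf n" for c
  proof -
    have W: "Wc n c" using pconf_Wc[OF n c] .
    show ?thesis unfolding Phi_def using Wc_pos[OF n tri W] by auto
  qed
  show ?thesis unfolding bij_betw_def
  proof (intro conjI)
    show "inj_on (PhiQ n D) (P3 n)"
    proof
      fix X Y assume X: "X \<in> P3 n" and Y: "Y \<in> P3 n" and eq: "PhiQ n D X = PhiQ n D Y"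
      obtain c where c: "X = pgl_rel n `` {c}" "c \<in> Pconf n" using X unfolding P3_def by (rule quotientE)
      obtain d where d: "Y = pgl_rel n `` {d}" "d \<in> Pconf n" using Y unfolding P3_def by (rule quotientE)
      have "Phi n D c = Phi n D d" using eq c d PhiQ_class[OF n tri] by metis
      hence ceq: "\<forall>x\<in>Iset n D. coord n D c x = coord n D d x" unfolding Phi_def by (metis restrict_apply')
      obtain g where "invertible g" "relg n g c d"
        using inj_main[OF n tri pconf_Wc[OF n c(2)] pconf_Wc[OF n d(2)] ceq] by blast
      hence "(c, d) \<in> pgl_rel n" using c d pgl_rel_iff by blast
      thus "X = Y" using c d equiv_class_eq[OF pgl_equiv] by simp
    qed
  next
    show "PhiQ n D ` P3 n = Iset n D \<rightarrow>\<^sub>E {0<..}"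
    proof
      show "PhiQ n D ` P3 n \<subseteq> Iset n D \<rightarrow>\<^sub>E {0<..}"
      proof
        fix y assume "y \<in> PhiQ n D ` P3 n"
        then obtain X where X: "X \<in> P3 n" "y = PhiQ n D X" by blast
        obtain c where c: "X = pgl_rel n `` {c}" "c \<in> Pconf n" using X(1) unfolding P3_def by (rule quotientE)
        show "y \<in> Iset n D \<rightarrow>\<^sub>E {0<..}" using X(2) c PhiQ_class[OF n tri c(2)] Phi_in[OF c(2)] by simp
      qed
    next
      show "Iset n D \<rightarrow>\<^sub>E {0<..} \<subseteq> PhiQ n D ` P3 n"
      proof
        fix f :: "coord_index \<Rightarrow> real" assume f: "f \<in> Iset n D \<rightarrow>\<^sub>E {0<..}"
        obtain c where c: "c \<in> Pconf n" "Phi n D c = f" using surj_main[OF n tri f] by blast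
        have "pgl_rel n `` {c} \<in> P3 n" unfolding P3_def using c(1) by (rule quotientI)
        moreover have "PhiQ n D (pgl_rel n `` {c}) = f" using PhiQ_class[OF n tri c(1)] c(2) by simp
        ultimately show "f \<in> PhiQ n D ` P3 n" by (metis image_eqI)
      qed
    qed
  qed
qed

end
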